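(* The functor $\widetilde S(\ ):\mathbf{Gpd}\to(t\mathbf{ASmd})_0$ is an equivalence of categories. Moreover, $\widetilde R(\ ):(t\mathbf{ASmd})_0\to\mathbf{Gpd}$ is right adjoint to $\widetilde S(\ )$.
   Context: Write $s(f),t(f)$ for source and target. A quasi-schemoid is a pair $(\mathcal C,S)$ with $\mathcal C$ a small category and $S$ a partition of $mor(\mathcal C)$ into nonempty blocks such that for all $\sigma,\tau,\mu\in S$ and $f,g\in\mu$ the sets $\{(a,b)\in\sigma\times\tau: s(a)=t(b), a\circ b=f\}$ and the analogous set for $g$ have equal cardinality, denoted $p^\mu_{\sigma\tau}$. An association schemoid is a triple $(\mathcal C,S,T)$ where $(\mathcal C,S)$ is a quasi-schemoid, every block containing an endomorphism consists only of endomorphisms, and $T$ is a contravariant endofunctor with $T^2=\mathrm{id}$ and $\{T(f):f\in\sigma\}\in S$ for all $\sigma$. A morphism of association schemoids is a functor mapping each block into a block and commuting with the $T$'s. With $J_0=\{1_x\}$, it is unital if every block meeting $J_0$ lies in $J_0$. A unital association schemoid is semi-thin if (i) $\#\{f\in\sigma:s(f)=x\}\le1$ for all $\sigma,x$, and (ii) $\mathcal C$ is a groupoid with $T(f)=f^{-1}$. $S_0=\{\alpha\in S:\alpha\cap J_0\ne\emptyset\}$. A semi-thin schemoid is thin with set of base points $V\subseteq ob(\mathcal C)$ if (iii) $\#\mathrm{Hom}(x,y)\le1$ for all $x,y$, and (iv) every connected component contains exactly one element of $V$ and $V\to S_0$, $v\mapsto$ (block containing $1_v$), is bijective. $(t\mathbf{ASmd})_0$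 is the category whose objects are thin association schemoids with base points and whose morphisms are morphisms of association schemoids sending base points to base points. $\mathbf{Gpd}$ is the category of groupoids and functors. For a groupoid $\mathcal H$, $\widetilde S(\mathcal H)$ has $ob=mor(\mathcal H)$, $\mathrm{Hom}(g,h)=\{(h,g)\}$ if $t(h)=t(g)$ and empty otherwise, composition $(k,h)\circ(h,g)=(k,g)$, partition $\{\{(k,l):k^{-1}l=f\}\}_{f}$, $T(f)=f$, $T((f,g))=(g,f)$, base points $\{1_x\}$; $\widetilde S(F)(f)=F(f)$, $\widetilde S(F)(f,g)=(F(f),F(g))$. For semi-thin $(\mathcal C,S,T)$, ${}_\alpha S_\beta=\{\sigma:p^\sigma_{\sigma\alpha}=p^\sigma_{\beta\sigma}=1\}$, and $\widetilde R(\mathcal C,S,T)$ is the groupoid with objects $S_0$, $\mathrm{Hom}(\alpha,\beta)={}_\alpha S_\beta$, $\tau\circ\sigma$ the unique $\mu$ with $p^\mu_{\tau\sigma}=1$. For a morphism $F$, $\widetilde R(F)$ sends $\alpha\in S_0$ (resp. $\sigma\in S$) to the unique block of the target containing $F(\alpha)$ (resp. $F(\sigma)$). *)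

theory Defs
  imports Main "HOL-Library.FuncSet" "HOL-Library.Equipollence"
begin

record ('o,'m) cat =
  Obj  :: "'o set"
  Mor  :: "'m set"
  Dom  :: "'m \<Rightarrow> 'o"
  Cod  :: "'m \<Rightarrow> 'o"
  Idm  :: "'o \<Rightarrow> 'm"
  Comp :: "'m \<Rightarrow> 'm \<Rightarrow> 'm"   \<comment> \<open>Comp C g f = g o f, meaningful when Cod f = Dom g\<close>

definition category :: "('o,'m) cat \<Rightarrow> bool" where
  "category C \<longleftrightarrow>
     (\<forall>f\<in>Mor C. Dom C f \<in> Obj C \<and> Cod C f \<in> Obj C) \<and>
     (\<forall>x\<in>Obj C. Idm C x \<in> Mor C \<and> Dom C (Idm C x) = x \<and> Cod C (Idm C x) = x) \<and>
     (\<forall>f\<in>Mor C. \<forall>g\<in>Mor C. Cod C f = Dom C g \<longrightarrow>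
         Comp C g f \<in> Mor C \<and> Dom C (Comp C g f) = Dom C f \<and> Cod C (Comp C g f) = Cod C g) \<and>
     (\<forall>f\<in>Mor C. Comp C f (Idm C (Dom C f)) = f \<and> Comp C (Idm C (Cod C f)) f = f) \<and>
     (\<forall>f\<in>Mor C. \<forall>g\<in>Mor C. \<forall>h\<in>Mor C. Cod C f = Dom C g \<longrightarrow> Cod C g = Dom C h \<longrightarrow>
         Comp C h (Comp C g f) = Comp C (Comp C h g) f)"

definition Hom :: "('o,'m) cat \<Rightarrow> 'o \<Rightarrow> 'o \<Rightarrow> 'm set" where
  "Hom C x y = {f \<in> Mor C. Dom C f = x \<and> Cod C f = y}"

definition is_inverse :: "('o,'m) cat \<Rightarrow> 'm \<Rightarrow> 'm \<Rightarrow> bool" where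
  "is_inverse C f g \<longleftrightarrow> g \<in> Mor C \<and> Dom C g = Cod C f \<and> Cod C g = Dom C f \<and>
     Comp C g f = Idm C (Dom C f) \<and> Comp C f g = Idm C (Cod C f)"

definition groupoid :: "('o,'m) cat \<Rightarrow> bool" where
  "groupoid C \<longleftrightarrow> category C \<and> (\<forall>f\<in>Mor C. \<exists>g. is_inverse C f g)"

definition ginv :: "('o,'m) cat \<Rightarrow> 'm \<Rightarrow> 'm" where
  "ginv C f = (THE g. is_inverse C f g)"

text \<open>A functor is a pair (object map, morphism map); both maps are taken extensional
  (undefined outside the carriers), so that equal functors are equal as HOL values.\<close>

definition is_functor :: "('o,'m) cat \<Rightarrow> ('p,'n) cat \<Rightarrow> ('o \<Rightarrow> 'p) \<times> ('m \<Rightarrow> 'n) \<Rightarrow> bool" where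
  "is_functor C D F \<longleftrightarrow> category C \<and> category D \<and>
     fst F \<in> extensional (Obj C) \<and> snd F \<in> extensional (Mor C) \<and>
     (\<forall>x\<in>Obj C. fst F x \<in> Obj D) \<and>
     (\<forall>f\<in>Mor C. snd F f \<in> Mor D \<and> Dom D (snd F f) = fst F (Dom C f) \<and>
                                   Cod D (snd F f) = fst F (Cod C f)) \<and>
     (\<forall>x\<in>Obj C. snd F (Idm C x) = Idm D (fst F x)) \<and>
     (\<forall>f\<in>Mor C. \<forall>g\<in>Mor C. Cod C f = Dom C g \<longrightarrow>
         snd F (Comp C g f) = Comp D (snd F g) (snd F f))"

definition fcomp :: "('o,'m) cat \<Rightarrow> ('p \<Rightarrow> 'q) \<times> ('n \<Rightarrow> 'r) \<Rightarrow> ('o \<Rightarrow> 'p) \<times> ('m \<Rightarrow> 'n)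
                     \<Rightarrow> ('o \<Rightarrow> 'q) \<times> ('m \<Rightarrow> 'r)" where
  "fcomp C G F = (restrict (fst G \<circ> fst F) (Obj C), restrict (snd G \<circ> snd F) (Mor C))"

definition fid :: "('o,'m) cat \<Rightarrow> ('o \<Rightarrow> 'o) \<times> ('m \<Rightarrow> 'm)" where
  "fid C = (restrict id (Obj C), restrict id (Mor C))"

definition gpd_hom :: "('o,'m) cat \<Rightarrow> ('p,'n) cat \<Rightarrow> (('o \<Rightarrow> 'p) \<times> ('m \<Rightarrow> 'n)) set" where
  "gpd_hom H K = {F. is_functor H K F}"

record ('o,'m) schemoid =
  Cat    :: "('o,'m) cat"
  Blocks :: "'m set set"
  Tob    :: "'o \<Rightarrow> 'o"
  Tmor   :: "'m \<Rightarrow> 'm"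
  Base   :: "'o set"

definition partition_of :: "'m set \<Rightarrow> 'm set set \<Rightarrow> bool" where
  "partition_of A S \<longleftrightarrow> (\<forall>\<sigma>\<in>S. \<sigma> \<noteq> {} \<and> \<sigma> \<subseteq> A) \<and> (\<forall>f\<in>A. \<exists>!\<sigma>. \<sigma> \<in> S \<and> f \<in> \<sigma>)"

definition pset :: "('o,'m) cat \<Rightarrow> 'm set \<Rightarrow> 'm set \<Rightarrow> 'm \<Rightarrow> ('m \<times> 'm) set" where
  "pset C \<sigma> \<tau> f = {(a,b). a \<in> \<sigma> \<and> b \<in> \<tau> \<and> Dom C a = Cod C b \<and> Comp C a b = f}"

definition quasi_schemoid :: "('o,'m) cat \<Rightarrow> 'm set set \<Rightarrow> bool" where
  "quasi_schemoid C S \<longleftrightarrow> category C \<and> partition_of (Mor C) S \<and>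
     (\<forall>\<sigma>\<in>S. \<forall>\<tau>\<in>S. \<forall>\<mu>\<in>S. \<forall>f\<in>\<mu>. \<forall>g\<in>\<mu>. pset C \<sigma> \<tau> f \<approx> pset C \<sigma> \<tau> g)"

text \<open>Structure constant p^mu_{sigma tau} (used only through the condition "= 1").\<close>
definition pnum :: "('o,'m) cat \<Rightarrow> 'm set \<Rightarrow> 'm set \<Rightarrow> 'm set \<Rightarrow> nat" where
  "pnum C \<sigma> \<tau> \<mu> = card (pset C \<sigma> \<tau> (SOME f. f \<in> \<mu>))"

definition contra_endofunctor :: "('o,'m) cat \<Rightarrow> ('o \<Rightarrow> 'o) \<Rightarrow> ('m \<Rightarrow> 'm) \<Rightarrow> bool" where
  "contra_endofunctor C To Tm \<longleftrightarrow>
     (\<forall>x\<in>Obj C. To x \<in> Obj C) \<and>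
     (\<forall>f\<in>Mor C. Tm f \<in> Mor C \<and> Dom C (Tm f) = To (Cod C f) \<and> Cod C (Tm f) = To (Dom C f)) \<and>
     (\<forall>x\<in>Obj C. Tm (Idm C x) = Idm C (To x)) \<and>
     (\<forall>f\<in>Mor C. \<forall>g\<in>Mor C. Cod C f = Dom C g \<longrightarrow> Tm (Comp C g f) = Comp C (Tm f) (Tm g))"

definition assoc_schemoid :: "('o,'m) schemoid \<Rightarrow> bool" where
  "assoc_schemoid X \<longleftrightarrow> quasi_schemoid (Cat X) (Blocks X) \<and>
     (\<forall>\<sigma>\<in>Blocks X. (\<exists>f\<in>\<sigma>. Dom (Cat X) f = Cod (Cat X) f) \<longrightarrow>
                       (\<forall>f\<in>\<sigma>. Dom (Cat X) f = Cod (Cat X) f)) \<and>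
     contra_endofunctor (Cat X) (Tob X) (Tmor X) \<and>
     (\<forall>x\<in>Obj (Cat X). Tob X (Tob X x) = x) \<and> (\<forall>f\<in>Mor (Cat X). Tmor X (Tmor X f) = f) \<and>
     (\<forall>\<sigma>\<in>Blocks X. Tmor X ` \<sigma> \<in> Blocks X)"

definition J0 :: "('o,'m) schemoid \<Rightarrow> 'm set" where
  "J0 X = Idm (Cat X) ` Obj (Cat X)"

definition unital :: "('o,'m) schemoid \<Rightarrow> bool" where
  "unital X \<longleftrightarrow> assoc_schemoid X \<and> (\<forall>\<sigma>\<in>Blocks X. \<sigma> \<inter> J0 X \<noteq> {} \<longrightarrow> \<sigma> \<subseteq> J0 X)"

definition semi_thin :: "('o,'m) schemoid \<Rightarrow> bool" where
  "semi_thin X \<longleftrightarrow> unital X \<and>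
     (\<forall>\<sigma>\<in>Blocks X. \<forall>f\<in>\<sigma>. \<forall>g\<in>\<sigma>. Dom (Cat X) f = Dom (Cat X) g \<longrightarrow> f = g) \<and>
     groupoid (Cat X) \<and> (\<forall>f\<in>Mor (Cat X). Tmor X f = ginv (Cat X) f)"

definition S0 :: "('o,'m) schemoid \<Rightarrow> 'm set set" where
  "S0 X = {\<alpha> \<in> Blocks X. \<alpha> \<inter> J0 X \<noteq> {}}"

definition block_of :: "'m set set \<Rightarrow> 'm \<Rightarrow> 'm set" where
  "block_of S f = (THE \<sigma>. \<sigma> \<in> S \<and> f \<in> \<sigma>)"

definition conn :: "('o,'m) cat \<Rightarrow> ('o \<times> 'o) set" where
  "conn C = (\<Union>f\<in>Mor C. {(Dom C f, Cod C f), (Cod C f, Dom C f)})\<^sup>*"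

definition thin_smd :: "('o,'m) schemoid \<Rightarrow> bool" where
  "thin_smd X \<longleftrightarrow> semi_thin X \<and>
     (\<forall>x\<in>Obj (Cat X). \<forall>y\<in>Obj (Cat X). \<forall>f\<in>Hom (Cat X) x y. \<forall>g\<in>Hom (Cat X) x y. f = g) \<and>
     Base X \<subseteq> Obj (Cat X) \<and>
     (\<forall>x\<in>Obj (Cat X). \<exists>!v. v \<in> Base X \<and> (x, v) \<in> conn (Cat X)) \<and>
     bij_betw (\<lambda>v. block_of (Blocks X) (Idm (Cat X) v)) (Base X) (S0 X)"

definition smd_morph :: "('o,'m) schemoid \<Rightarrow> ('p,'n) schemoid \<Rightarrow> ('o \<Rightarrow> 'p) \<times> ('m \<Rightarrow> 'n) \<Rightarrow> bool" where
  "smd_morph X Y F \<longleftrightarrow> is_functor (Cat X) (Cat Y) F \<and>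
     (\<forall>\<sigma>\<in>Blocks X. \<exists>\<tau>\<in>Blocks Y. snd F ` \<sigma> \<subseteq> \<tau>) \<and>
     (\<forall>x\<in>Obj (Cat X). fst F (Tob X x) = Tob Y (fst F x)) \<and>
     (\<forall>f\<in>Mor (Cat X). snd F (Tmor X f) = Tmor Y (snd F f)) \<and>
     fst F ` Base X \<subseteq> Base Y"

definition smd_hom :: "('o,'m) schemoid \<Rightarrow> ('p,'n) schemoid \<Rightarrow> (('o \<Rightarrow> 'p) \<times> ('m \<Rightarrow> 'n)) set" where
  "smd_hom X Y = {F. smd_morph X Y F}"

definition smd_iso :: "('o,'m) schemoid \<Rightarrow> ('p,'n) schemoid \<Rightarrow> bool" where
  "smd_iso X Y \<longleftrightarrow> (\<exists>F G. F \<in> smd_hom X Y \<and> G \<in> smd_hom Y X \<and>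
      fcomp (Cat X) G F = fid (Cat X) \<and> fcomp (Cat Y) F G = fid (Cat Y))"

definition Stil_cat :: "('o,'m) cat \<Rightarrow> ('m, 'm \<times> 'm) cat" where
  "Stil_cat H = \<lparr> Obj = Mor H,
       Mor = {(h, g). h \<in> Mor H \<and> g \<in> Mor H \<and> Cod H h = Cod H g},
       Dom = snd, Cod = fst, Idm = (\<lambda>g. (g, g)),
       Comp = (\<lambda>p q. (fst p, snd q)) \<rparr>"

definition Stil :: "('o,'m) cat \<Rightarrow> ('m, 'm \<times> 'm) schemoid" where
  "Stil H = \<lparr> Cat = Stil_cat H,
       Blocks = {{(k, l). k \<in> Mor H \<and> l \<in> Mor H \<and> Cod H k = Cod H l \<and> Comp H (ginv H k) l = f}
                 | f. f \<in> Mor H},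
       Tob = (\<lambda>f. f), Tmor = (\<lambda>(f, g). (g, f)),
       Base = Idm H ` Obj H \<rparr>"

definition Stil_fun :: "('o,'m) cat \<Rightarrow> ('o \<Rightarrow> 'p) \<times> ('m \<Rightarrow> 'n)
                        \<Rightarrow> ('m \<Rightarrow> 'n) \<times> ('m \<times> 'm \<Rightarrow> 'n \<times> 'n)" where
  "Stil_fun H F = (restrict (snd F) (Mor H),
                   restrict (\<lambda>(f, g). (snd F f, snd F g)) (Mor (Stil_cat H)))"

text \<open>A morphism sigma : alpha -> beta of R~(X) is encoded as the triple (alpha, sigma, beta)
  (hom-sets of a category being taken disjoint).\<close>
definition Rtil :: "('o,'m) schemoid \<Rightarrow> ('m set, 'm set \<times> 'm set \<times> 'm set) cat" where
  "Rtil X = \<lparr> Obj = S0 X,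
       Mor = {(\<alpha>, \<sigma>, \<beta>). \<alpha> \<in> S0 X \<and> \<beta> \<in> S0 X \<and> \<sigma> \<in> Blocks X \<and>
                         pnum (Cat X) \<sigma> \<alpha> \<sigma> = 1 \<and> pnum (Cat X) \<beta> \<sigma> \<sigma> = 1},
       Dom = fst, Cod = (\<lambda>t. snd (snd t)), Idm = (\<lambda>\<alpha>. (\<alpha>, \<alpha>, \<alpha>)),
       Comp = (\<lambda>p q. (fst q,
                        THE \<mu>. \<mu> \<in> Blocks X \<and> pnum (Cat X) (fst (snd p)) (fst (snd q)) \<mu> = 1,
                        snd (snd p))) \<rparr>"

definition Rtil_fun :: "('o,'m) schemoid \<Rightarrow> ('p,'n) schemoid \<Rightarrow> ('o \<Rightarrow> 'p) \<times> ('m \<Rightarrow> 'n)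
     \<Rightarrow> ('m set \<Rightarrow> 'n set) \<times> ('m set \<times> 'm set \<times> 'm set \<Rightarrow> 'n set \<times> 'n set \<times> 'n set)" where
  "Rtil_fun X Y F =
     (let Bl = (\<lambda>\<sigma>. THE \<tau>. \<tau> \<in> Blocks Y \<and> snd F ` \<sigma> \<subseteq> \<tau>) in
      (restrict Bl (S0 X),
       restrict (\<lambda>(\<alpha>, \<sigma>, \<beta>). (Bl \<alpha>, Bl \<sigma>, Bl \<beta>)) (Mor (Rtil X))))"

end

theory Submission
  imports Defs
begin

section \<open>Category and groupoid basics\<close>

lemma cat_dom[intro]: "category C \<Longrightarrow> f \<in> Mor C \<Longrightarrow> Dom C f \<in> Obj C"
  and cat_cod[intro]: "category C \<Longrightarrow> f \<in> Mor C \<Longrightarrow> Cod C f \<in> Obj C"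
  and cat_idm[intro]: "category C \<Longrightarrow> x \<in> Obj C \<Longrightarrow> Idm C x \<in> Mor C"
  and cat_idm_dom[simp]: "category C \<Longrightarrow> x \<in> Obj C \<Longrightarrow> Dom C (Idm C x) = x"
  and cat_idm_cod[simp]: "category C \<Longrightarrow> x \<in> Obj C \<Longrightarrow> Cod C (Idm C x) = x"
  and cat_comp: "category C \<Longrightarrow> f \<in> Mor C \<Longrightarrow> g \<in> Mor C \<Longrightarrow> Cod C f = Dom C g \<Longrightarrow> Comp C g f \<in> Mor C"
  and cat_comp_dom[simp]: "category C \<Longrightarrow> f \<in> Mor C \<Longrightarrow> g \<in> Mor C \<Longrightarrow> Cod C f = Dom C g \<Longrightarrow> Dom C (Comp C g f) = Dom C f"
  and cat_comp_cod[simp]: "category C \<Longrightarrow> f \<in> Mor C \<Longrightarrow> g \<in> Mor C \<Longrightarrow> Cod C f = Dom C g \<Longrightarrow> Cod C (Comp C g f) = Cod C g"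
  and cat_idr[simp]: "category C \<Longrightarrow> f \<in> Mor C \<Longrightarrow> Dom C f = x \<Longrightarrow> Comp C f (Idm C x) = f"
  and cat_idl[simp]: "category C \<Longrightarrow> f \<in> Mor C \<Longrightarrow> Cod C f = y \<Longrightarrow> Comp C (Idm C y) f = f"
  and cat_assoc: "category C \<Longrightarrow> f \<in> Mor C \<Longrightarrow> g \<in> Mor C \<Longrightarrow> h \<in> Mor C \<Longrightarrow> Cod C f = Dom C g \<Longrightarrow> Cod C g = Dom C h \<Longrightarrow>
         Comp C h (Comp C g f) = Comp C (Comp C h g) f"
  unfolding category_def by blast+

lemma inverse_unique:
  assumes "category C" "f \<in> Mor C" "is_inverse C f g" "is_inverse C f g'"
  shows "g = g'"
proof -
  have g: "g \<in> Mor C" "Dom C g = Cod C f" "Cod C g = Dom C f" "Comp C g f = Idm C (Dom C f)"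
    using assms(3) unfolding is_inverse_def by auto
  have g': "g' \<in> Mor C" "Dom C g' = Cod C f" "Cod C g' = Dom C f" "Comp C f g' = Idm C (Cod C f)"
    using assms(4) unfolding is_inverse_def by auto
  have "g = Comp C g (Idm C (Cod C f))" using g assms(1) by simp
  also have "\<dots> = Comp C g (Comp C f g')" using g' by simp
  also have "\<dots> = Comp C (Comp C g f) g'" using assms g g' cat_assoc[of C g' f g] by simp
  also have "\<dots> = g'" using g g' assms(1) by simp
  finally show ?thesis .
qed

lemma gpd_cat[intro]: "groupoid C \<Longrightarrow> category C"
  unfolding groupoid_def by blast

lemma ginv_inverse: "groupoid C \<Longrightarrow> f \<in> Mor C \<Longrightarrow> is_inverse C f (ginv C f)"
  unfolding ginv_def groupoid_def
  by (metis (no_types, lifting) inverse_unique the_equality)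

lemma ginv_eq: "groupoid C \<Longrightarrow> f \<in> Mor C \<Longrightarrow> is_inverse C f g \<Longrightarrow> ginv C f = g"
  using ginv_inverse inverse_unique gpd_cat by metis

lemma ginv_props:
  assumes "groupoid C" "f \<in> Mor C"
  shows "ginv C f \<in> Mor C \<and> Dom C (ginv C f) = Cod C f \<and> Cod C (ginv C f) = Dom C f \<and>
     Comp C (ginv C f) f = Idm C (Dom C f) \<and> Comp C f (ginv C f) = Idm C (Cod C f)"
  using ginv_inverse[OF assms] unfolding is_inverse_def by simp

lemma ginv_mor[intro]: "groupoid C \<Longrightarrow> f \<in> Mor C \<Longrightarrow> ginv C f \<in> Mor C"
  using ginv_props by metis
lemma ginv_dom[simp]: "groupoid C \<Longrightarrow> f \<in> Mor C \<Longrightarrow> Dom C (ginv C f) = Cod C f"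
  using ginv_props by metis
lemma ginv_cod[simp]: "groupoid C \<Longrightarrow> f \<in> Mor C \<Longrightarrow> Cod C (ginv C f) = Dom C f"
  using ginv_props by metis
lemma ginv_left[simp]: "groupoid C \<Longrightarrow> f \<in> Mor C \<Longrightarrow> Comp C (ginv C f) f = Idm C (Dom C f)"
  using ginv_props by metis
lemma ginv_right[simp]: "groupoid C \<Longrightarrow> f \<in> Mor C \<Longrightarrow> Comp C f (ginv C f) = Idm C (Cod C f)"
  using ginv_props by metis

lemma ginv_ginv[simp]: assumes "groupoid C" "f \<in> Mor C" shows "ginv C (ginv C f) = f"
proof -
  have "is_inverse C (ginv C f) f" unfolding is_inverse_def using assms ginv_mor[OF assms] by simp
  then show ?thesis using ginv_eq[OF assms(1) ginv_mor[OF assms]] by blast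
qed

lemma ginv_idm[simp]: assumes "groupoid C" "x \<in> Obj C" shows "ginv C (Idm C x) = Idm C x"
proof -
  have c: "category C" using assms by blast
  have "is_inverse C (Idm C x) (Idm C x)" unfolding is_inverse_def using assms c cat_idm[OF c assms(2)] by simp
  then show ?thesis using ginv_eq[OF assms(1) cat_idm[OF c assms(2)]] by blast
qed

lemma gpd_cancel_left:
  assumes "groupoid C" "g \<in> Mor C" "f \<in> Mor C" "f' \<in> Mor C" "Cod C f = Dom C g" "Cod C f' = Dom C g"
    "Comp C g f = Comp C g f'"
  shows "f = f'"
proof -
  have c: "category C" using assms(1) by blast
  have i: "ginv C g \<in> Mor C" "Cod C (ginv C g) = Dom C g" using assms by auto
  have "f = Comp C (Comp C (ginv C g) g) f" using assms c by simp
  also have "\<dots> = Comp C (ginv C g) (Comp C g f)" using assms c i cat_assoc[of C f g "ginv C g"] by simp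
  also have "\<dots> = Comp C (ginv C g) (Comp C g f')" using assms by simp
  also have "\<dots> = Comp C (Comp C (ginv C g) g) f'" using assms c i cat_assoc[of C f' g "ginv C g"] by simp
  also have "\<dots> = f'" using assms c by simp
  finally show ?thesis .
qed

lemma gpd_cancel_right:
  assumes "groupoid C" "g \<in> Mor C" "f \<in> Mor C" "f' \<in> Mor C" "Cod C g = Dom C f" "Cod C g = Dom C f'"
    "Comp C f g = Comp C f' g"
  shows "f = f'"
proof -
  have c: "category C" using assms(1) by blast
  have i: "ginv C g \<in> Mor C" "Dom C (ginv C g) = Cod C g" "Cod C (ginv C g) = Dom C g" using assms by auto
  have "f = Comp C f (Comp C g (ginv C g))" using assms c by simp
  also have "\<dots> = Comp C (Comp C f g) (ginv C g)" using assms c i cat_assoc[of C "ginv C g" g f] by simp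
  also have "\<dots> = Comp C (Comp C f' g) (ginv C g)" using assms by simp
  also have "\<dots> = Comp C f' (Comp C g (ginv C g))" using assms c i cat_assoc[of C "ginv C g" g f'] by simp
  also have "\<dots> = f'" using assms c by simp
  finally show ?thesis .
qed

lemma ginv_comp:
  assumes G: "groupoid C" and f: "f \<in> Mor C" and g: "g \<in> Mor C" and fg: "Cod C f = Dom C g"
  shows "ginv C (Comp C g f) = Comp C (ginv C f) (ginv C g)"
proof -
  have c: "category C" using G by blast
  have gf: "Comp C g f \<in> Mor C" using c f g fg by (simp add: cat_comp)
  have ig: "ginv C g \<in> Mor C" using G g by blast
  have iff: "ginv C f \<in> Mor C" using G f by blast
  have ii: "Comp C (ginv C f) (ginv C g) \<in> Mor C" using c ig iff G f g fg by (auto simp: cat_comp)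
  have e1: "Comp C (ginv C g) (Comp C g f) = Comp C (Comp C (ginv C g) g) f"
    using cat_assoc[OF c f g ig] G g fg by simp
  have e2: "Comp C (Comp C (ginv C g) g) f = f" using G c f g fg by simp
  have e3: "Comp C (Comp C (ginv C f) (ginv C g)) (Comp C g f) = Comp C (ginv C f) (Comp C (ginv C g) (Comp C g f))"
    using cat_assoc[OF c gf ig iff] G c f g fg by simp
  have a1: "Comp C (Comp C (ginv C f) (ginv C g)) (Comp C g f) = Idm C (Dom C f)"
    using e1 e2 e3 G f by simp
  have e4: "Comp C f (Comp C (ginv C f) (ginv C g)) = Comp C (Comp C f (ginv C f)) (ginv C g)"
    using cat_assoc[OF c ig iff f] G f g fg by simp
  have e5: "Comp C (Comp C f (ginv C f)) (ginv C g) = ginv C g" using G c f g fg ig by simp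
  have e6: "Comp C (Comp C g f) (Comp C (ginv C f) (ginv C g)) = Comp C g (Comp C f (Comp C (ginv C f) (ginv C g)))"
    using cat_assoc[OF c ii f g] G c f g fg ig iff by simp
  have a2: "Comp C (Comp C g f) (Comp C (ginv C f) (ginv C g)) = Idm C (Cod C (Comp C g f))"
    using e4 e5 e6 G c f g fg by simp
  have "is_inverse C (Comp C g f) (Comp C (ginv C f) (ginv C g))"
    unfolding is_inverse_def using G c f g fg a1 a2 ii ig iff by simp
  then show ?thesis using ginv_eq[OF G gf] by blast
qed

lemma gpd_solve:
  assumes "groupoid C" "k \<in> Mor C" "l \<in> Mor C" "c \<in> Mor C" "Cod C k = Cod C l" "Cod C c = Dom C k"
  shows "Comp C (ginv C k) l = c \<longleftrightarrow> l = Comp C k c"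
proof
  have cc: "category C" using assms(1) by blast
  have i: "ginv C k \<in> Mor C" using assms by auto
  assume h: "Comp C (ginv C k) l = c"
  have "Comp C k c = Comp C (Comp C k (ginv C k)) l" using assms cc h i cat_assoc[of C l "ginv C k" k] by simp
  also have "\<dots> = l" using assms cc by simp
  finally show "l = Comp C k c" by simp
next
  have cc: "category C" using assms(1) by blast
  have i: "ginv C k \<in> Mor C" using assms by auto
  assume h: "l = Comp C k c"
  have "Comp C (ginv C k) l = Comp C (Comp C (ginv C k) k) c" using assms cc h i cat_assoc[of C c k "ginv C k"] by simp
  also have "\<dots> = c" using assms cc by simp
  finally show "Comp C (ginv C k) l = c" .
qed

declare gpd_cat[simp] cat_dom[simp] cat_cod[simp] cat_idm[simp] cat_comp[simp] ginv_mor[simp]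


lemma block_of_eq: "partition_of A S \<Longrightarrow> \<sigma> \<in> S \<Longrightarrow> f \<in> \<sigma> \<Longrightarrow> block_of S f = \<sigma>"
  unfolding partition_of_def block_of_def by (rule the_equality) blast+

lemma block_of_in: "partition_of A S \<Longrightarrow> f \<in> A \<Longrightarrow> block_of S f \<in> S \<and> f \<in> block_of S f"
  unfolding partition_of_def block_of_def by (metis (no_types, lifting) theI')

lemma functor_props:
  assumes "is_functor C D F"
  shows "category C" "category D" "fst F \<in> extensional (Obj C)" "snd F \<in> extensional (Mor C)"
    "\<And>x. x \<in> Obj C \<Longrightarrow> fst F x \<in> Obj D"
    "\<And>f. f \<in> Mor C \<Longrightarrow> snd F f \<in> Mor D"
    "\<And>f. f \<in> Mor C \<Longrightarrow> Dom D (snd F f) = fst F (Dom C f)"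
    "\<And>f. f \<in> Mor C \<Longrightarrow> Cod D (snd F f) = fst F (Cod C f)"
    "\<And>x. x \<in> Obj C \<Longrightarrow> snd F (Idm C x) = Idm D (fst F x)"
    "\<And>f g. f \<in> Mor C \<Longrightarrow> g \<in> Mor C \<Longrightarrow> Cod C f = Dom C g \<Longrightarrow> snd F (Comp C g f) = Comp D (snd F g) (snd F f)"
  using assms unfolding is_functor_def by blast+

lemma eqpoll_single: "{a} \<approx> {b}"
  by (simp add: eqpoll_iff_card)

section \<open>The schemoid S~(H)\<close>

definition Bk :: "('o,'m) cat \<Rightarrow> 'm \<Rightarrow> ('m \<times> 'm) set" where
  "Bk H f = {(k, l). k \<in> Mor H \<and> l \<in> Mor H \<and> Cod H k = Cod H l \<and> Comp H (ginv H k) l = f}"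

lemma Stil_cat_simps[simp]:
  "Obj (Stil_cat H) = Mor H"
  "Mor (Stil_cat H) = {(h, g). h \<in> Mor H \<and> g \<in> Mor H \<and> Cod H h = Cod H g}"
  "Dom (Stil_cat H) = snd" "Cod (Stil_cat H) = fst" "Idm (Stil_cat H) = (\<lambda>g. (g, g))"
  "Comp (Stil_cat H) = (\<lambda>p q. (fst p, snd q))"
  by (simp_all add: Stil_cat_def)

lemma Stil_simps[simp]:
  "Cat (Stil H) = Stil_cat H" "Blocks (Stil H) = Bk H ` Mor H" "Tob (Stil H) = (\<lambda>f. f)"
  "Tmor (Stil H) = (\<lambda>(f, g). (g, f))" "Base (Stil H) = Idm H ` Obj H"
  by (auto simp: Stil_def Bk_def)

lemma Bk_iff:
  assumes G: "groupoid H" and f: "f \<in> Mor H"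
  shows "(k, l) \<in> Bk H f \<longleftrightarrow> k \<in> Mor H \<and> Dom H k = Cod H f \<and> l = Comp H k f"
proof
  assume "(k, l) \<in> Bk H f"
  then have k: "k \<in> Mor H" "l \<in> Mor H" "Cod H k = Cod H l" "Comp H (ginv H k) l = f"
    unfolding Bk_def by auto
  have "Cod H f = Dom H k" using k G by (metis ginv_cod ginv_mor gpd_cat cat_comp_cod ginv_dom)
  then show "k \<in> Mor H \<and> Dom H k = Cod H f \<and> l = Comp H k f"
    using gpd_solve[OF G k(1) k(2) f k(3)] k by simp
next
  assume k: "k \<in> Mor H \<and> Dom H k = Cod H f \<and> l = Comp H k f"
  then have l: "l \<in> Mor H" "Cod H k = Cod H l" using G f by auto
  show "(k, l) \<in> Bk H f"
    using gpd_solve[OF G _ l(1) f l(2)] k l unfolding Bk_def by simp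
qed

lemma Bk_sub: "Bk H f \<subseteq> Mor (Stil_cat H)"
  unfolding Bk_def by auto

lemma Bk_mem_id: "groupoid H \<Longrightarrow> f \<in> Mor H \<Longrightarrow> (Idm H (Cod H f), f) \<in> Bk H f"
  by (subst Bk_iff) auto

lemma Bk_of_pair: "(h, g) \<in> Mor (Stil_cat H) \<Longrightarrow> (h, g) \<in> Bk H (Comp H (ginv H h) g)"
  unfolding Bk_def by auto

lemma Bk_pair_eq: "(h, g) \<in> Bk H f \<Longrightarrow> f = Comp H (ginv H h) g"
  unfolding Bk_def by auto

lemma pcomp_mor: "groupoid H \<Longrightarrow> (h, g) \<in> Mor (Stil_cat H) \<Longrightarrow> Comp H (ginv H h) g \<in> Mor H"
  by auto

lemma Stil_partition: assumes G: "groupoid H" shows "partition_of (Mor (Stil_cat H)) (Bk H ` Mor H)"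
proof -
  have 1: "\<sigma> \<noteq> {} \<and> \<sigma> \<subseteq> Mor (Stil_cat H)" if s: "\<sigma> \<in> Bk H ` Mor H" for \<sigma>
  proof -
    obtain f where f: "f \<in> Mor H" "\<sigma> = Bk H f" using s by auto
    show ?thesis using Bk_mem_id[OF G f(1)] Bk_sub[of H f] f by auto
  qed
  have 2: "\<exists>!\<sigma>. \<sigma> \<in> Bk H ` Mor H \<and> p \<in> \<sigma>" if p: "p \<in> Mor (Stil_cat H)" for p
  proof -
    obtain h g where hg: "p = (h, g)" by fastforce
    show ?thesis
    proof
      show "Bk H (Comp H (ginv H h) g) \<in> Bk H ` Mor H \<and> p \<in> Bk H (Comp H (ginv H h) g)"
        using p hg G Bk_of_pair[of h g H] pcomp_mor[of H h g] by auto
    next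
      fix \<sigma> assume "\<sigma> \<in> Bk H ` Mor H \<and> p \<in> \<sigma>"
      then show "\<sigma> = Bk H (Comp H (ginv H h) g)" using hg Bk_pair_eq by fastforce
    qed
  qed
  have 3: "\<forall>\<sigma>\<in>Bk H ` Mor H. \<sigma> \<noteq> {} \<and> \<sigma> \<subseteq> Mor (Stil_cat H)" by (rule ballI) (rule 1)
  have 4: "\<forall>p\<in>Mor (Stil_cat H). \<exists>!\<sigma>. \<sigma> \<in> Bk H ` Mor H \<and> p \<in> \<sigma>" by (rule ballI) (rule 2)
  show ?thesis unfolding partition_of_def using 3 4 by (rule conjI)
qed

lemma Stil_block_of: "groupoid H \<Longrightarrow> (h, g) \<in> Mor (Stil_cat H) \<Longrightarrow>
   block_of (Bk H ` Mor H) (h, g) = Bk H (Comp H (ginv H h) g)"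
  apply (rule block_of_eq[OF Stil_partition])
    apply assumption
   apply (rule imageI)
   apply (erule pcomp_mor, assumption)
  apply (erule Bk_of_pair)
  done

lemma Stil_category: "category (Stil_cat H)"
  unfolding category_def by simp

lemma Stil_inverse: "p \<in> Mor (Stil_cat H) \<Longrightarrow> is_inverse (Stil_cat H) p (snd p, fst p)"
  unfolding is_inverse_def by auto

lemma Stil_groupoid: "groupoid (Stil_cat H)"
  unfolding groupoid_def using Stil_category Stil_inverse by metis

lemma Stil_ginv: "p \<in> Mor (Stil_cat H) \<Longrightarrow> ginv (Stil_cat H) p = (snd p, fst p)"
  by (rule ginv_eq[OF Stil_groupoid _ Stil_inverse])

lemma pset_Stil:
  assumes G: "groupoid H" and a: "a \<in> Mor H" and b: "b \<in> Mor H" and c: "c \<in> Mor H"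
    and kl: "(k, l) \<in> Bk H c"
  shows "pset (Stil_cat H) (Bk H a) (Bk H b) (k, l) =
     (if Dom H a = Cod H b \<and> Comp H a b = c then {((k, Comp H k a), (Comp H k a, l))} else {})"
proof -
  have C: "category H" using G by blast
  have k: "k \<in> Mor H" "Dom H k = Cod H c" "l = Comp H k c" using kl Bk_iff[OF G c] by auto
  show ?thesis
  proof (cases "Dom H a = Cod H b \<and> Comp H a b = c")
    case True
    have ca: "Cod H a = Dom H k" using True k C a b by auto
    have ka: "Comp H k a \<in> Mor H" using C k a ca by auto
    have e: "Comp H (Comp H k a) b = l" using True k cat_assoc[OF C b a k(1)] ca by simp
    have m1: "(k, Comp H k a) \<in> Bk H a" using Bk_iff[OF G a] k ca by simp
    have m2: "(Comp H k a, l) \<in> Bk H b" using Bk_iff[OF G b] ka e True C k a ca by simp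
    have "pset (Stil_cat H) (Bk H a) (Bk H b) (k, l) = {((k, Comp H k a), (Comp H k a, l))}"
    proof
      show "{((k, Comp H k a), (Comp H k a, l))} \<subseteq> pset (Stil_cat H) (Bk H a) (Bk H b) (k, l)"
        using m1 m2 unfolding pset_def by auto
      show "pset (Stil_cat H) (Bk H a) (Bk H b) (k, l) \<subseteq> {((k, Comp H k a), (Comp H k a, l))}"
      proof
        fix z assume "z \<in> pset (Stil_cat H) (Bk H a) (Bk H b) (k, l)"
        then obtain p1 p2 q1 q2 where z: "z = ((p1, p2), (q1, q2))" "(p1, p2) \<in> Bk H a" "(q1, q2) \<in> Bk H b"
          "p2 = q1" "p1 = k" "q2 = l"
          unfolding pset_def by auto
        then show "z \<in> {((k, Comp H k a), (Comp H k a, l))}" using Bk_iff[OF G a] by auto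
      qed
    qed
    then show ?thesis using True by simp
  next
    case False
    have "pset (Stil_cat H) (Bk H a) (Bk H b) (k, l) = {}"
    proof (rule ccontr)
      assume "pset (Stil_cat H) (Bk H a) (Bk H b) (k, l) \<noteq> {}"
      then obtain p1 p2 q1 q2 where z: "(p1, p2) \<in> Bk H a" "(q1, q2) \<in> Bk H b"
          "p2 = q1" "p1 = k" "q2 = l"
          unfolding pset_def by auto
      have z1: "Dom H k = Cod H a" "p2 = Comp H k a" using z Bk_iff[OF G a] by auto
      have ka: "Comp H k a \<in> Mor H" using C k a z1 by auto
      have z2: "Dom H (Comp H k a) = Cod H b" "l = Comp H (Comp H k a) b" using z z1 Bk_iff[OF G b] by auto
      have dab: "Dom H a = Cod H b" using z2 C k a z1 by simp
      have "Comp H k (Comp H a b) = Comp H k c" using z2 k cat_assoc[OF C b a k(1)] dab z1 by simp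
      then have "Comp H a b = c" using gpd_cancel_left[OF G k(1) _ c] C a b dab z1 k by auto
      then show False using False dab by simp
    qed
    then show ?thesis using False by simp
  qed
qed

lemma Bk_idm:
  assumes G: "groupoid H" and x: "x \<in> Obj H"
  shows "(k, l) \<in> Bk H (Idm H x) \<longleftrightarrow> k \<in> Mor H \<and> Dom H k = x \<and> l = k"
  using Bk_iff[OF G cat_idm[OF gpd_cat[OF G] x]] G x by auto

lemma Bk_diag: "groupoid H \<Longrightarrow> (g, g) \<in> Bk H f \<Longrightarrow> f = Idm H (Dom H g)"
  using Bk_pair_eq[of g g H f] unfolding Bk_def by auto

lemma Bk_swap:
  assumes G: "groupoid H" and kl: "(k, l) \<in> Bk H c"
  shows "(l, k) \<in> Bk H (ginv H c)"
proof -
  have k: "k \<in> Mor H" "l \<in> Mor H" "Cod H k = Cod H l" "Comp H (ginv H k) l = c" using kl unfolding Bk_def by auto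
  have "ginv H c = Comp H (ginv H l) (ginv H (ginv H k))"
    using ginv_comp[OF G k(2) ginv_mor[OF G k(1)]] k G by simp
  then show ?thesis using k G unfolding Bk_def by simp
qed

lemma Bk_swap_image:
  assumes G: "groupoid H" and c: "c \<in> Mor H"
  shows "(\<lambda>(f, g). (g, f)) ` Bk H c = Bk H (ginv H c)"
proof
  show "(\<lambda>(f, g). (g, f)) ` Bk H c \<subseteq> Bk H (ginv H c)" using Bk_swap[OF G] by auto
  show "Bk H (ginv H c) \<subseteq> (\<lambda>(f, g). (g, f)) ` Bk H c"
  proof
    fix p assume p: "p \<in> Bk H (ginv H c)"
    obtain k l where kl: "p = (k, l)" by fastforce
    have "(l, k) \<in> Bk H c" using Bk_swap[OF G p[unfolded kl]] G c by simp
    then show "p \<in> (\<lambda>(f, g). (g, f)) ` Bk H c" using kl by force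
  qed
qed

lemma J0_Stil: "J0 (Stil H) = (\<lambda>g. (g, g)) ` Mor H"
  unfolding J0_def by simp

lemma Stil_quasi:
  assumes G: "groupoid H"
  shows "quasi_schemoid (Stil_cat H) (Bk H ` Mor H)"
proof -
  have "pset (Stil_cat H) \<sigma> \<tau> f \<approx> pset (Stil_cat H) \<sigma> \<tau> g"
    if s: "\<sigma> \<in> Bk H ` Mor H" "\<tau> \<in> Bk H ` Mor H" "\<mu> \<in> Bk H ` Mor H" "f \<in> \<mu>" "g \<in> \<mu>" for \<sigma> \<tau> \<mu> f g
  proof -
    obtain a b c where abc: "a \<in> Mor H" "b \<in> Mor H" "c \<in> Mor H" "\<sigma> = Bk H a" "\<tau> = Bk H b" "\<mu> = Bk H c"
      using s by auto
    obtain k l k' l' where kl: "f = (k, l)" "g = (k', l')" by fastforce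
    show ?thesis using pset_Stil[OF G abc(1-3), of k l] pset_Stil[OF G abc(1-3), of k' l'] s abc kl
      by (simp add: eqpoll_single)
  qed
  then show ?thesis unfolding quasi_schemoid_def using Stil_category Stil_partition[OF G] by blast
qed

lemma Stil_contra: "contra_endofunctor (Stil_cat H) (\<lambda>f. f) (\<lambda>(f, g). (g, f))"
  unfolding contra_endofunctor_def by auto

lemma Stil_assoc:
  assumes G: "groupoid H"
  shows "assoc_schemoid (Stil H)"
proof -
  have endo: "\<forall>f\<in>\<sigma>. snd f = fst f" if s: "\<sigma> \<in> Bk H ` Mor H" and e: "\<exists>f\<in>\<sigma>. snd f = fst f" for \<sigma>
  proof -
    obtain c where c: "c \<in> Mor H" "\<sigma> = Bk H c" using s by auto
    obtain k l where kl: "(k, l) \<in> \<sigma>" "l = k" using e by force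
    have cc: "c = Idm H (Dom H k)" using Bk_diag[OF G] kl c by blast
    have "Dom H k \<in> Obj H" using kl c G unfolding Bk_def by auto
    then show ?thesis using Bk_idm[OF G] c cc by auto
  qed
  have sw: "(\<lambda>(f, g). (g, f)) ` \<sigma> \<in> Bk H ` Mor H" if s: "\<sigma> \<in> Bk H ` Mor H" for \<sigma>
  proof -
    obtain c where c: "c \<in> Mor H" "\<sigma> = Bk H c" using s by auto
    then show ?thesis using Bk_swap_image[OF G c(1)] G by auto
  qed
  show ?thesis unfolding assoc_schemoid_def
    using Stil_quasi[OF G] endo Stil_contra sw by auto
qed

lemma Stil_unital:
  assumes G: "groupoid H"
  shows "unital (Stil H)"
proof -
  have "\<sigma> \<subseteq> J0 (Stil H)" if s: "\<sigma> \<in> Bk H ` Mor H" and e: "\<sigma> \<inter> J0 (Stil H) \<noteq> {}" for \<sigma>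
  proof -
    obtain c where c: "c \<in> Mor H" "\<sigma> = Bk H c" using s by auto
    obtain g where g: "(g, g) \<in> \<sigma>" using e unfolding J0_Stil by auto
    have cc: "c = Idm H (Dom H g)" using Bk_diag[OF G] g c by blast
    have "Dom H g \<in> Obj H" using g c G unfolding Bk_def by auto
    then show ?thesis using Bk_idm[OF G] c cc unfolding J0_Stil by auto
  qed
  then show ?thesis unfolding unital_def using Stil_assoc[OF G] by simp
qed

lemma Stil_semi_thin:
  assumes G: "groupoid H"
  shows "semi_thin (Stil H)"
proof -
  have st: "f = g" if s: "\<sigma> \<in> Bk H ` Mor H" "f \<in> \<sigma>" "g \<in> \<sigma>" "snd f = snd g" for \<sigma> f g
  proof -
    obtain c where c: "c \<in> Mor H" "\<sigma> = Bk H c" using s by auto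
    obtain k l k' l' where kl: "f = (k, l)" "g = (k', l')" by fastforce
    have a1: "k \<in> Mor H" "Dom H k = Cod H c" "l = Comp H k c"
      using s(2) c kl(1) Bk_iff[OF G c(1), of k l] by auto
    have a2: "k' \<in> Mor H" "Dom H k' = Cod H c" "l' = Comp H k' c"
      using s(3) c kl(2) Bk_iff[OF G c(1), of k' l'] by auto
    have ll: "l = l'" using s(4) kl by simp
    note a = a1 a2
    have e: "Comp H k c = Comp H k' c" using a1(3) a2(3) ll by simp
    have "k = k'" using gpd_cancel_right[OF G c(1) a(1) a(4) a(2)[symmetric] a(5)[symmetric] e] .
    then show ?thesis using a kl by simp
  qed
  have tm: "\<forall>f\<in>Mor (Stil_cat H). (\<lambda>(f, g). (g, f)) f = ginv (Stil_cat H) f"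
  proof
    fix f assume f: "f \<in> Mor (Stil_cat H)"
    show "(\<lambda>(f, g). (g, f)) f = ginv (Stil_cat H) f" using Stil_ginv[OF f] by (simp add: case_prod_beta)
  qed
  have st2: "\<forall>\<sigma>\<in>Blocks (Stil H). \<forall>f\<in>\<sigma>. \<forall>g\<in>\<sigma>. Dom (Cat (Stil H)) f = Dom (Cat (Stil H)) g \<longrightarrow> f = g"
    unfolding Stil_simps Stil_cat_simps using st by blast
  have tm2: "\<forall>f\<in>Mor (Cat (Stil H)). Tmor (Stil H) f = ginv (Cat (Stil H)) f"
    unfolding Stil_simps by (rule tm)
  have gg: "groupoid (Cat (Stil H))" unfolding Stil_simps by (rule Stil_groupoid)
  show ?thesis unfolding semi_thin_def
    by (intro conjI Stil_unital[OF G] st2 gg tm2)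
qed

lemma conn_Stil:
  assumes "(x, v) \<in> conn (Stil_cat H)"
  shows "Cod H x = Cod H v"
  using assms unfolding conn_def
proof (induction rule: rtrancl_induct)
  case base then show ?case by simp
next
  case (step y z) then show ?case by auto
qed

lemma Stil_thin:
  assumes G: "groupoid H"
  shows "thin_smd (Stil H)"
proof -
  have hom: "\<forall>x\<in>Mor H. \<forall>y\<in>Mor H. \<forall>f\<in>Hom (Stil_cat H) x y. \<forall>g\<in>Hom (Stil_cat H) x y. f = g"
    unfolding Hom_def by auto
  have base: "Idm H ` Obj H \<subseteq> Mor H" using G by auto
  have cn: "\<exists>!v. v \<in> Idm H ` Obj H \<and> (x, v) \<in> conn (Stil_cat H)" if x: "x \<in> Mor H" for x
  proof
    have m: "(Idm H (Cod H x), x) \<in> Mor (Stil_cat H)" using x G by simp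
    have "(x, Idm H (Cod H x)) \<in> (\<Union>f\<in>Mor (Stil_cat H). {(Dom (Stil_cat H) f, Cod (Stil_cat H) f), (Cod (Stil_cat H) f, Dom (Stil_cat H) f)})"
      using m by force
    then have "(x, Idm H (Cod H x)) \<in> conn (Stil_cat H)"
      unfolding conn_def by (rule r_into_rtrancl)
    moreover have "Idm H (Cod H x) \<in> Idm H ` Obj H" using x G by simp
    ultimately show "Idm H (Cod H x) \<in> Idm H ` Obj H \<and> (x, Idm H (Cod H x)) \<in> conn (Stil_cat H)"
      by (rule conjI[rotated])
  next
    fix v assume v: "v \<in> Idm H ` Obj H \<and> (x, v) \<in> conn (Stil_cat H)"
    then obtain y where y: "y \<in> Obj H" "v = Idm H y" by auto
    have "Cod H x = y" using conn_Stil[of x v H] v y G by simp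
    then show "v = Idm H (Cod H x)" using y by simp
  qed
  have blk: "block_of (Bk H ` Mor H) (Idm H y, Idm H y) = Bk H (Idm H y)" if y: "y \<in> Obj H" for y
    using Stil_block_of[OF G, of "Idm H y" "Idm H y"] G y by simp
  have S0: "S0 (Stil H) = Bk H ` Idm H ` Obj H"
  proof
    show "S0 (Stil H) \<subseteq> Bk H ` Idm H ` Obj H"
    proof
      fix \<sigma> assume s: "\<sigma> \<in> S0 (Stil H)"
      then obtain c g where c: "c \<in> Mor H" "\<sigma> = Bk H c" "(g, g) \<in> \<sigma>" unfolding S0_def J0_Stil by auto
      have cc: "c = Idm H (Dom H g)" using Bk_diag[OF G] c by blast
      have "Dom H g \<in> Obj H" using c G unfolding Bk_def by auto
      then show "\<sigma> \<in> Bk H ` Idm H ` Obj H" using c cc by auto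
    qed
    show "Bk H ` Idm H ` Obj H \<subseteq> S0 (Stil H)"
    proof
      fix \<sigma> assume "\<sigma> \<in> Bk H ` Idm H ` Obj H"
      then obtain y where y: "y \<in> Obj H" "\<sigma> = Bk H (Idm H y)" by auto
      have "(Idm H y, Idm H y) \<in> \<sigma>" using y Bk_idm[OF G y(1)] G by simp
      then show "\<sigma> \<in> S0 (Stil H)" unfolding S0_def J0_Stil using y G by force
    qed
  qed
  have inj: "inj_on (\<lambda>v. block_of (Bk H ` Mor H) (v, v)) (Idm H ` Obj H)"
  proof (rule inj_onI)
    fix v w assume v: "v \<in> Idm H ` Obj H" and w: "w \<in> Idm H ` Obj H"
      and e: "block_of (Bk H ` Mor H) (v, v) = block_of (Bk H ` Mor H) (w, w)"
    obtain y z where yz: "y \<in> Obj H" "z \<in> Obj H" "v = Idm H y" "w = Idm H z" using v w by auto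
    have "Bk H (Idm H y) = Bk H (Idm H z)" using e blk yz by simp
    moreover have "(Idm H y, Idm H y) \<in> Bk H (Idm H y)" using yz Bk_idm[OF G yz(1)] G by simp
    ultimately have "(Idm H y, Idm H y) \<in> Bk H (Idm H z)" by simp
    then have "y = z" using Bk_idm[OF G yz(2)] G yz by simp
    then show "v = w" using yz by simp
  qed
  have img: "(\<lambda>v. block_of (Bk H ` Mor H) (v, v)) ` (Idm H ` Obj H) = S0 (Stil H)"
    unfolding S0 using blk by (auto simp: image_image)
  have bij: "bij_betw (\<lambda>v. block_of (Bk H ` Mor H) (v, v)) (Idm H ` Obj H) (S0 (Stil H))"
    unfolding bij_betw_def using inj img by simp
  have hom2: "\<forall>x\<in>Obj (Cat (Stil H)). \<forall>y\<in>Obj (Cat (Stil H)). \<forall>f\<in>Hom (Cat (Stil H)) x y. \<forall>g\<in>Hom (Cat (Stil H)) x y. f = g"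
    unfolding Stil_simps Stil_cat_simps by (rule hom)
  have base2: "Base (Stil H) \<subseteq> Obj (Cat (Stil H))" using base by simp
  have cn2: "\<forall>x\<in>Obj (Cat (Stil H)). \<exists>!v. v \<in> Base (Stil H) \<and> (x, v) \<in> conn (Cat (Stil H))"
    unfolding Stil_simps Stil_cat_simps by (rule ballI) (rule cn)
  have bij2: "bij_betw (\<lambda>v. block_of (Blocks (Stil H)) (Idm (Cat (Stil H)) v)) (Base (Stil H)) (S0 (Stil H))"
    unfolding Stil_simps Stil_cat_simps by (rule bij)
  show ?thesis unfolding thin_smd_def by (intro conjI Stil_semi_thin[OF G] hom2 base2 cn2 bij2)
qed

lemma Stil_fun_morph:
  assumes G: "groupoid H" and GK: "groupoid K" and F: "is_functor H K F"
  shows "smd_morph (Stil H) (Stil K) (Stil_fun H F)"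
proof -
  note fp = functor_props[OF F]
  have o: "\<forall>x\<in>Mor H. snd F x \<in> Mor K" using fp(6) by blast
  have m: "\<forall>p\<in>Mor (Stil_cat H). (snd F (fst p), snd F (snd p)) \<in> Mor (Stil_cat K)"
    using fp(6) fp(8) by auto
  have isfn: "is_functor (Stil_cat H) (Stil_cat K) (Stil_fun H F)"
    unfolding is_functor_def Stil_fun_def
    apply (intro conjI Stil_category)
    using o m by (auto simp: case_prod_beta)
  have blk: "\<exists>\<tau>\<in>Bk K ` Mor K. snd (Stil_fun H F) ` \<sigma> \<subseteq> \<tau>" if s: "\<sigma> \<in> Bk H ` Mor H" for \<sigma>
  proof -
    obtain a where a: "a \<in> Mor H" "\<sigma> = Bk H a" using s by auto
    have "snd (Stil_fun H F) ` \<sigma> \<subseteq> Bk K (snd F a)"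
    proof
      fix q assume "q \<in> snd (Stil_fun H F) ` \<sigma>"
      then obtain k l where kl: "(k, l) \<in> Bk H a" "q = snd (Stil_fun H F) (k, l)" using a by auto
      have k: "k \<in> Mor H" "Dom H k = Cod H a" "l = Comp H k a" using kl Bk_iff[OF G a(1)] by auto
      have m: "(k, l) \<in> Mor (Stil_cat H)" by (rule subsetD[OF Bk_sub kl(1)])
      have q: "q = (snd F k, snd F l)" using kl m unfolding Stil_fun_def by simp
      have "snd F l = Comp K (snd F k) (snd F a)" using k fp(10)[of a k] a by simp
      then show "q \<in> Bk K (snd F a)" using q Bk_iff[OF GK fp(6)[OF a(1)]] fp k a by simp
    qed
    then show ?thesis using a fp by blast
  qed
  have tm: "\<forall>f\<in>Mor (Stil_cat H). snd (Stil_fun H F) ((\<lambda>(f, g). (g, f)) f) = (\<lambda>(f, g). (g, f)) (snd (Stil_fun H F) f)"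
    unfolding Stil_fun_def by auto
  have base: "fst (Stil_fun H F) ` Idm H ` Obj H \<subseteq> Idm K ` Obj K"
    unfolding Stil_fun_def using fp by auto
  have isfn2: "is_functor (Cat (Stil H)) (Cat (Stil K)) (Stil_fun H F)" using isfn by simp
  have blk2: "\<forall>\<sigma>\<in>Blocks (Stil H). \<exists>\<tau>\<in>Blocks (Stil K). snd (Stil_fun H F) ` \<sigma> \<subseteq> \<tau>"
    unfolding Stil_simps by (rule ballI) (rule blk)
  have tob: "\<forall>x\<in>Obj (Cat (Stil H)). fst (Stil_fun H F) (Tob (Stil H) x) = Tob (Stil K) (fst (Stil_fun H F) x)"
    by simp
  have tm2: "\<forall>f\<in>Mor (Cat (Stil H)). snd (Stil_fun H F) (Tmor (Stil H) f) = Tmor (Stil K) (snd (Stil_fun H F) f)"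
    unfolding Stil_simps by (rule tm)
  have base2: "fst (Stil_fun H F) ` Base (Stil H) \<subseteq> Base (Stil K)"
    unfolding Stil_simps by (rule base)
  show ?thesis unfolding smd_morph_def
    by (intro conjI isfn2 blk2 tob tm2 base2)
qed

lemma Stil_fun_id:
  shows "Stil_fun H (fid H) = fid (Cat (Stil H))"
proof -
  have 1: "restrict (restrict id (Mor H)) (Mor H) = restrict id (Mor H)" by (rule ext) simp
  have 2: "restrict (\<lambda>(f, g). (restrict id (Mor H) f, restrict id (Mor H) g)) (Mor (Stil_cat H))
      = restrict id (Mor (Stil_cat H))"
  proof
    fix p show "restrict (\<lambda>(f, g). (restrict id (Mor H) f, restrict id (Mor H) g)) (Mor (Stil_cat H)) p
      = restrict id (Mor (Stil_cat H)) p"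
      by (cases "p \<in> Mor (Stil_cat H)") (auto simp: case_prod_beta)
  qed
  show ?thesis unfolding Stil_fun_def fid_def using 1 2 by simp
qed

lemma Stil_fun_comp:
  assumes F: "is_functor H K F" and GG: "is_functor K L G"
  shows "Stil_fun H (fcomp H G F) = fcomp (Cat (Stil H)) (Stil_fun K G) (Stil_fun H F)"
proof -
  note fp = functor_props[OF F]
  have 1: "restrict (snd (fcomp H G F)) (Mor H) = restrict (fst (Stil_fun K G) \<circ> fst (Stil_fun H F)) (Mor H)"
  proof
    fix f show "restrict (snd (fcomp H G F)) (Mor H) f = restrict (fst (Stil_fun K G) \<circ> fst (Stil_fun H F)) (Mor H) f"
      using fp(6)[of f] unfolding fcomp_def Stil_fun_def by (cases "f \<in> Mor H") auto
  qed
  have 2: "restrict (\<lambda>(f, g). (snd (fcomp H G F) f, snd (fcomp H G F) g)) (Mor (Stil_cat H))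
     = restrict (snd (Stil_fun K G) \<circ> snd (Stil_fun H F)) (Mor (Stil_cat H))"
  proof
    fix p show "restrict (\<lambda>(f, g). (snd (fcomp H G F) f, snd (fcomp H G F) g)) (Mor (Stil_cat H)) p
     = restrict (snd (Stil_fun K G) \<circ> snd (Stil_fun H F)) (Mor (Stil_cat H)) p"
    proof (cases "p \<in> Mor (Stil_cat H)")
      case True
      obtain h g where p: "p = (h, g)" by fastforce
      have h: "h \<in> Mor H" "g \<in> Mor H" "Cod H h = Cod H g" using True p by auto
      have m: "(snd F h, snd F g) \<in> Mor (Stil_cat K)" using h fp(6) fp(8) by simp
      show ?thesis using True p h m unfolding fcomp_def Stil_fun_def by simp
    next
      case False then show ?thesis by simp
    qed
  qed
  have l: "Stil_fun H (fcomp H G F) = (restrict (snd (fcomp H G F)) (Mor H),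
     restrict (\<lambda>(f, g). (snd (fcomp H G F) f, snd (fcomp H G F) g)) (Mor (Stil_cat H)))"
    unfolding Stil_fun_def by simp
  have r: "fcomp (Cat (Stil H)) (Stil_fun K G) (Stil_fun H F) = (restrict (fst (Stil_fun K G) \<circ> fst (Stil_fun H F)) (Mor H),
     restrict (snd (Stil_fun K G) \<circ> snd (Stil_fun H F)) (Mor (Stil_cat H)))"
    unfolding fcomp_def by simp
  show ?thesis unfolding l r using 1 2 by simp
qed

lemma Stil_fun_inj:
  assumes F: "is_functor H K F" and F': "is_functor H K F'" and e: "Stil_fun H F = Stil_fun H F'"
  shows "F = F'"
proof -
  note fp = functor_props[OF F] and fp' = functor_props[OF F']
  have s: "snd F f = snd F' f" if "f \<in> Mor H" for f
  proof -
    have "restrict (snd F) (Mor H) f = restrict (snd F') (Mor H) f"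
      using arg_cong[OF e, of fst] unfolding Stil_fun_def by simp
    then show ?thesis using that by simp
  qed
  have snd: "snd F = snd F'"
  proof
    fix x show "snd F x = snd F' x"
      using s[of x] fp(4) fp'(4) by (cases "x \<in> Mor H") (auto simp: extensional_def)
  qed
  have "fst F x = fst F' x" if x: "x \<in> Obj H" for x
  proof -
    have "fst F x = Dom K (snd F (Idm H x))" using fp(7)[of "Idm H x"] fp(1) x by simp
    also have "\<dots> = Dom K (snd F' (Idm H x))" using snd by simp
    also have "\<dots> = fst F' x" using fp'(7)[of "Idm H x"] fp(1) x by simp
    finally show ?thesis .
  qed
  then have "fst F = fst F'"
  proof -
    assume a: "\<And>x. x \<in> Obj H \<Longrightarrow> fst F x = fst F' x"
    show ?thesis
    proof
      fix x show "fst F x = fst F' x"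
        using a[of x] fp(3) fp'(3) by (cases "x \<in> Obj H") (auto simp: extensional_def)
    qed
  qed
  then show ?thesis using snd by (simp add: prod_eq_iff)
qed

lemma Stil_fun_surj:
  assumes G: "groupoid H" and GK: "groupoid K" and M: "smd_morph (Stil H) (Stil K) Gm"
  shows "\<exists>F. is_functor H K F \<and> Stil_fun H F = Gm"
proof -
  have isfn: "is_functor (Stil_cat H) (Stil_cat K) Gm" using M unfolding smd_morph_def by simp
  note gp = functor_props[OF isfn]
  define g0 where "g0 = fst Gm"
  have g0m: "g0 f \<in> Mor K" if "f \<in> Mor H" for f using gp(5) that g0_def by simp
  have sndG: "snd Gm p = (g0 (fst p), g0 (snd p))" if p: "p \<in> Mor (Stil_cat H)" for p
    using gp(7)[OF p] gp(8)[OF p] g0_def by (simp add: prod_eq_iff)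
  have blk: "\<exists>\<tau>\<in>Bk K ` Mor K. snd Gm ` Bk H a \<subseteq> \<tau>" if a: "a \<in> Mor H" for a
    using M a unfolding smd_morph_def by simp
  have base: "g0 (Idm H y) \<in> Idm K ` Obj K" if y: "y \<in> Obj H" for y
    using M y unfolding smd_morph_def g0_def by auto
  have key: "Dom K (g0 k) = Cod K (g0 a) \<and> g0 (Comp H k a) = Comp K (g0 k) (g0 a)"
    if a: "a \<in> Mor H" and k: "k \<in> Mor H" and ka: "Dom H k = Cod H a" for a k
  proof -
    obtain c where c: "c \<in> Mor K" "snd Gm ` Bk H a \<subseteq> Bk K c" using blk[OF a] by auto
    have i1: "(Idm H (Cod H a), a) \<in> Bk H a" using Bk_mem_id[OF G a] .
    have i2: "(k, Comp H k a) \<in> Bk H a" using Bk_iff[OF G a] k ka by simp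
    have j1: "(g0 (Idm H (Cod H a)), g0 a) \<in> Bk K c"
      using c(2) i1 sndG[of "(Idm H (Cod H a), a)"] Bk_sub[of H a] by force
    have j2: "(g0 k, g0 (Comp H k a)) \<in> Bk K c"
      using c(2) i2 sndG[of "(k, Comp H k a)"] Bk_sub[of H a] by force
    obtain z where z: "z \<in> Obj K" "g0 (Idm H (Cod H a)) = Idm K z" using base[of "Cod H a"] G a by auto
    have "Dom K (Idm K z) = Cod K c \<and> g0 a = Comp K (Idm K z) c" using j1 z Bk_iff[OF GK c(1)] by simp
    then have cc: "c = g0 a" using z GK c(1) by simp
    show ?thesis using j2 Bk_iff[OF GK c(1)] cc by simp
  qed
  define fo where "fo = restrict (\<lambda>x. Dom K (g0 (Idm H x))) (Obj H)"
  have idm: "g0 (Idm H y) = Idm K (fo y)" if y: "y \<in> Obj H" for y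
  proof -
    obtain z where z: "z \<in> Obj K" "g0 (Idm H y) = Idm K z" using base[OF y] by auto
    then show ?thesis using y GK unfolding fo_def by simp
  qed
  have fo_obj: "fo y \<in> Obj K" if y: "y \<in> Obj H" for y
    using y g0m[of "Idm H y"] G GK unfolding fo_def by simp
  have dom: "Dom K (g0 f) = fo (Dom H f)" if f: "f \<in> Mor H" for f
  proof -
    have "Dom K (g0 f) = Cod K (g0 (Idm H (Dom H f)))" using key[of "Idm H (Dom H f)" f] f G by simp
    then show ?thesis using idm[of "Dom H f"] fo_obj[of "Dom H f"] f G GK by simp
  qed
  have cod: "Cod K (g0 f) = fo (Cod H f)" if f: "f \<in> Mor H" for f
  proof -
    have "Dom K (g0 (Idm H (Cod H f))) = Cod K (g0 f)" using key[of f "Idm H (Cod H f)"] f G by simp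
    then show ?thesis using idm[of "Cod H f"] fo_obj[of "Cod H f"] f G GK by simp
  qed
  have comp: "g0 (Comp H g f) = Comp K (g0 g) (g0 f)" if "f \<in> Mor H" "g \<in> Mor H" "Cod H f = Dom H g" for f g
    using key that by simp
  have ext: "g0 \<in> extensional (Mor H)" using gp(3) g0_def by simp
  have foe: "fo \<in> extensional (Obj H)" unfolding fo_def by simp
  have isf: "is_functor H K (fo, g0)"
    unfolding is_functor_def using G GK fo_obj g0m dom cod idm comp ext foe
    by auto
  have "Stil_fun H (fo, g0) = Gm"
  proof -
    have 1: "restrict g0 (Mor H) = fst Gm" using ext g0_def by (simp add: extensional_restrict)
    have 2: "restrict (\<lambda>(f, g). (g0 f, g0 g)) (Mor (Stil_cat H)) = snd Gm"
    proof
      fix p show "restrict (\<lambda>(f, g). (g0 f, g0 g)) (Mor (Stil_cat H)) p = snd Gm p"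
      proof (cases "p \<in> Mor (Stil_cat H)")
        case True then show ?thesis using sndG[OF True] by (simp add: case_prod_beta)
      next
        case False then show ?thesis using extensional_arb[OF gp(4) False] by (metis restrict_apply)
      qed
    qed
    show ?thesis unfolding Stil_fun_def using 1 2 by (simp add: prod_eq_iff)
  qed
  then show ?thesis using isf by blast
qed

lemma Stil_fun_bij:
  assumes G: "groupoid H" and GK: "groupoid K"
  shows "bij_betw (Stil_fun H) (gpd_hom H K) (smd_hom (Stil H) (Stil K))"
  unfolding bij_betw_def
proof
  show "inj_on (Stil_fun H) (gpd_hom H K)"
    unfolding gpd_hom_def by (rule inj_onI) (use Stil_fun_inj in blast)
  show "Stil_fun H ` gpd_hom H K = smd_hom (Stil H) (Stil K)"
  proof
    show "Stil_fun H ` gpd_hom H K \<subseteq> smd_hom (Stil H) (Stil K)"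
      unfolding gpd_hom_def smd_hom_def using Stil_fun_morph[OF G GK] by auto
    show "smd_hom (Stil H) (Stil K) \<subseteq> Stil_fun H ` gpd_hom H K"
      unfolding gpd_hom_def smd_hom_def using Stil_fun_surj[OF G GK] by blast
  qed
qed

lemma eqpoll_ne: "A \<approx> B \<Longrightarrow> A \<noteq> {} \<Longrightarrow> B \<noteq> {}"
  using eqpoll_empty_iff_empty eqpoll_sym eqpoll_trans by metis

lemma eqpoll_card1: "A \<approx> {x} \<Longrightarrow> card A = 1"
proof -
  assume a: "A \<approx> {x}"
  have f: "finite A" using eqpoll_finite_iff[OF a] by simp
  show "card A = 1" using eqpoll_iff_card[OF f, of "{x}"] a by simp
qed

locale thin =
  fixes X :: "('o,'m) schemoid"
  assumes thinX: "thin_smd X"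
begin

abbreviation "C \<equiv> Cat X"
abbreviation "S \<equiv> Blocks X"

lemma semi: "semi_thin X" using thinX unfolding thin_smd_def by blast
lemma unit: "unital X" using semi unfolding semi_thin_def by blast
lemma asc: "assoc_schemoid X" using unit unfolding unital_def by blast
lemma qs: "quasi_schemoid C S" using asc unfolding assoc_schemoid_def by blast
lemma G: "groupoid C" using semi unfolding semi_thin_def by blast
lemma CC: "category C" using G by blast
lemma part: "partition_of (Mor C) S" using qs unfolding quasi_schemoid_def by blast

lemma S_sub: "\<sigma> \<in> S \<Longrightarrow> \<sigma> \<subseteq> Mor C" using part unfolding partition_of_def by blast
lemma S_ne: "\<sigma> \<in> S \<Longrightarrow> \<sigma> \<noteq> {}" using part unfolding partition_of_def by blast
lemma S_mor: "\<sigma> \<in> S \<Longrightarrow> f \<in> \<sigma> \<Longrightarrow> f \<in> Mor C" using S_sub by blast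

lemma blk_in: "f \<in> Mor C \<Longrightarrow> block_of S f \<in> S" using block_of_in[OF part] by blast
lemma blk_mem: "f \<in> Mor C \<Longrightarrow> f \<in> block_of S f" using block_of_in[OF part] by blast
lemma blk_eq: "\<sigma> \<in> S \<Longrightarrow> f \<in> \<sigma> \<Longrightarrow> block_of S f = \<sigma>" using block_of_eq[OF part] by blast
lemma blk_same: "\<sigma> \<in> S \<Longrightarrow> \<tau> \<in> S \<Longrightarrow> f \<in> \<sigma> \<Longrightarrow> f \<in> \<tau> \<Longrightarrow> \<sigma> = \<tau>"
  using blk_eq by metis

lemma eqp: "\<sigma> \<in> S \<Longrightarrow> \<tau> \<in> S \<Longrightarrow> \<mu> \<in> S \<Longrightarrow> f \<in> \<mu> \<Longrightarrow> g \<in> \<mu> \<Longrightarrow> pset C \<sigma> \<tau> f \<approx> pset C \<sigma> \<tau> g"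
  using qs unfolding quasi_schemoid_def by blast

lemma unital_sub: "\<sigma> \<in> S \<Longrightarrow> \<sigma> \<inter> J0 X \<noteq> {} \<Longrightarrow> \<sigma> \<subseteq> J0 X"
  using unit unfolding unital_def by blast

lemma st_dom: "\<sigma> \<in> S \<Longrightarrow> f \<in> \<sigma> \<Longrightarrow> g \<in> \<sigma> \<Longrightarrow> Dom C f = Dom C g \<Longrightarrow> f = g"
  using semi unfolding semi_thin_def by blast

lemma Tmor_eq: "f \<in> Mor C \<Longrightarrow> Tmor X f = ginv C f"
  using semi unfolding semi_thin_def by blast

lemma T_blk: "\<sigma> \<in> S \<Longrightarrow> ginv C ` \<sigma> \<in> S"
proof -
  assume s: "\<sigma> \<in> S"
  have "Tmor X ` \<sigma> = ginv C ` \<sigma>" by (rule image_cong[OF refl]) (rule Tmor_eq, rule S_mor[OF s])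
  then show ?thesis using asc s unfolding assoc_schemoid_def by metis
qed

lemma st_cod:
  assumes s: "\<sigma> \<in> S" and f: "f \<in> \<sigma>" and g: "g \<in> \<sigma>" and e: "Cod C f = Cod C g"
  shows "f = g"
proof -
  have m: "f \<in> Mor C" "g \<in> Mor C" using f g s S_mor by auto
  have "ginv C f = ginv C g"
    using st_dom[OF T_blk[OF s], of "ginv C f" "ginv C g"] f g e m G by simp
  then show ?thesis using m G by (metis ginv_ginv)
qed

lemma thin_hom: "f \<in> Mor C \<Longrightarrow> g \<in> Mor C \<Longrightarrow> Dom C f = Dom C g \<Longrightarrow> Cod C f = Cod C g \<Longrightarrow> f = g"
proof -
  assume a: "f \<in> Mor C" "g \<in> Mor C" "Dom C f = Dom C g" "Cod C f = Cod C g"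
  have h: "\<forall>x\<in>Obj C. \<forall>y\<in>Obj C. \<forall>f\<in>Hom C x y. \<forall>g\<in>Hom C x y. f = g" using thinX unfolding thin_smd_def by blast
  have "f \<in> Hom C (Dom C f) (Cod C f)" "g \<in> Hom C (Dom C f) (Cod C f)" using a unfolding Hom_def by auto
  moreover have "Dom C f \<in> Obj C" "Cod C f \<in> Obj C" using a CC by auto
  ultimately show "f = g" using h by blast
qed

lemma base_obj: "Base X \<subseteq> Obj C" using thinX unfolding thin_smd_def by blast
lemma base_uniq: "x \<in> Obj C \<Longrightarrow> \<exists>!v. v \<in> Base X \<and> (x, v) \<in> conn C"
  using thinX unfolding thin_smd_def by blast
lemma bo_bij: "bij_betw (\<lambda>v. block_of S (Idm C v)) (Base X) (S0 X)"
  using thinX unfolding thin_smd_def by blast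

lemma J0_idm: "h \<in> J0 X \<Longrightarrow> \<exists>x\<in>Obj C. h = Idm C x" unfolding J0_def by auto

lemma Tob_id: assumes x: "x \<in> Obj C" shows "Tob X x = x"
proof -
  have ce: "contra_endofunctor C (Tob X) (Tmor X)" using asc unfolding assoc_schemoid_def by blast
  have "Tmor X (Idm C x) = Idm C (Tob X x)" "Tob X x \<in> Obj C" using ce x unfolding contra_endofunctor_def by auto
  moreover have "Tmor X (Idm C x) = Idm C x" using Tmor_eq[of "Idm C x"] x G CC by simp
  ultimately show ?thesis using CC x by (metis cat_idm_dom)
qed

end

definition bsrc :: "('o,'m) schemoid \<Rightarrow> 'm set \<Rightarrow> 'm set" where
  "bsrc X \<sigma> = block_of (Blocks X) (Idm (Cat X) (Dom (Cat X) (SOME f. f \<in> \<sigma>)))"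
definition btgt :: "('o,'m) schemoid \<Rightarrow> 'm set \<Rightarrow> 'm set" where
  "btgt X \<sigma> = block_of (Blocks X) (Idm (Cat X) (Cod (Cat X) (SOME f. f \<in> \<sigma>)))"
definition tri :: "('o,'m) schemoid \<Rightarrow> 'm set \<Rightarrow> 'm set \<times> 'm set \<times> 'm set" where
  "tri X \<sigma> = (bsrc X \<sigma>, \<sigma>, btgt X \<sigma>)"

context thin
begin

lemma idm_blk: "x \<in> Obj C \<Longrightarrow> block_of S (Idm C x) \<in> S \<and> Idm C x \<in> block_of S (Idm C x)"
  using blk_in blk_mem CC by auto

lemma J0_blk_sub: "x \<in> Obj C \<Longrightarrow> block_of S (Idm C x) \<subseteq> J0 X"
proof -
  assume x: "x \<in> Obj C"
  have "Idm C x \<in> J0 X" using x unfolding J0_def by simp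
  then show ?thesis using unital_sub idm_blk[OF x] by blast
qed

lemma src_same:
  assumes s: "\<sigma> \<in> S" and f: "f \<in> \<sigma>" and f': "f' \<in> \<sigma>"
  shows "block_of S (Idm C (Dom C f')) = block_of S (Idm C (Dom C f))"
proof -
  have fm: "f \<in> Mor C" "f' \<in> Mor C" using s f f' S_mor by auto
  have x: "Dom C f \<in> Obj C" using fm CC by simp
  define A where "A = block_of S (Idm C (Dom C f))"
  have A: "A \<in> S" "Idm C (Dom C f) \<in> A" "A \<subseteq> J0 X" using idm_blk[OF x] J0_blk_sub[OF x] A_def by auto
  have "(f, Idm C (Dom C f)) \<in> pset C \<sigma> A f" unfolding pset_def using f A fm CC x by simp
  then have "pset C \<sigma> A f' \<noteq> {}" using eqpoll_ne[OF eqp[OF s A(1) s f f']] by blast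
  then obtain a b where ab: "a \<in> \<sigma>" "b \<in> A" "Dom C a = Cod C b" "Comp C a b = f'" unfolding pset_def by auto
  obtain z where z: "z \<in> Obj C" "b = Idm C z" using ab(2) A(3) J0_idm by blast
  have am: "a \<in> Mor C" using ab s S_mor by auto
  have "a = f'" using ab z am CC by simp
  then have "b = Idm C (Dom C f')" using ab z CC by simp
  then show ?thesis using blk_eq[OF A(1)] ab(2) A_def by simp
qed

lemma tgt_same:
  assumes s: "\<sigma> \<in> S" and f: "f \<in> \<sigma>" and f': "f' \<in> \<sigma>"
  shows "block_of S (Idm C (Cod C f')) = block_of S (Idm C (Cod C f))"
proof -
  have fm: "f \<in> Mor C" "f' \<in> Mor C" using s f f' S_mor by auto
  have x: "Cod C f \<in> Obj C" using fm CC by simp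
  define A where "A = block_of S (Idm C (Cod C f))"
  have A: "A \<in> S" "Idm C (Cod C f) \<in> A" "A \<subseteq> J0 X" using idm_blk[OF x] J0_blk_sub[OF x] A_def by auto
  have "(Idm C (Cod C f), f) \<in> pset C A \<sigma> f" unfolding pset_def using f A fm CC x by simp
  then have "pset C A \<sigma> f' \<noteq> {}" using eqpoll_ne[OF eqp[OF A(1) s s f f']] by blast
  then obtain a b where ab: "a \<in> A" "b \<in> \<sigma>" "Dom C a = Cod C b" "Comp C a b = f'" unfolding pset_def by auto
  obtain z where z: "z \<in> Obj C" "a = Idm C z" using ab(1) A(3) J0_idm by blast
  have bm: "b \<in> Mor C" using ab s S_mor by auto
  have "b = f'" using ab z bm CC by simp
  then have "a = Idm C (Cod C f')" using ab z CC by simp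
  then show ?thesis using blk_eq[OF A(1)] ab(1) A_def by simp
qed

lemma some_in: "\<sigma> \<in> S \<Longrightarrow> (SOME f. f \<in> \<sigma>) \<in> \<sigma>"
  using S_ne by (simp add: some_in_eq)

lemma src_eq: "\<sigma> \<in> S \<Longrightarrow> f \<in> \<sigma> \<Longrightarrow> block_of S (Idm C (Dom C f)) = bsrc X \<sigma>"
  unfolding bsrc_def using src_same some_in by metis

lemma tgt_eq: "\<sigma> \<in> S \<Longrightarrow> f \<in> \<sigma> \<Longrightarrow> block_of S (Idm C (Cod C f)) = btgt X \<sigma>"
  unfolding btgt_def using tgt_same some_in by metis

lemma S0_iff: "\<alpha> \<in> S0 X \<longleftrightarrow> \<alpha> \<in> S \<and> \<alpha> \<inter> J0 X \<noteq> {}"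
  unfolding S0_def by simp

lemma S0_J0: "\<alpha> \<in> S0 X \<Longrightarrow> \<alpha> \<subseteq> J0 X" using S0_iff unital_sub by blast

lemma S0_block: "\<alpha> \<in> S0 X \<Longrightarrow> \<exists>x\<in>Obj C. Idm C x \<in> \<alpha> \<and> \<alpha> = block_of S (Idm C x)"
proof -
  assume a: "\<alpha> \<in> S0 X"
  then obtain h where h: "h \<in> \<alpha>" "h \<in> J0 X" using S0_iff by blast
  obtain x where x: "x \<in> Obj C" "h = Idm C x" using J0_idm h by blast
  show ?thesis using x h blk_eq a S0_iff by auto
qed

lemma idm_S0: "x \<in> Obj C \<Longrightarrow> block_of S (Idm C x) \<in> S0 X"
  using idm_blk S0_iff unfolding J0_def by auto

lemma src_S0: assumes s: "\<sigma> \<in> S" shows "bsrc X \<sigma> \<in> S0 X"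
proof -
  have f: "(SOME f. f \<in> \<sigma>) \<in> \<sigma>" "(SOME f. f \<in> \<sigma>) \<in> Mor C" using some_in[OF s] S_mor[OF s] by auto
  have "Dom C (SOME f. f \<in> \<sigma>) \<in> Obj C" using f CC by simp
  then show ?thesis using src_eq[OF s f(1)] idm_S0 by metis
qed

lemma tgt_S0: assumes s: "\<sigma> \<in> S" shows "btgt X \<sigma> \<in> S0 X"
proof -
  have f: "(SOME f. f \<in> \<sigma>) \<in> \<sigma>" "(SOME f. f \<in> \<sigma>) \<in> Mor C" using some_in[OF s] S_mor[OF s] by auto
  have "Cod C (SOME f. f \<in> \<sigma>) \<in> Obj C" using f CC by simp
  then show ?thesis using tgt_eq[OF s f(1)] idm_S0 by metis
qed

lemma src_of_S0: "\<alpha> \<in> S0 X \<Longrightarrow> bsrc X \<alpha> = \<alpha>"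
proof -
  assume a: "\<alpha> \<in> S0 X"
  then obtain x where x: "x \<in> Obj C" "Idm C x \<in> \<alpha>" "\<alpha> = block_of S (Idm C x)" using S0_block by blast
  show ?thesis using src_eq[of \<alpha> "Idm C x"] a x S0_iff CC by simp
qed

lemma tgt_of_S0: "\<alpha> \<in> S0 X \<Longrightarrow> btgt X \<alpha> = \<alpha>"
proof -
  assume a: "\<alpha> \<in> S0 X"
  then obtain x where x: "x \<in> Obj C" "Idm C x \<in> \<alpha>" "\<alpha> = block_of S (Idm C x)" using S0_block by blast
  show ?thesis using tgt_eq[of \<alpha> "Idm C x"] a x S0_iff CC by simp
qed

lemma exist_dom:
  assumes s: "\<sigma> \<in> S" and x: "x \<in> Obj C" and ix: "Idm C x \<in> bsrc X \<sigma>"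
  shows "\<exists>f\<in>\<sigma>. Dom C f = x"
proof -
  obtain f0 where f0: "f0 \<in> \<sigma>" using S_ne[OF s] by blast
  have fm: "f0 \<in> Mor C" using f0 s S_mor by auto
  define A where "A = bsrc X \<sigma>"
  have A: "A \<in> S" "Idm C (Dom C f0) \<in> A" "Idm C x \<in> A"
    using src_S0[OF s] S0_iff A_def src_eq[OF s f0] idm_blk[of "Dom C f0"] fm CC ix by auto
  have T: "ginv C ` \<sigma> \<in> S" using T_blk[OF s] .
  have "(ginv C f0, f0) \<in> pset C (ginv C ` \<sigma>) \<sigma> (Idm C (Dom C f0))"
    unfolding pset_def using f0 fm G by simp
  then have "pset C (ginv C ` \<sigma>) \<sigma> (Idm C x) \<noteq> {}" using eqpoll_ne[OF eqp[OF T s A(1) A(2) A(3)]] by blast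
  then obtain a b where ab: "a \<in> ginv C ` \<sigma>" "b \<in> \<sigma>" "Dom C a = Cod C b" "Comp C a b = Idm C x" unfolding pset_def by auto
  have m: "a \<in> Mor C" "b \<in> Mor C" using ab s T S_mor by auto
  have "Dom C (Comp C a b) = Dom C b" using cat_comp_dom[OF CC m(2) m(1) ab(3)[symmetric]] .
  then have "Dom C b = x" using ab x CC by simp
  then show ?thesis using ab by blast
qed

lemma exist_cod:
  assumes s: "\<sigma> \<in> S" and y: "y \<in> Obj C" and iy: "Idm C y \<in> btgt X \<sigma>"
  shows "\<exists>f\<in>\<sigma>. Cod C f = y"
proof -
  obtain f0 where f0: "f0 \<in> \<sigma>" using S_ne[OF s] by blast
  have fm: "f0 \<in> Mor C" using f0 s S_mor by auto
  define A where "A = btgt X \<sigma>"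
  have A: "A \<in> S" "Idm C (Cod C f0) \<in> A" "Idm C y \<in> A"
    using tgt_S0[OF s] S0_iff A_def tgt_eq[OF s f0] idm_blk[of "Cod C f0"] fm CC iy by auto
  have T: "ginv C ` \<sigma> \<in> S" using T_blk[OF s] .
  have "(f0, ginv C f0) \<in> pset C \<sigma> (ginv C ` \<sigma>) (Idm C (Cod C f0))"
    unfolding pset_def using f0 fm G by simp
  then have "pset C \<sigma> (ginv C ` \<sigma>) (Idm C y) \<noteq> {}" using eqpoll_ne[OF eqp[OF s T A(1) A(2) A(3)]] by blast
  then obtain a b where ab: "a \<in> \<sigma>" "b \<in> ginv C ` \<sigma>" "Dom C a = Cod C b" "Comp C a b = Idm C y" unfolding pset_def by auto
  have m: "a \<in> Mor C" "b \<in> Mor C" using ab s T S_mor by auto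
  have "Cod C (Comp C a b) = Cod C a" using cat_comp_cod[OF CC m(2) m(1) ab(3)[symmetric]] .
  then have "Cod C a = y" using ab y CC by simp
  then show ?thesis using ab by blast
qed

lemma pnum_src:
  assumes s: "\<sigma> \<in> S" and a: "\<alpha> \<in> S0 X"
  shows "pnum C \<sigma> \<alpha> \<sigma> = 1 \<longleftrightarrow> \<alpha> = bsrc X \<sigma>"
proof -
  define f0 where "f0 = (SOME f. f \<in> \<sigma>)"
  have f0: "f0 \<in> \<sigma>" "f0 \<in> Mor C" using some_in[OF s] S_mor[OF s] f0_def by auto
  have as: "\<alpha> \<in> S" "\<alpha> \<subseteq> J0 X" using a S0_iff S0_J0 by auto
  have sub: "pset C \<sigma> \<alpha> f0 \<subseteq> {(f0, Idm C (Dom C f0))}"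
  proof
    fix p assume "p \<in> pset C \<sigma> \<alpha> f0"
    then obtain x y where p: "p = (x, y)" "x \<in> \<sigma>" "y \<in> \<alpha>" "Dom C x = Cod C y" "Comp C x y = f0"
      unfolding pset_def by auto
    obtain z where z: "z \<in> Obj C" "y = Idm C z" using p(3) as(2) J0_idm by blast
    have xm: "x \<in> Mor C" using p s S_mor by auto
    have "x = f0" using p z xm CC by simp
    then show "p \<in> {(f0, Idm C (Dom C f0))}" using p z CC by simp
  qed
  have x0: "Dom C f0 \<in> Obj C" using f0 CC by simp
  show ?thesis
  proof
    assume "pnum C \<sigma> \<alpha> \<sigma> = 1"
    then have "card (pset C \<sigma> \<alpha> f0) = 1" unfolding pnum_def f0_def by simp
    then have "pset C \<sigma> \<alpha> f0 \<noteq> {}" by auto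
    then have "pset C \<sigma> \<alpha> f0 = {(f0, Idm C (Dom C f0))}" using sub by blast
    then have "Idm C (Dom C f0) \<in> \<alpha>" unfolding pset_def by auto
    then show "\<alpha> = bsrc X \<sigma>" using blk_eq[OF as(1)] src_eq[OF s f0(1)] by simp
  next
    assume e: "\<alpha> = bsrc X \<sigma>"
    have "Idm C (Dom C f0) \<in> \<alpha>" using e src_eq[OF s f0(1)] idm_blk[OF x0] by simp
    then have "(f0, Idm C (Dom C f0)) \<in> pset C \<sigma> \<alpha> f0" unfolding pset_def using f0 CC x0 by simp
    then have "pset C \<sigma> \<alpha> f0 = {(f0, Idm C (Dom C f0))}" using sub by blast
    then show "pnum C \<sigma> \<alpha> \<sigma> = 1" unfolding pnum_def f0_def by simp
  qed
qed

lemma pnum_tgt: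
  assumes s: "\<sigma> \<in> S" and a: "\<beta> \<in> S0 X"
  shows "pnum C \<beta> \<sigma> \<sigma> = 1 \<longleftrightarrow> \<beta> = btgt X \<sigma>"
proof -
  define f0 where "f0 = (SOME f. f \<in> \<sigma>)"
  have f0: "f0 \<in> \<sigma>" "f0 \<in> Mor C" using some_in[OF s] S_mor[OF s] f0_def by auto
  have as: "\<beta> \<in> S" "\<beta> \<subseteq> J0 X" using a S0_iff S0_J0 by auto
  have sub: "pset C \<beta> \<sigma> f0 \<subseteq> {(Idm C (Cod C f0), f0)}"
  proof
    fix p assume "p \<in> pset C \<beta> \<sigma> f0"
    then obtain x y where p: "p = (x, y)" "x \<in> \<beta>" "y \<in> \<sigma>" "Dom C x = Cod C y" "Comp C x y = f0"
      unfolding pset_def by auto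
    obtain z where z: "z \<in> Obj C" "x = Idm C z" using p(2) as(2) J0_idm by blast
    have ym: "y \<in> Mor C" using p s S_mor by auto
    have "y = f0" using p z ym CC by simp
    then show "p \<in> {(Idm C (Cod C f0), f0)}" using p z CC by simp
  qed
  have x0: "Cod C f0 \<in> Obj C" using f0 CC by simp
  show ?thesis
  proof
    assume "pnum C \<beta> \<sigma> \<sigma> = 1"
    then have "card (pset C \<beta> \<sigma> f0) = 1" unfolding pnum_def f0_def by simp
    then have "pset C \<beta> \<sigma> f0 \<noteq> {}" by auto
    then have "pset C \<beta> \<sigma> f0 = {(Idm C (Cod C f0), f0)}" using sub by blast
    then have "Idm C (Cod C f0) \<in> \<beta>" unfolding pset_def by auto
    then show "\<beta> = btgt X \<sigma>" using blk_eq[OF as(1)] tgt_eq[OF s f0(1)] by simp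
  next
    assume e: "\<beta> = btgt X \<sigma>"
    have "Idm C (Cod C f0) \<in> \<beta>" using e tgt_eq[OF s f0(1)] idm_blk[OF x0] by simp
    then have "(Idm C (Cod C f0), f0) \<in> pset C \<beta> \<sigma> f0" unfolding pset_def using f0 CC x0 by simp
    then have "pset C \<beta> \<sigma> f0 = {(Idm C (Cod C f0), f0)}" using sub by blast
    then show "pnum C \<beta> \<sigma> \<sigma> = 1" unfolding pnum_def f0_def by simp
  qed
qed

lemma Rtil_mor_iff: "t \<in> Mor (Rtil X) \<longleftrightarrow> (\<exists>\<sigma>\<in>S. t = tri X \<sigma>)"
proof
  assume "t \<in> Mor (Rtil X)"
  then obtain \<alpha> \<sigma> \<beta> where t: "t = (\<alpha>, \<sigma>, \<beta>)" "\<alpha> \<in> S0 X" "\<beta> \<in> S0 X" "\<sigma> \<in> S"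
    "pnum C \<sigma> \<alpha> \<sigma> = 1" "pnum C \<beta> \<sigma> \<sigma> = 1" unfolding Rtil_def by auto
  then show "\<exists>\<sigma>\<in>S. t = tri X \<sigma>" using pnum_src pnum_tgt unfolding tri_def by auto
next
  assume "\<exists>\<sigma>\<in>S. t = tri X \<sigma>"
  then obtain \<sigma> where s: "\<sigma> \<in> S" "t = tri X \<sigma>" by blast
  then show "t \<in> Mor (Rtil X)" unfolding Rtil_def tri_def
    using pnum_src[OF s(1) src_S0[OF s(1)]] pnum_tgt[OF s(1) tgt_S0[OF s(1)]] src_S0 tgt_S0 by simp
qed

end

context thin
begin

lemma pset_ab:
  assumes s: "\<sigma> \<in> S" and t: "\<tau> \<in> S" and a: "a \<in> \<tau>" and b: "b \<in> \<sigma>" and ab: "Dom C a = Cod C b"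
  shows "pset C \<tau> \<sigma> (Comp C a b) = {(a, b)}"
proof
  have m: "a \<in> Mor C" "b \<in> Mor C" using a b s t S_mor by auto
  show "{(a, b)} \<subseteq> pset C \<tau> \<sigma> (Comp C a b)" unfolding pset_def using a b ab by simp
  show "pset C \<tau> \<sigma> (Comp C a b) \<subseteq> {(a, b)}"
  proof
    fix p assume "p \<in> pset C \<tau> \<sigma> (Comp C a b)"
    then obtain x y where p: "p = (x, y)" "x \<in> \<tau>" "y \<in> \<sigma>" "Dom C x = Cod C y" "Comp C x y = Comp C a b"
      unfolding pset_def by auto
    have xm: "x \<in> Mor C" "y \<in> Mor C" using p s t S_mor by auto
    have "Dom C (Comp C x y) = Dom C y" using cat_comp_dom[OF CC xm(2) xm(1) p(4)[symmetric]] .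
    moreover have "Dom C (Comp C a b) = Dom C b" using cat_comp_dom[OF CC m(2) m(1) ab[symmetric]] .
    ultimately have "Dom C y = Dom C b" using p(5) by simp
    then have yb: "y = b" using st_dom[OF s p(3) b] by simp
    have e1: "Cod C b = Dom C x" using p(4) yb by simp
    have e2: "Comp C x b = Comp C a b" using p(5) yb by simp
    have "x = a" by (rule gpd_cancel_right[OF G m(2) xm(1) m(1) e1 ab[symmetric] e2])
    then show "p \<in> {(a, b)}" using p yb by simp
  qed
qed

lemma factor:
  assumes s: "\<sigma> \<in> S" and t: "\<tau> \<in> S" and a: "a \<in> \<tau>" and b: "b \<in> \<sigma>" and ab: "Dom C a = Cod C b"
    and m: "m \<in> block_of S (Comp C a b)"
  shows "\<exists>a'\<in>\<tau>. \<exists>b'\<in>\<sigma>. Dom C a' = Cod C b' \<and> Comp C a' b' = m"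
proof -
  have mm: "a \<in> Mor C" "b \<in> Mor C" using a b s t S_mor by auto
  have cm: "Comp C a b \<in> Mor C" using mm ab CC by (simp add: cat_comp)
  have "pset C \<tau> \<sigma> (Comp C a b) \<approx> pset C \<tau> \<sigma> m"
    using eqp[OF t s blk_in[OF cm] blk_mem[OF cm] m] .
  then have "pset C \<tau> \<sigma> m \<noteq> {}" using eqpoll_ne pset_ab[OF s t a b ab] by blast
  then show ?thesis unfolding pset_def by blast
qed

lemma comp_the:
  assumes s: "\<sigma> \<in> S" and t: "\<tau> \<in> S" and a: "a \<in> \<tau>" and b: "b \<in> \<sigma>" and ab: "Dom C a = Cod C b"
  shows "(THE \<mu>. \<mu> \<in> S \<and> pnum C \<tau> \<sigma> \<mu> = 1) = block_of S (Comp C a b)"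
proof (rule the_equality)
  have mm: "a \<in> Mor C" "b \<in> Mor C" using a b s t S_mor by auto
  have cm: "Comp C a b \<in> Mor C" using mm ab CC by (simp add: cat_comp)
  define \<mu> where "\<mu> = block_of S (Comp C a b)"
  have mu: "\<mu> \<in> S" "Comp C a b \<in> \<mu>" using blk_in[OF cm] blk_mem[OF cm] \<mu>_def by auto
  have "pset C \<tau> \<sigma> (SOME f. f \<in> \<mu>) \<approx> pset C \<tau> \<sigma> (Comp C a b)"
    using eqp[OF t s mu(1) some_in[OF mu(1)] mu(2)] .
  then have "pset C \<tau> \<sigma> (SOME f. f \<in> \<mu>) \<approx> {(a, b)}" using pset_ab[OF s t a b ab] by simp
  then have "card (pset C \<tau> \<sigma> (SOME f. f \<in> \<mu>)) = 1" by (rule eqpoll_card1)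
  then have "pnum C \<tau> \<sigma> \<mu> = 1" unfolding pnum_def .
  then show "block_of S (Comp C a b) \<in> S \<and> pnum C \<tau> \<sigma> (block_of S (Comp C a b)) = 1" using mu \<mu>_def by simp
next
  fix \<mu>' assume h: "\<mu>' \<in> S \<and> pnum C \<tau> \<sigma> \<mu>' = 1"
  have mm: "a \<in> Mor C" "b \<in> Mor C" using a b s t S_mor by auto
  have cm: "Comp C a b \<in> Mor C" using mm ab CC by (simp add: cat_comp)
  define \<mu> where "\<mu> = block_of S (Comp C a b)"
  have mu: "\<mu> \<in> S" "Comp C a b \<in> \<mu>" using blk_in[OF cm] blk_mem[OF cm] \<mu>_def by auto
  define f1 where "f1 = (SOME f. f \<in> \<mu>')"
  have f1: "f1 \<in> \<mu>'" using some_in h f1_def by blast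
  have "card (pset C \<tau> \<sigma> f1) = 1" using h unfolding pnum_def f1_def by simp
  then have "pset C \<tau> \<sigma> f1 \<noteq> {}" by auto
  then obtain a' b' where ab': "a' \<in> \<tau>" "b' \<in> \<sigma>" "Dom C a' = Cod C b'" "Comp C a' b' = f1"
    unfolding pset_def by auto
  have mm': "a' \<in> Mor C" "b' \<in> Mor C" using ab' s t S_mor by auto
  have x: "Dom C b' \<in> Obj C" using mm' CC by simp
  have "bsrc X \<mu> = block_of S (Idm C (Dom C (Comp C a b)))" using src_eq[OF mu] by simp
  also have "\<dots> = block_of S (Idm C (Dom C b))" using mm ab CC by simp
  also have "\<dots> = block_of S (Idm C (Dom C b'))" using src_same[OF s b ab'(2)] by simp
  finally have "Idm C (Dom C b') \<in> bsrc X \<mu>" using idm_blk[OF x] by simp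
  then obtain m where m: "m \<in> \<mu>" "Dom C m = Dom C b'" using exist_dom[OF mu(1) x] by blast
  obtain a'' b'' where ab'': "a'' \<in> \<tau>" "b'' \<in> \<sigma>" "Dom C a'' = Cod C b''" "Comp C a'' b'' = m"
    using factor[OF s t a b ab] m \<mu>_def by blast
  have mm'': "a'' \<in> Mor C" "b'' \<in> Mor C" using ab'' s t S_mor by auto
  have "Dom C (Comp C a'' b'') = Dom C b''" using cat_comp_dom[OF CC mm''(2) mm''(1) ab''(3)[symmetric]] .
  then have "Dom C b'' = Dom C b'" using ab''(4) m by simp
  then have bb: "b'' = b'" using st_dom[OF s ab''(2) ab'(2)] by simp
  then have aa: "a'' = a'" using st_dom[OF t ab''(1) ab'(1)] ab''(3) ab'(3) by simp
  have "m = f1" using ab''(4) ab'(4) aa bb by simp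
  then have "m \<in> \<mu>'" using f1 by simp
  then show "\<mu>' = block_of S (Comp C a b)" using blk_same[OF _ mu(1) _ m(1)] h \<mu>_def by blast
qed

lemma Rtil_simps[simp]:
  "Obj (Rtil X) = S0 X" "Dom (Rtil X) = fst" "Cod (Rtil X) = (\<lambda>t. snd (snd t))"
  "Idm (Rtil X) = (\<lambda>\<alpha>. (\<alpha>, \<alpha>, \<alpha>))"
  by (simp_all add: Rtil_def)

lemma Rtil_comp_def: "Comp (Rtil X) p q = (fst q, THE \<mu>. \<mu> \<in> S \<and> pnum C (fst (snd p)) (fst (snd q)) \<mu> = 1, snd (snd p))"
  by (simp add: Rtil_def)

lemma blkcomp_src:
  assumes s: "\<sigma> \<in> S" and t: "\<tau> \<in> S" and a: "a \<in> \<tau>" and b: "b \<in> \<sigma>" and ab: "Dom C a = Cod C b"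
  shows "bsrc X (block_of S (Comp C a b)) = bsrc X \<sigma>" "btgt X (block_of S (Comp C a b)) = btgt X \<tau>"
    "block_of S (Comp C a b) \<in> S"
proof -
  have mm: "a \<in> Mor C" "b \<in> Mor C" using a b s t S_mor by auto
  have cm: "Comp C a b \<in> Mor C" using mm ab CC by (simp add: cat_comp)
  show "block_of S (Comp C a b) \<in> S" using blk_in[OF cm] .
  have "bsrc X (block_of S (Comp C a b)) = block_of S (Idm C (Dom C (Comp C a b)))"
    using src_eq[OF blk_in[OF cm] blk_mem[OF cm]] by simp
  also have "\<dots> = bsrc X \<sigma>" using mm ab CC src_eq[OF s b] by simp
  finally show "bsrc X (block_of S (Comp C a b)) = bsrc X \<sigma>" .
  have "btgt X (block_of S (Comp C a b)) = block_of S (Idm C (Cod C (Comp C a b)))"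
    using tgt_eq[OF blk_in[OF cm] blk_mem[OF cm]] by simp
  also have "\<dots> = btgt X \<tau>" using mm ab CC tgt_eq[OF t a] by simp
  finally show "btgt X (block_of S (Comp C a b)) = btgt X \<tau>" .
qed

lemma R_comp:
  assumes s: "\<sigma> \<in> S" and t: "\<tau> \<in> S" and a: "a \<in> \<tau>" and b: "b \<in> \<sigma>" and ab: "Dom C a = Cod C b"
  shows "Comp (Rtil X) (tri X \<tau>) (tri X \<sigma>) = tri X (block_of S (Comp C a b))"
  unfolding Rtil_comp_def using comp_the[OF s t a b ab] blkcomp_src[OF s t a b ab]
  by (simp add: tri_def)

lemma witness:
  assumes s: "\<sigma> \<in> S" and t: "\<tau> \<in> S" and e: "btgt X \<sigma> = bsrc X \<tau>"
  shows "\<exists>a\<in>\<tau>. \<exists>b\<in>\<sigma>. Dom C a = Cod C b"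
proof -
  obtain b where b: "b \<in> \<sigma>" using S_ne[OF s] by blast
  have bm: "b \<in> Mor C" using b s S_mor by auto
  have y: "Cod C b \<in> Obj C" using bm CC by simp
  have "Idm C (Cod C b) \<in> bsrc X \<tau>" using tgt_eq[OF s b] e idm_blk[OF y] by simp
  then obtain a where "a \<in> \<tau>" "Dom C a = Cod C b" using exist_dom[OF t y] by blast
  then show ?thesis using b by blast
qed

lemma tri_S0: "\<alpha> \<in> S0 X \<Longrightarrow> tri X \<alpha> = (\<alpha>, \<alpha>, \<alpha>)"
  unfolding tri_def using src_of_S0 tgt_of_S0 by simp

lemma S0_S: "\<alpha> \<in> S0 X \<Longrightarrow> \<alpha> \<in> S" using S0_iff by blast

lemma tri_inj: "tri X \<sigma> = tri X \<tau> \<Longrightarrow> \<sigma> = \<tau>" unfolding tri_def by simp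

lemma tri_mor: "\<sigma> \<in> S \<Longrightarrow> tri X \<sigma> \<in> Mor (Rtil X)"
  unfolding Rtil_mor_iff by blast

lemma R_category: "category (Rtil X)"
proof -
  have 1: "\<forall>f\<in>Mor (Rtil X). Dom (Rtil X) f \<in> Obj (Rtil X) \<and> Cod (Rtil X) f \<in> Obj (Rtil X)"
  proof
    fix f assume f: "f \<in> Mor (Rtil X)"
    obtain \<sigma> where st: "\<sigma> \<in> S" "f = tri X \<sigma>" using f Rtil_mor_iff by blast
    have "Dom (Rtil X) f = bsrc X \<sigma>" "Cod (Rtil X) f = btgt X \<sigma>" using st(2) by (simp_all add: tri_def)
    then show "Dom (Rtil X) f \<in> Obj (Rtil X) \<and> Cod (Rtil X) f \<in> Obj (Rtil X)"
      using src_S0[OF st(1)] tgt_S0[OF st(1)] by simp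
  qed
  have 2: "\<forall>x\<in>Obj (Rtil X). Idm (Rtil X) x \<in> Mor (Rtil X) \<and> Dom (Rtil X) (Idm (Rtil X) x) = x \<and> Cod (Rtil X) (Idm (Rtil X) x) = x"
  proof
    fix x assume x: "x \<in> Obj (Rtil X)"
    then have x': "x \<in> S0 X" by simp
    have "Idm (Rtil X) x \<in> Mor (Rtil X)" unfolding Rtil_mor_iff
      by (rule bexI[of _ x]) (simp_all add: tri_S0[OF x'] S0_S[OF x'])
    then show "Idm (Rtil X) x \<in> Mor (Rtil X) \<and> Dom (Rtil X) (Idm (Rtil X) x) = x \<and> Cod (Rtil X) (Idm (Rtil X) x) = x"
      by simp
  qed
  have 3: "Comp (Rtil X) g f \<in> Mor (Rtil X) \<and> Dom (Rtil X) (Comp (Rtil X) g f) = Dom (Rtil X) f \<and>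
         Cod (Rtil X) (Comp (Rtil X) g f) = Cod (Rtil X) g"
    if f: "f \<in> Mor (Rtil X)" and g: "g \<in> Mor (Rtil X)" and fg: "Cod (Rtil X) f = Dom (Rtil X) g" for f g
  proof -
    obtain \<sigma> \<tau> where st: "\<sigma> \<in> S" "\<tau> \<in> S" "f = tri X \<sigma>" "g = tri X \<tau>" using f g Rtil_mor_iff by blast
    have e: "btgt X \<sigma> = bsrc X \<tau>" using fg st by (simp add: tri_def)
    obtain a b where ab: "a \<in> \<tau>" "b \<in> \<sigma>" "Dom C a = Cod C b" using witness[OF st(1,2) e] by blast
    have c: "Comp (Rtil X) g f = tri X (block_of S (Comp C a b))" using R_comp[OF st(1,2) ab] st by simp
    note bs = blkcomp_src[OF st(1,2) ab]
    have "Comp (Rtil X) g f \<in> Mor (Rtil X)" using c tri_mor[OF bs(3)] by simp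
    moreover have "Dom (Rtil X) (Comp (Rtil X) g f) = Dom (Rtil X) f" using c bs(1) st(3) by (simp add: tri_def)
    moreover have "Cod (Rtil X) (Comp (Rtil X) g f) = Cod (Rtil X) g" using c bs(2) st(4) by (simp add: tri_def)
    ultimately show ?thesis by blast
  qed
  have 4: "Comp (Rtil X) f (Idm (Rtil X) (Dom (Rtil X) f)) = f \<and> Comp (Rtil X) (Idm (Rtil X) (Cod (Rtil X) f)) f = f"
    if f: "f \<in> Mor (Rtil X)" for f
  proof -
    obtain \<sigma> where st: "\<sigma> \<in> S" "f = tri X \<sigma>" using f Rtil_mor_iff by blast
    obtain a where a: "a \<in> \<sigma>" using S_ne[OF st(1)] by blast
    have am: "a \<in> Mor C" using a st S_mor by auto
    have d: "Dom C a \<in> Obj C" "Cod C a \<in> Obj C" using am CC by auto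
    have i1: "Idm (Rtil X) (Dom (Rtil X) f) = tri X (bsrc X \<sigma>)"
      using st(2) tri_S0[OF src_S0[OF st(1)]] by (simp add: tri_def[of X \<sigma>])
    have i2: "Idm (Rtil X) (Cod (Rtil X) f) = tri X (btgt X \<sigma>)"
      using st(2) tri_S0[OF tgt_S0[OF st(1)]] by (simp add: tri_def[of X \<sigma>])
    have m1: "Idm C (Dom C a) \<in> bsrc X \<sigma>" using src_eq[OF st(1) a] idm_blk[OF d(1)] by simp
    have m2: "Idm C (Cod C a) \<in> btgt X \<sigma>" using tgt_eq[OF st(1) a] idm_blk[OF d(2)] by simp
    have c1: "Comp (Rtil X) f (Idm (Rtil X) (Dom (Rtil X) f)) = tri X (block_of S (Comp C a (Idm C (Dom C a))))"
    proof -
      have "Comp (Rtil X) f (Idm (Rtil X) (Dom (Rtil X) f)) = Comp (Rtil X) (tri X \<sigma>) (tri X (bsrc X \<sigma>))"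
        unfolding i1 using st(2) by simp
      also have "\<dots> = tri X (block_of S (Comp C a (Idm C (Dom C a))))"
        by (rule R_comp[OF S0_S[OF src_S0[OF st(1)]] st(1) a m1]) (simp add: d CC)
      finally show ?thesis .
    qed
    have c2: "Comp (Rtil X) (Idm (Rtil X) (Cod (Rtil X) f)) f = tri X (block_of S (Comp C (Idm C (Cod C a)) a))"
    proof -
      have "Comp (Rtil X) (Idm (Rtil X) (Cod (Rtil X) f)) f = Comp (Rtil X) (tri X (btgt X \<sigma>)) (tri X \<sigma>)"
        unfolding i2 using st(2) by simp
      also have "\<dots> = tri X (block_of S (Comp C (Idm C (Cod C a)) a))"
        by (rule R_comp[OF st(1) S0_S[OF tgt_S0[OF st(1)]] m2 a]) (simp add: d CC)
      finally show ?thesis .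
    qed
    have e1: "Comp C a (Idm C (Dom C a)) = a" "Comp C (Idm C (Cod C a)) a = a" using am CC by simp_all
    have e2: "tri X (block_of S a) = f" using blk_eq[OF st(1) a] st(2) by simp
    show ?thesis using c1 c2 e1 e2 by simp
  qed
  have 5: "Comp (Rtil X) h (Comp (Rtil X) g f) = Comp (Rtil X) (Comp (Rtil X) h g) f"
    if f: "f \<in> Mor (Rtil X)" and g: "g \<in> Mor (Rtil X)" and h: "h \<in> Mor (Rtil X)"
      and fg: "Cod (Rtil X) f = Dom (Rtil X) g" and gh: "Cod (Rtil X) g = Dom (Rtil X) h" for f g h
  proof -
    obtain \<sigma>1 \<sigma>2 \<sigma>3 where st: "\<sigma>1 \<in> S" "\<sigma>2 \<in> S" "\<sigma>3 \<in> S" "f = tri X \<sigma>1" "g = tri X \<sigma>2" "h = tri X \<sigma>3"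
      using f g h Rtil_mor_iff by meson
    have e1: "btgt X \<sigma>1 = bsrc X \<sigma>2" using fg st by (simp add: tri_def)
    have e2: "btgt X \<sigma>2 = bsrc X \<sigma>3" using gh st by (simp add: tri_def)
    obtain b c where bc: "b \<in> \<sigma>2" "c \<in> \<sigma>1" "Dom C b = Cod C c" using witness[OF st(1,2) e1] by blast
    have bm: "b \<in> Mor C" "c \<in> Mor C" using bc st S_mor by auto
    have y: "Cod C b \<in> Obj C" using bm CC by simp
    have "Idm C (Cod C b) \<in> bsrc X \<sigma>3" using tgt_eq[OF st(2) bc(1)] e2 idm_blk[OF y] by simp
    then obtain a where a: "a \<in> \<sigma>3" "Dom C a = Cod C b" using exist_dom[OF st(3) y] by blast
    have am: "a \<in> Mor C" using a st S_mor by auto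
    have bcm: "Comp C b c \<in> Mor C" using bm bc CC by (simp add: cat_comp)
    have abm: "Comp C a b \<in> Mor C" using bm am a CC by (simp add: cat_comp)
    have l: "Comp (Rtil X) h (Comp (Rtil X) g f) = tri X (block_of S (Comp C a (Comp C b c)))"
    proof -
      have "Comp (Rtil X) g f = tri X (block_of S (Comp C b c))" using R_comp[OF st(1,2) bc] st by simp
      moreover have "Dom C a = Cod C (Comp C b c)" using a bm bc CC by simp
      ultimately show ?thesis using R_comp[OF blk_in[OF bcm] st(3) a(1) blk_mem[OF bcm]] st by simp
    qed
    have r: "Comp (Rtil X) (Comp (Rtil X) h g) f = tri X (block_of S (Comp C (Comp C a b) c))"
    proof -
      have "Comp (Rtil X) h g = tri X (block_of S (Comp C a b))" using R_comp[OF st(2,3) a(1) bc(1) a(2)] st by simp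
      moreover have "Dom C (Comp C a b) = Cod C c" using a bm bc am CC by simp
      ultimately show ?thesis using R_comp[OF st(1) blk_in[OF abm] blk_mem[OF abm] bc(2)] st by simp
    qed
    show ?thesis using l r cat_assoc[OF CC bm(2) bm(1) am bc(3)[symmetric] a(2)[symmetric]] by simp
  qed
  show ?thesis unfolding category_def
    apply (intro conjI 1 2)
    subgoal using 3 by blast
    subgoal using 4 by blast
    subgoal using 5 by blast
    done
qed

lemma R_inverse:
  assumes s: "\<sigma> \<in> S"
  shows "is_inverse (Rtil X) (tri X \<sigma>) (tri X (ginv C ` \<sigma>))"
proof -
  have T: "ginv C ` \<sigma> \<in> S" using T_blk[OF s] .
  obtain f where f: "f \<in> \<sigma>" using S_ne[OF s] by blast
  have fm: "f \<in> Mor C" using f s S_mor by auto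
  have gf: "ginv C f \<in> ginv C ` \<sigma>" using f by (rule imageI)
  have e1: "Dom C (ginv C f) = Cod C f" using fm G by simp
  have e2: "Cod C (ginv C f) = Dom C f" using fm G by simp
  have src: "bsrc X (ginv C ` \<sigma>) = btgt X \<sigma>"
  proof -
    have "bsrc X (ginv C ` \<sigma>) = block_of S (Idm C (Dom C (ginv C f)))" by (rule src_eq[OF T gf, symmetric])
    also have "\<dots> = block_of S (Idm C (Cod C f))" by (simp only: e1)
    also have "\<dots> = btgt X \<sigma>" by (rule tgt_eq[OF s f])
    finally show ?thesis .
  qed
  have tgt: "btgt X (ginv C ` \<sigma>) = bsrc X \<sigma>"
  proof -
    have "btgt X (ginv C ` \<sigma>) = block_of S (Idm C (Cod C (ginv C f)))" by (rule tgt_eq[OF T gf, symmetric])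
    also have "\<dots> = block_of S (Idm C (Dom C f))" by (simp only: e2)
    also have "\<dots> = bsrc X \<sigma>" by (rule src_eq[OF s f])
    finally show ?thesis .
  qed
  have c1: "Comp (Rtil X) (tri X (ginv C ` \<sigma>)) (tri X \<sigma>) = tri X (block_of S (Idm C (Dom C f)))"
  proof -
    have "Comp (Rtil X) (tri X (ginv C ` \<sigma>)) (tri X \<sigma>) = tri X (block_of S (Comp C (ginv C f) f))"
      by (rule R_comp[OF s T gf f e1])
    also have "Comp C (ginv C f) f = Idm C (Dom C f)" using fm G by simp
    finally show ?thesis .
  qed
  have c2: "Comp (Rtil X) (tri X \<sigma>) (tri X (ginv C ` \<sigma>)) = tri X (block_of S (Idm C (Cod C f)))"
  proof -
    have "Comp (Rtil X) (tri X \<sigma>) (tri X (ginv C ` \<sigma>)) = tri X (block_of S (Comp C f (ginv C f)))"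
      by (rule R_comp[OF T s f gf e2[symmetric]])
    also have "Comp C f (ginv C f) = Idm C (Cod C f)" using fm G by simp
    finally show ?thesis .
  qed
  have i1: "tri X (block_of S (Idm C (Dom C f))) = Idm (Rtil X) (Dom (Rtil X) (tri X \<sigma>))"
  proof -
    have "tri X (block_of S (Idm C (Dom C f))) = tri X (bsrc X \<sigma>)" using src_eq[OF s f] by simp
    also have "\<dots> = (bsrc X \<sigma>, bsrc X \<sigma>, bsrc X \<sigma>)" by (rule tri_S0[OF src_S0[OF s]])
    finally show ?thesis by (simp add: tri_def[of X \<sigma>])
  qed
  have i2: "tri X (block_of S (Idm C (Cod C f))) = Idm (Rtil X) (Cod (Rtil X) (tri X \<sigma>))"
  proof -
    have "tri X (block_of S (Idm C (Cod C f))) = tri X (btgt X \<sigma>)" using tgt_eq[OF s f] by simp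
    also have "\<dots> = (btgt X \<sigma>, btgt X \<sigma>, btgt X \<sigma>)" by (rule tri_S0[OF tgt_S0[OF s]])
    finally show ?thesis by (simp add: tri_def[of X \<sigma>])
  qed
  have d1: "Dom (Rtil X) (tri X (ginv C ` \<sigma>)) = Cod (Rtil X) (tri X \<sigma>)" using src by (simp add: tri_def)
  have d2: "Cod (Rtil X) (tri X (ginv C ` \<sigma>)) = Dom (Rtil X) (tri X \<sigma>)" using tgt by (simp add: tri_def)
  show ?thesis unfolding is_inverse_def
    using tri_mor[OF T] d1 d2 c1 c2 i1 i2 by simp
qed

lemma R_groupoid: "groupoid (Rtil X)"
proof -
  have "\<exists>g. is_inverse (Rtil X) f g" if f: "f \<in> Mor (Rtil X)" for f
  proof -
    obtain \<sigma> where "\<sigma> \<in> S" "f = tri X \<sigma>" using f Rtil_mor_iff by blast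
    then show ?thesis using R_inverse[of \<sigma>] by (intro exI[of _ "tri X (ginv C ` \<sigma>)"]) simp
  qed
  then show ?thesis unfolding groupoid_def using R_category by blast
qed

lemma R_ginv: "\<sigma> \<in> S \<Longrightarrow> ginv (Rtil X) (tri X \<sigma>) = tri X (ginv C ` \<sigma>)"
  by (rule ginv_eq[OF R_groupoid tri_mor R_inverse])

end

definition blmap :: "('p,'n) schemoid \<Rightarrow> ('o \<Rightarrow> 'p) \<times> ('m \<Rightarrow> 'n) \<Rightarrow> 'm set \<Rightarrow> 'n set" where
  "blmap Y F \<sigma> = (THE \<tau>. \<tau> \<in> Blocks Y \<and> snd F ` \<sigma> \<subseteq> \<tau>)"

lemma Rtil_fun_alt: "Rtil_fun X Y F = (restrict (blmap Y F) (S0 X),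
   restrict (\<lambda>(\<alpha>, \<sigma>, \<beta>). (blmap Y F \<alpha>, blmap Y F \<sigma>, blmap Y F \<beta>)) (Mor (Rtil X)))"
  unfolding Rtil_fun_def blmap_def Let_def by simp

lemma blmap_eq:
  assumes Y: "thin_smd Y" and ex: "\<exists>\<tau>\<in>Blocks Y. snd F ` \<sigma> \<subseteq> \<tau>" and f: "f \<in> \<sigma>"
  shows "blmap Y F \<sigma> = block_of (Blocks Y) (snd F f)"
proof -
  interpret Y: thin Y by (rule thin.intro) (rule Y)
  obtain \<tau> where t: "\<tau> \<in> Blocks Y" "snd F ` \<sigma> \<subseteq> \<tau>" using ex by blast
  have ft: "snd F f \<in> \<tau>" using t f by blast
  have "blmap Y F \<sigma> = \<tau>" unfolding blmap_def
  proof (rule the_equality)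
    show "\<tau> \<in> Blocks Y \<and> snd F ` \<sigma> \<subseteq> \<tau>" using t by simp
    fix \<tau>' assume "\<tau>' \<in> Blocks Y \<and> snd F ` \<sigma> \<subseteq> \<tau>'"
    then show "\<tau>' = \<tau>" using Y.blk_same[OF _ t(1), of \<tau>' "snd F f"] ft f by blast
  qed
  then show ?thesis using Y.blk_eq[OF t(1) ft] by simp
qed

locale thin_morph = X: thin X + Y: thin Y for X :: "('o,'m) schemoid" and Y :: "('p,'n) schemoid" +
  fixes F assumes FM: "smd_morph X Y F"
begin

lemma FF: "is_functor (Cat X) (Cat Y) F" using FM unfolding smd_morph_def by blast
lemmas fp = functor_props[OF FF]

lemma F_ex: "\<sigma> \<in> Blocks X \<Longrightarrow> \<exists>\<tau>\<in>Blocks Y. snd F ` \<sigma> \<subseteq> \<tau>"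
  using FM unfolding smd_morph_def by blast

lemma bl_eq: "\<sigma> \<in> Blocks X \<Longrightarrow> f \<in> \<sigma> \<Longrightarrow> blmap Y F \<sigma> = block_of (Blocks Y) (snd F f)"
  using blmap_eq[OF Y.thinX F_ex] by blast

lemma Ff_mor: "\<sigma> \<in> Blocks X \<Longrightarrow> f \<in> \<sigma> \<Longrightarrow> snd F f \<in> Mor (Cat Y)"
  using fp(6) X.S_mor by blast

lemma bl_S: "\<sigma> \<in> Blocks X \<Longrightarrow> blmap Y F \<sigma> \<in> Blocks Y"
  using bl_eq Ff_mor Y.blk_in X.S_ne by (metis all_not_in_conv)

lemma bl_mem: "\<sigma> \<in> Blocks X \<Longrightarrow> f \<in> \<sigma> \<Longrightarrow> snd F f \<in> blmap Y F \<sigma>"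
  using bl_eq Ff_mor Y.blk_mem by metis

lemma bl_idm: "x \<in> Obj (Cat X) \<Longrightarrow> blmap Y F (block_of (Blocks X) (Idm (Cat X) x)) = block_of (Blocks Y) (Idm (Cat Y) (fst F x))"
proof -
  assume x: "x \<in> Obj (Cat X)"
  have "blmap Y F (block_of (Blocks X) (Idm (Cat X) x)) = block_of (Blocks Y) (snd F (Idm (Cat X) x))"
    using bl_eq X.idm_blk[OF x] by blast
  then show ?thesis using fp(9)[OF x] by simp
qed

lemma bl_S0: assumes a: "\<alpha> \<in> S0 X" shows "blmap Y F \<alpha> \<in> S0 Y"
proof -
  obtain x where x: "x \<in> Obj (Cat X)" "\<alpha> = block_of (Blocks X) (Idm (Cat X) x)" using X.S0_block[OF a] by blast
  show ?thesis using bl_idm[OF x(1)] x Y.idm_S0 fp(5) by simp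
qed

lemma bl_src: assumes s: "\<sigma> \<in> Blocks X" shows "bsrc Y (blmap Y F \<sigma>) = blmap Y F (bsrc X \<sigma>)"
proof -
  obtain f where f: "f \<in> \<sigma>" using X.S_ne[OF s] by blast
  have fm: "f \<in> Mor (Cat X)" using f s X.S_mor by blast
  have "bsrc Y (blmap Y F \<sigma>) = block_of (Blocks Y) (Idm (Cat Y) (Dom (Cat Y) (snd F f)))"
    using Y.src_eq[OF bl_S[OF s] bl_mem[OF s f]] by simp
  also have "\<dots> = block_of (Blocks Y) (Idm (Cat Y) (fst F (Dom (Cat X) f)))" using fp(7)[OF fm] by simp
  also have "\<dots> = blmap Y F (block_of (Blocks X) (Idm (Cat X) (Dom (Cat X) f)))"
    using bl_idm[of "Dom (Cat X) f"] fm X.CC by simp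
  also have "\<dots> = blmap Y F (bsrc X \<sigma>)" using X.src_eq[OF s f] by simp
  finally show ?thesis .
qed

lemma bl_tgt: assumes s: "\<sigma> \<in> Blocks X" shows "btgt Y (blmap Y F \<sigma>) = blmap Y F (btgt X \<sigma>)"
proof -
  obtain f where f: "f \<in> \<sigma>" using X.S_ne[OF s] by blast
  have fm: "f \<in> Mor (Cat X)" using f s X.S_mor by blast
  have "btgt Y (blmap Y F \<sigma>) = block_of (Blocks Y) (Idm (Cat Y) (Cod (Cat Y) (snd F f)))"
    using Y.tgt_eq[OF bl_S[OF s] bl_mem[OF s f]] by simp
  also have "\<dots> = block_of (Blocks Y) (Idm (Cat Y) (fst F (Cod (Cat X) f)))" using fp(8)[OF fm] by simp
  also have "\<dots> = blmap Y F (block_of (Blocks X) (Idm (Cat X) (Cod (Cat X) f)))"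
    using bl_idm[of "Cod (Cat X) f"] fm X.CC by simp
  also have "\<dots> = blmap Y F (btgt X \<sigma>)" using X.tgt_eq[OF s f] by simp
  finally show ?thesis .
qed

lemma RF_tri: "\<sigma> \<in> Blocks X \<Longrightarrow> snd (Rtil_fun X Y F) (tri X \<sigma>) = tri Y (blmap Y F \<sigma>)"
  unfolding Rtil_fun_alt using X.tri_mor bl_src bl_tgt by (simp add: tri_def)

lemma RF_functor: "is_functor (Rtil X) (Rtil Y) (Rtil_fun X Y F)"
proof -
  have ext: "fst (Rtil_fun X Y F) \<in> extensional (Obj (Rtil X))" "snd (Rtil_fun X Y F) \<in> extensional (Mor (Rtil X))"
    unfolding Rtil_fun_alt by simp_all
  have obj: "\<forall>x\<in>Obj (Rtil X). fst (Rtil_fun X Y F) x \<in> Obj (Rtil Y)"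
    unfolding Rtil_fun_alt using bl_S0 by simp
  have mor: "\<forall>f\<in>Mor (Rtil X). snd (Rtil_fun X Y F) f \<in> Mor (Rtil Y) \<and>
       Dom (Rtil Y) (snd (Rtil_fun X Y F) f) = fst (Rtil_fun X Y F) (Dom (Rtil X) f) \<and>
       Cod (Rtil Y) (snd (Rtil_fun X Y F) f) = fst (Rtil_fun X Y F) (Cod (Rtil X) f)"
  proof
    fix t assume t: "t \<in> Mor (Rtil X)"
    then obtain \<sigma> where s: "\<sigma> \<in> Blocks X" "t = tri X \<sigma>" using X.Rtil_mor_iff by blast
    have e: "snd (Rtil_fun X Y F) t = tri Y (blmap Y F \<sigma>)" using RF_tri s by simp
    have d: "fst (Rtil_fun X Y F) (Dom (Rtil X) t) = blmap Y F (bsrc X \<sigma>)"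
      "fst (Rtil_fun X Y F) (Cod (Rtil X) t) = blmap Y F (btgt X \<sigma>)"
      unfolding Rtil_fun_alt using s X.src_S0 X.tgt_S0 by (simp_all add: tri_def)
    show "snd (Rtil_fun X Y F) t \<in> Mor (Rtil Y) \<and>
       Dom (Rtil Y) (snd (Rtil_fun X Y F) t) = fst (Rtil_fun X Y F) (Dom (Rtil X) t) \<and>
       Cod (Rtil Y) (snd (Rtil_fun X Y F) t) = fst (Rtil_fun X Y F) (Cod (Rtil X) t)"
      using e d Y.tri_mor[OF bl_S[OF s(1)]] bl_src[OF s(1)] bl_tgt[OF s(1)] by (simp add: tri_def)
  qed
  have idm: "\<forall>x\<in>Obj (Rtil X). snd (Rtil_fun X Y F) (Idm (Rtil X) x) = Idm (Rtil Y) (fst (Rtil_fun X Y F) x)"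
  proof
    fix x assume x: "x \<in> Obj (Rtil X)"
    then have x': "x \<in> S0 X" by simp
    have m: "(x, x, x) \<in> Mor (Rtil X)" using X.tri_mor[OF X.S0_S[OF x']] X.tri_S0[OF x'] by simp
    show "snd (Rtil_fun X Y F) (Idm (Rtil X) x) = Idm (Rtil Y) (fst (Rtil_fun X Y F) x)"
      unfolding Rtil_fun_alt using m x' by simp
  qed
  have comp: "snd (Rtil_fun X Y F) (Comp (Rtil X) g f) = Comp (Rtil Y) (snd (Rtil_fun X Y F) g) (snd (Rtil_fun X Y F) f)"
    if f: "f \<in> Mor (Rtil X)" and g: "g \<in> Mor (Rtil X)" and fg: "Cod (Rtil X) f = Dom (Rtil X) g" for f g
  proof -
    obtain \<sigma> \<tau> where st: "\<sigma> \<in> Blocks X" "\<tau> \<in> Blocks X" "f = tri X \<sigma>" "g = tri X \<tau>" using f g X.Rtil_mor_iff by blast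
    have e: "btgt X \<sigma> = bsrc X \<tau>" using fg st by (simp add: tri_def)
    obtain a b where ab: "a \<in> \<tau>" "b \<in> \<sigma>" "Dom (Cat X) a = Cod (Cat X) b" using X.witness[OF st(1,2) e] by blast
    have m: "a \<in> Mor (Cat X)" "b \<in> Mor (Cat X)" using ab st X.S_mor by auto
    have abm: "Comp (Cat X) a b \<in> Mor (Cat X)" using m ab X.CC by (simp add: cat_comp)
    have l: "snd (Rtil_fun X Y F) (Comp (Rtil X) g f) = tri Y (block_of (Blocks Y) (snd F (Comp (Cat X) a b)))"
      using X.R_comp[OF st(1,2) ab] st RF_tri[OF X.blk_in[OF abm]] bl_eq[OF X.blk_in[OF abm] X.blk_mem[OF abm]] by simp
    have fab: "snd F (Comp (Cat X) a b) = Comp (Cat Y) (snd F a) (snd F b)" using fp(10) m ab by simp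
    have dd: "Dom (Cat Y) (snd F a) = Cod (Cat Y) (snd F b)" using fp(7,8) m ab by simp
    have r: "Comp (Rtil Y) (snd (Rtil_fun X Y F) g) (snd (Rtil_fun X Y F) f) = tri Y (block_of (Blocks Y) (Comp (Cat Y) (snd F a) (snd F b)))"
      using Y.R_comp[OF bl_S[OF st(1)] bl_S[OF st(2)] bl_mem[OF st(2) ab(1)] bl_mem[OF st(1) ab(2)] dd]
        RF_tri[OF st(1)] RF_tri[OF st(2)] st by simp
    show ?thesis using l r fab by simp
  qed
  show ?thesis unfolding is_functor_def
    apply (intro conjI X.R_category Y.R_category ext obj mor idm)
    using comp by blast
qed

end

lemma RF_id:
  assumes X: "thin_smd X"
  shows "Rtil_fun X X (fid (Cat X)) = fid (Rtil X)"
proof -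
  interpret X: thin X by (rule thin.intro) (rule X)
  have bl: "blmap X (fid (Cat X)) \<sigma> = \<sigma>" if s: "\<sigma> \<in> Blocks X" for \<sigma>
  proof -
    have sub: "snd (fid (Cat X)) ` \<sigma> \<subseteq> \<sigma>"
      using X.S_sub[OF s] unfolding fid_def by auto
    obtain f where f: "f \<in> \<sigma>" using X.S_ne[OF s] by blast
    have "blmap X (fid (Cat X)) \<sigma> = block_of (Blocks X) (snd (fid (Cat X)) f)"
      using blmap_eq[OF X, of "fid (Cat X)" \<sigma> f] s sub f by blast
    also have "\<dots> = \<sigma>" using X.blk_eq[OF s f] f X.S_mor[OF s f] unfolding fid_def by simp
    finally show ?thesis .
  qed
  have 1: "restrict (blmap X (fid (Cat X))) (S0 X) = restrict id (S0 X)"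
  proof
    fix \<alpha> show "restrict (blmap X (fid (Cat X))) (S0 X) \<alpha> = restrict id (S0 X) \<alpha>"
      using bl X.S0_S by simp
  qed
  have 2: "restrict (\<lambda>(\<alpha>, \<sigma>, \<beta>). (blmap X (fid (Cat X)) \<alpha>, blmap X (fid (Cat X)) \<sigma>, blmap X (fid (Cat X)) \<beta>)) (Mor (Rtil X))
      = restrict id (Mor (Rtil X))"
  proof
    fix t show "restrict (\<lambda>(\<alpha>, \<sigma>, \<beta>). (blmap X (fid (Cat X)) \<alpha>, blmap X (fid (Cat X)) \<sigma>, blmap X (fid (Cat X)) \<beta>)) (Mor (Rtil X)) t
      = restrict id (Mor (Rtil X)) t"
    proof (cases "t \<in> Mor (Rtil X)")
      case True
      then obtain \<sigma> where s: "\<sigma> \<in> Blocks X" "t = tri X \<sigma>" using X.Rtil_mor_iff by blast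
      show ?thesis using True s bl[OF s(1)] bl[OF X.S0_S[OF X.src_S0[OF s(1)]]] bl[OF X.S0_S[OF X.tgt_S0[OF s(1)]]]
        by (simp add: tri_def)
    next
      case False then show ?thesis by simp
    qed
  qed
  show ?thesis unfolding Rtil_fun_alt fid_def[of "Rtil X"] using 1 2 by simp
qed

lemma RF_comp:
  assumes X: "thin_smd X" and Y: "thin_smd Y" and Z: "thin_smd Z"
    and F: "smd_morph X Y F" and G: "smd_morph Y Z G"
  shows "Rtil_fun X Z (fcomp (Cat X) G F) = fcomp (Rtil X) (Rtil_fun Y Z G) (Rtil_fun X Y F)"
proof -
  interpret XY: thin_morph X Y F by (intro thin_morph.intro thin.intro thin_morph_axioms.intro X Y F)
  interpret YZ: thin_morph Y Z G by (intro thin_morph.intro thin.intro thin_morph_axioms.intro Y Z G)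
  have bl: "blmap Z (fcomp (Cat X) G F) \<sigma> = blmap Z G (blmap Y F \<sigma>)" if s: "\<sigma> \<in> Blocks X" for \<sigma>
  proof -
    have s2: "blmap Y F \<sigma> \<in> Blocks Y" using XY.bl_S[OF s] .
    have sub: "snd (fcomp (Cat X) G F) ` \<sigma> \<subseteq> blmap Z G (blmap Y F \<sigma>)"
    proof
      fix q assume "q \<in> snd (fcomp (Cat X) G F) ` \<sigma>"
      then obtain f where f: "f \<in> \<sigma>" "q = snd (fcomp (Cat X) G F) f" by blast
      have "q = snd G (snd F f)" using f XY.X.S_mor[OF s f(1)] unfolding fcomp_def by simp
      then show "q \<in> blmap Z G (blmap Y F \<sigma>)" using YZ.bl_mem[OF s2 XY.bl_mem[OF s f(1)]] by simp
    qed
    obtain f where f: "f \<in> \<sigma>" using XY.X.S_ne[OF s] by blast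
    have "blmap Z (fcomp (Cat X) G F) \<sigma> = block_of (Blocks Z) (snd (fcomp (Cat X) G F) f)"
      using blmap_eq[OF Z, of "fcomp (Cat X) G F" \<sigma> f] sub f YZ.bl_S[OF s2] by blast
    also have "\<dots> = block_of (Blocks Z) (snd G (snd F f))" using f XY.X.S_mor[OF s f] unfolding fcomp_def by simp
    also have "\<dots> = blmap Z G (blmap Y F \<sigma>)" using YZ.bl_eq[OF s2 XY.bl_mem[OF s f]] by simp
    finally show ?thesis .
  qed
  have 1: "restrict (blmap Z (fcomp (Cat X) G F)) (S0 X) = restrict (fst (Rtil_fun Y Z G) \<circ> fst (Rtil_fun X Y F)) (S0 X)"
  proof
    fix \<alpha> show "restrict (blmap Z (fcomp (Cat X) G F)) (S0 X) \<alpha> = restrict (fst (Rtil_fun Y Z G) \<circ> fst (Rtil_fun X Y F)) (S0 X) \<alpha>"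
      unfolding Rtil_fun_alt using bl XY.X.S0_S XY.bl_S0 by simp
  qed
  have 2: "restrict (\<lambda>(\<alpha>, \<sigma>, \<beta>). (blmap Z (fcomp (Cat X) G F) \<alpha>, blmap Z (fcomp (Cat X) G F) \<sigma>, blmap Z (fcomp (Cat X) G F) \<beta>)) (Mor (Rtil X))
      = restrict (snd (Rtil_fun Y Z G) \<circ> snd (Rtil_fun X Y F)) (Mor (Rtil X))"
  proof
    fix t show "restrict (\<lambda>(\<alpha>, \<sigma>, \<beta>). (blmap Z (fcomp (Cat X) G F) \<alpha>, blmap Z (fcomp (Cat X) G F) \<sigma>, blmap Z (fcomp (Cat X) G F) \<beta>)) (Mor (Rtil X)) t
      = restrict (snd (Rtil_fun Y Z G) \<circ> snd (Rtil_fun X Y F)) (Mor (Rtil X)) t"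
    proof (cases "t \<in> Mor (Rtil X)")
      case True
      then obtain \<sigma> where s: "\<sigma> \<in> Blocks X" "t = tri X \<sigma>" using XY.X.Rtil_mor_iff by blast
      have a: "bsrc X \<sigma> \<in> Blocks X" "btgt X \<sigma> \<in> Blocks X"
        using XY.X.S0_S XY.X.src_S0[OF s(1)] XY.X.tgt_S0[OF s(1)] by auto
      have r: "(snd (Rtil_fun Y Z G) \<circ> snd (Rtil_fun X Y F)) t = tri Z (blmap Z G (blmap Y F \<sigma>))"
        using XY.RF_tri[OF s(1)] YZ.RF_tri[OF XY.bl_S[OF s(1)]] s by simp
      have l: "(\<lambda>(\<alpha>, \<sigma>, \<beta>). (blmap Z (fcomp (Cat X) G F) \<alpha>, blmap Z (fcomp (Cat X) G F) \<sigma>, blmap Z (fcomp (Cat X) G F) \<beta>)) t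
         = (blmap Z G (blmap Y F (bsrc X \<sigma>)), blmap Z G (blmap Y F \<sigma>), blmap Z G (blmap Y F (btgt X \<sigma>)))"
        using s bl[OF s(1)] bl[OF a(1)] bl[OF a(2)] by (simp add: tri_def)
      have e: "tri Z (blmap Z G (blmap Y F \<sigma>)) = (blmap Z G (blmap Y F (bsrc X \<sigma>)), blmap Z G (blmap Y F \<sigma>), blmap Z G (blmap Y F (btgt X \<sigma>)))"
        unfolding tri_def using YZ.bl_src[OF XY.bl_S[OF s(1)]] YZ.bl_tgt[OF XY.bl_S[OF s(1)]] XY.bl_src[OF s(1)] XY.bl_tgt[OF s(1)]
        by simp
      show ?thesis using True l r e by simp
    next
      case False then show ?thesis by simp
    qed
  qed
  show ?thesis unfolding Rtil_fun_alt[of X Z] fcomp_def[of "Rtil X"] using 1 2 by simp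
qed

definition phi :: "('o,'m) cat \<Rightarrow> ('p,'n) schemoid \<Rightarrow> ('m \<Rightarrow> 'p) \<times> ('m \<times> 'm \<Rightarrow> 'n)
     \<Rightarrow> ('o \<Rightarrow> 'n set) \<times> ('m \<Rightarrow> 'n set \<times> 'n set \<times> 'n set)" where
  "phi H X k = (restrict (\<lambda>x. block_of (Blocks X) (snd k (Idm H x, Idm H x))) (Obj H),
                restrict (\<lambda>f. tri X (block_of (Blocks X) (snd k (Idm H (Cod H f), f)))) (Mor H))"

definition hom_of :: "('o,'m) cat \<Rightarrow> 'o \<Rightarrow> 'o \<Rightarrow> 'm" where
  "hom_of C x y = (THE m. m \<in> Mor C \<and> Dom C m = x \<and> Cod C m = y)"

context thin
begin

lemma hom_of_eq: "m \<in> Mor C \<Longrightarrow> hom_of C (Dom C m) (Cod C m) = m"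
  unfolding hom_of_def by (rule the_equality) (auto intro: thin_hom)

lemma hom_of_eq': "m \<in> Mor C \<Longrightarrow> Dom C m = x \<Longrightarrow> Cod C m = y \<Longrightarrow> hom_of C x y = m"
  using hom_of_eq by blast

end

locale adj = thin X for X :: "('p,'n) schemoid" +
  fixes H :: "('o,'m) cat"
  assumes GH: "groupoid H"
begin

lemma HC: "category H" using GH by blast

end

locale adjk = adj X H for X :: "('p,'n) schemoid" and H :: "('o,'m) cat" +
  fixes k assumes kh: "smd_morph (Stil H) X k"
begin

lemma kfun: "is_functor (Stil_cat H) C k" using kh unfolding smd_morph_def by simp
lemmas kp = functor_props[OF kfun]

lemma k_ex: "f \<in> Mor H \<Longrightarrow> \<exists>\<tau>\<in>S. snd k ` Bk H f \<subseteq> \<tau>"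
  using kh unfolding smd_morph_def by simp

lemma k_base: "y \<in> Obj H \<Longrightarrow> fst k (Idm H y) \<in> Base X"
  using kh unfolding smd_morph_def by auto

lemma k_mor: "h \<in> Mor H \<Longrightarrow> g \<in> Mor H \<Longrightarrow> Cod H h = Cod H g \<Longrightarrow>
   snd k (h, g) \<in> Mor C \<and> Dom C (snd k (h, g)) = fst k g \<and> Cod C (snd k (h, g)) = fst k h"
  using kp(6)[of "(h, g)"] kp(7)[of "(h, g)"] kp(8)[of "(h, g)"] by simp

lemma k_obj: "g \<in> Mor H \<Longrightarrow> fst k g \<in> Obj C"
  using kp(5) by simp

lemma k_idm: "g \<in> Mor H \<Longrightarrow> snd k (g, g) = Idm C (fst k g)"
  using kp(9)[of g] by simp

lemma k_comp: "a \<in> Mor H \<Longrightarrow> b \<in> Mor H \<Longrightarrow> c \<in> Mor H \<Longrightarrow> Cod H a = Cod H b \<Longrightarrow> Cod H b = Cod H c \<Longrightarrow>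
   snd k (a, c) = Comp C (snd k (a, b)) (snd k (b, c))"
  using kp(10)[of "(b, c)" "(a, b)"] by simp

lemma k_block: assumes f: "f \<in> Mor H" and p: "p \<in> Bk H f" and q: "q \<in> Bk H f"
  shows "block_of S (snd k p) = block_of S (snd k q)"
proof -
  obtain \<tau> where t: "\<tau> \<in> S" "snd k ` Bk H f \<subseteq> \<tau>" using k_ex[OF f] by blast
  show ?thesis using blk_eq[OF t(1)] t(2) p q by blast
qed

lemma phi_functor: "is_functor H (Rtil X) (phi H X k)"
proof -
  have obj: "block_of S (snd k (Idm H x, Idm H x)) \<in> S0 X" if x: "x \<in> Obj H" for x
    using k_idm[of "Idm H x"] k_obj[of "Idm H x"] idm_S0 x HC by simp
  have blkm: "block_of S (snd k (Idm H (Cod H f), f)) \<in> S" and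
     m1: "snd k (Idm H (Cod H f), f) \<in> block_of S (snd k (Idm H (Cod H f), f))" and
     dc: "Dom C (snd k (Idm H (Cod H f), f)) = fst k f" "Cod C (snd k (Idm H (Cod H f), f)) = fst k (Idm H (Cod H f))"
    if f: "f \<in> Mor H" for f
    using k_mor[of "Idm H (Cod H f)" f] f HC blk_in blk_mem by auto
  have dom: "bsrc X (block_of S (snd k (Idm H (Cod H f), f))) = block_of S (snd k (Idm H (Dom H f), Idm H (Dom H f)))"
    if f: "f \<in> Mor H" for f
  proof -
    have "bsrc X (block_of S (snd k (Idm H (Cod H f), f))) = block_of S (Idm C (fst k f))"
      using src_eq[OF blkm[OF f] m1[OF f]] dc[OF f] by simp
    also have "\<dots> = block_of S (snd k (f, f))" using k_idm f by simp
    also have "\<dots> = block_of S (snd k (Idm H (Dom H f), Idm H (Dom H f)))"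
      using k_block[of "Idm H (Dom H f)" "(f, f)" "(Idm H (Dom H f), Idm H (Dom H f))"] f HC Bk_idm[OF GH] by simp
    finally show ?thesis .
  qed
  have cod: "btgt X (block_of S (snd k (Idm H (Cod H f), f))) = block_of S (snd k (Idm H (Cod H f), Idm H (Cod H f)))"
    if f: "f \<in> Mor H" for f
  proof -
    have "btgt X (block_of S (snd k (Idm H (Cod H f), f))) = block_of S (Idm C (fst k (Idm H (Cod H f))))"
      using tgt_eq[OF blkm[OF f] m1[OF f]] dc[OF f] by simp
    also have "\<dots> = block_of S (snd k (Idm H (Cod H f), Idm H (Cod H f)))" using k_idm f HC by simp
    finally show ?thesis .
  qed
  have ext: "fst (phi H X k) \<in> extensional (Obj H)" "snd (phi H X k) \<in> extensional (Mor H)"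
    unfolding phi_def by simp_all
  have o: "\<forall>x\<in>Obj H. fst (phi H X k) x \<in> Obj (Rtil X)" unfolding phi_def using obj by simp
  have m: "\<forall>f\<in>Mor H. snd (phi H X k) f \<in> Mor (Rtil X) \<and> Dom (Rtil X) (snd (phi H X k) f) = fst (phi H X k) (Dom H f) \<and>
     Cod (Rtil X) (snd (phi H X k) f) = fst (phi H X k) (Cod H f)"
  proof
    fix f assume f: "f \<in> Mor H"
    show "snd (phi H X k) f \<in> Mor (Rtil X) \<and> Dom (Rtil X) (snd (phi H X k) f) = fst (phi H X k) (Dom H f) \<and>
     Cod (Rtil X) (snd (phi H X k) f) = fst (phi H X k) (Cod H f)"
      unfolding phi_def using f tri_mor[OF blkm[OF f]] dom[OF f] cod[OF f] HC by (simp add: tri_def)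
  qed
  have i: "\<forall>x\<in>Obj H. snd (phi H X k) (Idm H x) = Idm (Rtil X) (fst (phi H X k) x)"
  proof
    fix x assume x: "x \<in> Obj H"
    show "snd (phi H X k) (Idm H x) = Idm (Rtil X) (fst (phi H X k) x)"
      unfolding phi_def using x HC tri_S0[OF obj[OF x]] by simp
  qed
  have c: "snd (phi H X k) (Comp H g f) = Comp (Rtil X) (snd (phi H X k) g) (snd (phi H X k) f)"
    if f: "f \<in> Mor H" and g: "g \<in> Mor H" and fg: "Cod H f = Dom H g" for f g
  proof -
    have gf: "Comp H g f \<in> Mor H" "Cod H (Comp H g f) = Cod H g" using f g fg HC by (auto simp: cat_comp)
    have mem: "(g, Comp H g f) \<in> Bk H f" using Bk_iff[OF GH f] g fg by simp
    have b: "snd k (g, Comp H g f) \<in> block_of S (snd k (Idm H (Cod H f), f))"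
    proof -
      have "block_of S (snd k (g, Comp H g f)) = block_of S (snd k (Idm H (Cod H f), f))"
        using k_block[OF f mem Bk_mem_id[OF GH f]] .
      moreover have "snd k (g, Comp H g f) \<in> block_of S (snd k (g, Comp H g f))"
        using blk_mem k_mor[of g "Comp H g f"] g gf by simp
      ultimately show ?thesis by simp
    qed
    have kg: "snd k (Idm H (Cod H g), g) \<in> Mor C" "Dom C (snd k (Idm H (Cod H g), g)) = fst k g"
      using k_mor[of "Idm H (Cod H g)" g] g HC by auto
    have kgf: "Cod C (snd k (g, Comp H g f)) = fst k g" using k_mor[of g "Comp H g f"] g gf by simp
    have e1: "Comp (Rtil X) (snd (phi H X k) g) (snd (phi H X k) f)
        = Comp (Rtil X) (tri X (block_of S (snd k (Idm H (Cod H g), g)))) (tri X (block_of S (snd k (Idm H (Cod H f), f))))"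
      unfolding phi_def using f g by simp
    have e2: "Comp (Rtil X) (tri X (block_of S (snd k (Idm H (Cod H g), g)))) (tri X (block_of S (snd k (Idm H (Cod H f), f))))
       = tri X (block_of S (Comp C (snd k (Idm H (Cod H g), g)) (snd k (g, Comp H g f))))"
      by (rule R_comp[OF blkm[OF f] blkm[OF g] m1[OF g] b]) (simp add: kg kgf)
    have e3: "snd k (Idm H (Cod H g), Comp H g f) = Comp C (snd k (Idm H (Cod H g), g)) (snd k (g, Comp H g f))"
      by (rule k_comp) (use g gf HC in auto)
    have e4: "snd (phi H X k) (Comp H g f) = tri X (block_of S (snd k (Idm H (Cod H g), Comp H g f)))"
      unfolding phi_def using gf by simp
    show ?thesis unfolding e1 e2 e4 e3 ..
  qed
  show ?thesis unfolding is_functor_def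
    apply (intro conjI HC R_category ext o m i)
    using c by blast
qed

end

context adj
begin

lemma bo_inj: "v \<in> Base X \<Longrightarrow> w \<in> Base X \<Longrightarrow> block_of S (Idm C v) = block_of S (Idm C w) \<Longrightarrow> v = w"
  using bo_bij unfolding bij_betw_def inj_on_def by blast

lemma phi_inj:
  assumes k1: "smd_morph (Stil H) X k" and k2: "smd_morph (Stil H) X k'" and e: "phi H X k = phi H X k'"
  shows "k = k'"
proof -
  interpret A: adjk X H k by (intro adjk.intro adjk_axioms.intro adj_axioms thin_axioms k1)
  interpret B: adjk X H k' by (intro adjk.intro adjk_axioms.intro adj_axioms thin_axioms k2)
  have ob: "fst k (Idm H y) = fst k' (Idm H y)" if y: "y \<in> Obj H" for y
  proof -
    have "block_of S (snd k (Idm H y, Idm H y)) = block_of S (snd k' (Idm H y, Idm H y))"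
      using arg_cong[OF e, of "\<lambda>p. fst p y"] y unfolding phi_def by simp
    then have "block_of S (Idm C (fst k (Idm H y))) = block_of S (Idm C (fst k' (Idm H y)))"
      using A.k_idm B.k_idm y HC by simp
    then show ?thesis using bo_inj A.k_base[OF y] B.k_base[OF y] by blast
  qed
  have fst_eq: "fst k g = fst k' g" if g: "g \<in> Mor H" for g
  proof -
    define y where "y = Cod H g"
    have y: "y \<in> Obj H" using g HC y_def by simp
    have "tri X (block_of S (snd k (Idm H y, g))) = tri X (block_of S (snd k' (Idm H y, g)))"
      using arg_cong[OF e, of "\<lambda>p. snd p g"] g unfolding phi_def y_def by simp
    then have bb: "block_of S (snd k (Idm H y, g)) = block_of S (snd k' (Idm H y, g))" by (rule tri_inj)
    have m1: "snd k (Idm H y, g) \<in> Mor C" "Dom C (snd k (Idm H y, g)) = fst k g" "Cod C (snd k (Idm H y, g)) = fst k (Idm H y)"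
      using A.k_mor[of "Idm H y" g] g y HC y_def by auto
    have m2: "snd k' (Idm H y, g) \<in> Mor C" "Dom C (snd k' (Idm H y, g)) = fst k' g" "Cod C (snd k' (Idm H y, g)) = fst k' (Idm H y)"
      using B.k_mor[of "Idm H y" g] g y HC y_def by auto
    have "snd k (Idm H y, g) \<in> block_of S (snd k' (Idm H y, g))" using bb blk_mem[OF m1(1)] by simp
    then have "snd k (Idm H y, g) = snd k' (Idm H y, g)"
      using st_cod[OF blk_in[OF m2(1)] _ blk_mem[OF m2(1)]] m1(3) m2(3) ob[OF y] by simp
    then show ?thesis using m1(2) m2(2) by simp
  qed
  have f: "fst k = fst k'"
  proof
    fix g show "fst k g = fst k' g"
    proof (cases "g \<in> Mor H")
      case True then show ?thesis using fst_eq by simp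
    next
      case False then show ?thesis using extensional_arb[OF A.kp(3)] extensional_arb[OF B.kp(3)] by simp
    qed
  qed
  have s: "snd k = snd k'"
  proof
    fix p show "snd k p = snd k' p"
    proof (cases "p \<in> Mor (Stil_cat H)")
      case True
      then obtain h g where p: "p = (h, g)" "h \<in> Mor H" "g \<in> Mor H" "Cod H h = Cod H g" by auto
      have m1: "snd k (h, g) \<in> Mor C \<and> Dom C (snd k (h, g)) = fst k g \<and> Cod C (snd k (h, g)) = fst k h"
        using A.k_mor p by blast
      have m2: "snd k' (h, g) \<in> Mor C \<and> Dom C (snd k' (h, g)) = fst k' g \<and> Cod C (snd k' (h, g)) = fst k' h"
        using B.k_mor p by blast
      show ?thesis using thin_hom[of "snd k (h, g)" "snd k' (h, g)"] m1 m2 f p by simp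
    next
      case False then show ?thesis using extensional_arb[OF A.kp(4)] extensional_arb[OF B.kp(4)] by simp
    qed
  qed
  show ?thesis using f s by (simp add: prod_eq_iff)
qed

end

locale adjP = adj X H for X :: "('p,'n) schemoid" and H :: "('o,'m) cat" +
  fixes P assumes PF: "is_functor H (Rtil X) P"
begin

lemmas pp = functor_props[OF PF]

definition mid where "mid f = fst (snd (snd P f))"
definition bsel where "bsel y = the_inv_into (Base X) (\<lambda>v. block_of S (Idm C v)) (fst P y)"
definition wm where "wm f = (THE m. m \<in> mid f \<and> Cod C m = bsel (Cod H f))"
definition ko where "ko g = Dom C (wm g)"
definition kk where "kk = (restrict ko (Mor H), restrict (\<lambda>(h, g). hom_of C (ko g) (ko h)) (Mor (Stil_cat H)))"

lemma P_obj: "y \<in> Obj H \<Longrightarrow> fst P y \<in> S0 X" using pp(5) by simp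

lemma P_mor: assumes f: "f \<in> Mor H" shows "snd P f = tri X (mid f)" "mid f \<in> S"
proof -
  obtain \<sigma> where s: "\<sigma> \<in> S" "snd P f = tri X \<sigma>" using pp(6)[OF f] Rtil_mor_iff by blast
  then have "mid f = \<sigma>" unfolding mid_def by (simp add: tri_def)
  then show "snd P f = tri X (mid f)" "mid f \<in> S" using s by simp_all
qed

lemma mid_src: "f \<in> Mor H \<Longrightarrow> bsrc X (mid f) = fst P (Dom H f)"
  using pp(7) P_mor by (simp add: tri_def)

lemma mid_tgt: "f \<in> Mor H \<Longrightarrow> btgt X (mid f) = fst P (Cod H f)"
  using pp(8) P_mor by (simp add: tri_def)

lemma bsel: assumes y: "y \<in> Obj H"
  shows "bsel y \<in> Base X" "block_of S (Idm C (bsel y)) = fst P y" "bsel y \<in> Obj C"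
proof -
  have i: "fst P y \<in> (\<lambda>v. block_of S (Idm C v)) ` Base X" using P_obj[OF y] bo_bij unfolding bij_betw_def by simp
  have inj: "inj_on (\<lambda>v. block_of S (Idm C v)) (Base X)" using bo_bij unfolding bij_betw_def by simp
  show "bsel y \<in> Base X" unfolding bsel_def using the_inv_into_into[OF inj i] by simp
  show "block_of S (Idm C (bsel y)) = fst P y" unfolding bsel_def using f_the_inv_into_f[OF inj i] by simp
  show "bsel y \<in> Obj C" using \<open>bsel y \<in> Base X\<close> base_obj by blast
qed

lemma wm: assumes f: "f \<in> Mor H" shows "wm f \<in> mid f" "Cod C (wm f) = bsel (Cod H f)" "wm f \<in> Mor C"
proof -
  have y: "Cod H f \<in> Obj H" using f HC by simp
  have "Idm C (bsel (Cod H f)) \<in> btgt X (mid f)"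
    using mid_tgt[OF f] bsel[OF y] idm_blk[of "bsel (Cod H f)"] by simp
  then obtain m where m: "m \<in> mid f" "Cod C m = bsel (Cod H f)" using exist_cod[OF P_mor(2)[OF f] bsel(3)[OF y]] by blast
  have ex: "\<exists>!m. m \<in> mid f \<and> Cod C m = bsel (Cod H f)"
  proof
    show "m \<in> mid f \<and> Cod C m = bsel (Cod H f)" using m by simp
    fix m' assume "m' \<in> mid f \<and> Cod C m' = bsel (Cod H f)"
    then show "m' = m" using st_cod[OF P_mor(2)[OF f]] m by metis
  qed
  have "wm f \<in> mid f \<and> Cod C (wm f) = bsel (Cod H f)" unfolding wm_def using theI'[OF ex] .
  then show "wm f \<in> mid f" "Cod C (wm f) = bsel (Cod H f)" by simp_all
  then show "wm f \<in> Mor C" using S_mor[OF P_mor(2)[OF f]] by simp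
qed

lemma ko_obj: "g \<in> Mor H \<Longrightarrow> ko g \<in> Obj C" unfolding ko_def using wm(3) CC by simp

lemma mid_comp:
  assumes f: "f \<in> Mor H" and g: "g \<in> Mor H" and fg: "Cod H f = Dom H g"
    and a: "a \<in> mid g" and b: "b \<in> mid f" and ab: "Dom C a = Cod C b"
  shows "mid (Comp H g f) = block_of S (Comp C a b)"
proof -
  have "tri X (mid (Comp H g f)) = snd P (Comp H g f)" using P_mor f g fg HC by (simp add: cat_comp)
  also have "\<dots> = Comp (Rtil X) (snd P g) (snd P f)" using pp(10)[OF f g fg] .
  also have "\<dots> = Comp (Rtil X) (tri X (mid g)) (tri X (mid f))" using P_mor f g by simp
  also have "\<dots> = tri X (block_of S (Comp C a b))" by (rule R_comp[OF P_mor(2)[OF f] P_mor(2)[OF g] a b ab])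
  finally show ?thesis by (rule tri_inj)
qed

lemma mid_idm: "y \<in> Obj H \<Longrightarrow> mid (Idm H y) = fst P y"
  using pp(9) unfolding mid_def by simp

lemma ko_idm: assumes y: "y \<in> Obj H" shows "ko (Idm H y) = bsel y"
proof -
  have iy: "Idm H y \<in> Mor H" using y HC by simp
  have "wm (Idm H y) \<in> J0 X" using wm(1)[OF iy] mid_idm[OF y] S0_J0[OF P_obj[OF y]] by auto
  then obtain z where z: "z \<in> Obj C" "wm (Idm H y) = Idm C z" using J0_idm by blast
  have "z = bsel y" using wm(2)[OF iy] z y HC CC by simp
  then show ?thesis unfolding ko_def using z CC by simp
qed

lemma hom_ex:
  assumes h: "h \<in> Mor H" and g: "g \<in> Mor H" and e: "Cod H h = Cod H g"
  shows "hom_of C (ko g) (ko h) \<in> Mor C \<and> Dom C (hom_of C (ko g) (ko h)) = ko g \<and> Cod C (hom_of C (ko g) (ko h)) = ko h"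
proof -
  define m where "m = Comp C (ginv C (wm h)) (wm g)"
  have c: "Cod C (wm g) = Dom C (ginv C (wm h))" using wm[OF h] wm[OF g] e G by simp
  have mm: "m \<in> Mor C" "Dom C m = ko g" "Cod C m = ko h"
    unfolding m_def ko_def using wm(3)[OF h] wm(3)[OF g] c G CC by (simp_all add: cat_comp)
  have "hom_of C (ko g) (ko h) = m" using hom_of_eq'[OF mm] .
  then show ?thesis using mm by simp
qed

lemma hom_idm: "x \<in> Obj C \<Longrightarrow> hom_of C x x = Idm C x"
  using hom_of_eq'[of "Idm C x" x x] CC by simp

lemma kk_fun: "is_functor (Stil_cat H) C kk"
proof -
  have ext: "fst kk \<in> extensional (Obj (Stil_cat H))" "snd kk \<in> extensional (Mor (Stil_cat H))"
    unfolding kk_def by simp_all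
  have o: "\<forall>x\<in>Obj (Stil_cat H). fst kk x \<in> Obj C" unfolding kk_def using ko_obj by simp
  have m: "\<forall>p\<in>Mor (Stil_cat H). snd kk p \<in> Mor C \<and> Dom C (snd kk p) = fst kk (Dom (Stil_cat H) p) \<and>
      Cod C (snd kk p) = fst kk (Cod (Stil_cat H) p)"
    unfolding kk_def using hom_ex by auto
  have i: "\<forall>x\<in>Obj (Stil_cat H). snd kk (Idm (Stil_cat H) x) = Idm C (fst kk x)"
    unfolding kk_def using hom_idm ko_obj by simp
  have c: "snd kk (Comp (Stil_cat H) q p) = Comp C (snd kk q) (snd kk p)"
    if p: "p \<in> Mor (Stil_cat H)" and q: "q \<in> Mor (Stil_cat H)" and pq: "Cod (Stil_cat H) p = Dom (Stil_cat H) q" for p q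
  proof -
    obtain a b where ab: "q = (a, b)" "a \<in> Mor H" "b \<in> Mor H" "Cod H a = Cod H b" using q by auto
    obtain b' c where bc: "p = (b', c)" "b' \<in> Mor H" "c \<in> Mor H" "Cod H b' = Cod H c" using p by auto
    have bb: "b' = b" using pq ab bc by simp
    have h1: "hom_of C (ko c) (ko b) \<in> Mor C \<and> Dom C (hom_of C (ko c) (ko b)) = ko c \<and> Cod C (hom_of C (ko c) (ko b)) = ko b"
      using hom_ex[of b c] bc bb by simp
    have h2: "hom_of C (ko b) (ko a) \<in> Mor C \<and> Dom C (hom_of C (ko b) (ko a)) = ko b \<and> Cod C (hom_of C (ko b) (ko a)) = ko a"
      using hom_ex[of a b] ab by simp
    have h3: "hom_of C (ko c) (ko a) \<in> Mor C \<and> Dom C (hom_of C (ko c) (ko a)) = ko c \<and> Cod C (hom_of C (ko c) (ko a)) = ko a"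
      using hom_ex[of a c] ab bc bb by simp
    have cm: "Comp C (hom_of C (ko b) (ko a)) (hom_of C (ko c) (ko b)) \<in> Mor C"
      "Dom C (Comp C (hom_of C (ko b) (ko a)) (hom_of C (ko c) (ko b))) = ko c"
      "Cod C (Comp C (hom_of C (ko b) (ko a)) (hom_of C (ko c) (ko b))) = ko a"
      using h1 h2 CC by (simp_all add: cat_comp)
    have "hom_of C (ko c) (ko a) = Comp C (hom_of C (ko b) (ko a)) (hom_of C (ko c) (ko b))"
      using thin_hom[OF _ cm(1), of "hom_of C (ko c) (ko a)"] h3 cm by simp
    moreover have "(a, c) \<in> Mor (Stil_cat H)" using ab bc bb by simp
    ultimately show ?thesis unfolding kk_def using ab bc bb p q by simp
  qed
  show ?thesis unfolding is_functor_def
    apply (intro conjI HC Stil_category CC ext o m i)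
    using c by blast
qed

lemma kk_block: assumes f: "f \<in> Mor H" shows "snd kk ` Bk H f \<subseteq> mid f"
proof
  fix q assume "q \<in> snd kk ` Bk H f"
  then obtain k' l where kl: "(k', l) \<in> Bk H f" "q = snd kk (k', l)" by auto
  have k: "k' \<in> Mor H" "Dom H k' = Cod H f" "l = Comp H k' f" using kl Bk_iff[OF GH f] by auto
  have kf: "Comp H k' f \<in> Mor H" "Cod H (Comp H k' f) = Cod H k'" "Dom H (Comp H k' f) = Dom H f"
    using k f HC by (auto simp: cat_comp)
  have mm: "(k', l) \<in> Mor (Stil_cat H)" by (rule subsetD[OF Bk_sub kl(1)])
  have q: "q = hom_of C (ko (Comp H k' f)) (ko k')" using kl mm k unfolding kk_def by simp
  have s1: "bsrc X (mid k') = btgt X (mid f)" using mid_src[OF k(1)] mid_tgt[OF f] k by simp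
  have x: "ko k' \<in> Obj C" using ko_obj[OF k(1)] .
  have "Idm C (ko k') \<in> btgt X (mid f)"
    using src_eq[OF P_mor(2)[OF k(1)] wm(1)[OF k(1)]] s1 idm_blk[OF x] unfolding ko_def by simp
  then obtain b0 where b0: "b0 \<in> mid f" "Cod C b0 = ko k'" using exist_cod[OF P_mor(2)[OF f] x] by blast
  have d0: "Dom C (wm k') = Cod C b0" using b0 unfolding ko_def by simp
  have mc: "mid (Comp H k' f) = block_of S (Comp C (wm k') b0)"
    using mid_comp[OF f k(1) k(2)[symmetric] wm(1)[OF k(1)] b0(1) d0] .
  have wmc: "wm (Comp H k' f) \<in> block_of S (Comp C (wm k') b0)" using wm(1)[OF kf(1)] mc by simp
  obtain a' b' where ab: "a' \<in> mid k'" "b' \<in> mid f" "Dom C a' = Cod C b'" "Comp C a' b' = wm (Comp H k' f)"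
    using factor[OF P_mor(2)[OF f] P_mor(2)[OF k(1)] wm(1)[OF k(1)] b0(1) d0 wmc] by blast
  have abm: "a' \<in> Mor C" "b' \<in> Mor C" using S_mor[OF P_mor(2)[OF k(1)] ab(1)] S_mor[OF P_mor(2)[OF f] ab(2)] by simp_all
  have "Cod C a' = Cod C (wm (Comp H k' f))" using ab(4) cat_comp_cod[OF CC abm(2) abm(1) ab(3)[symmetric]] by simp
  also have "\<dots> = Cod C (wm k')" using wm(2)[OF kf(1)] wm(2)[OF k(1)] kf by simp
  finally have "a' = wm k'" using st_cod[OF P_mor(2)[OF k(1)] ab(1) wm(1)[OF k(1)]] by simp
  then have cb: "Cod C b' = ko k'" using ab(3) unfolding ko_def by simp
  have db: "Dom C b' = ko (Comp H k' f)" using ab(4) cat_comp_dom[OF CC abm(2) abm(1) ab(3)[symmetric]] unfolding ko_def by simp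
  have "q = b'" using q hom_of_eq'[OF abm(2) db cb] by simp
  then show "q \<in> mid f" using ab(2) by simp
qed

lemma kk_morph: "smd_morph (Stil H) X kk"
proof -
  have blk: "\<forall>\<sigma>\<in>Blocks (Stil H). \<exists>\<tau>\<in>S. snd kk ` \<sigma> \<subseteq> \<tau>"
  proof
    fix \<sigma> assume "\<sigma> \<in> Blocks (Stil H)"
    then obtain f where f: "f \<in> Mor H" "\<sigma> = Bk H f" by auto
    show "\<exists>\<tau>\<in>S. snd kk ` \<sigma> \<subseteq> \<tau>" using kk_block[OF f(1)] P_mor(2)[OF f(1)] f(2) by blast
  qed
  have tob: "\<forall>x\<in>Obj (Cat (Stil H)). fst kk (Tob (Stil H) x) = Tob X (fst kk x)"
    unfolding kk_def using Tob_id ko_obj by simp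
  have tm: "\<forall>p\<in>Mor (Cat (Stil H)). snd kk (Tmor (Stil H) p) = Tmor X (snd kk p)"
  proof
    fix p assume p: "p \<in> Mor (Cat (Stil H))"
    then obtain h g where hg: "p = (h, g)" "h \<in> Mor H" "g \<in> Mor H" "Cod H h = Cod H g" by auto
    have h1: "hom_of C (ko g) (ko h) \<in> Mor C \<and> Dom C (hom_of C (ko g) (ko h)) = ko g \<and> Cod C (hom_of C (ko g) (ko h)) = ko h"
      using hom_ex hg by simp
    have h2: "hom_of C (ko h) (ko g) \<in> Mor C \<and> Dom C (hom_of C (ko h) (ko g)) = ko h \<and> Cod C (hom_of C (ko h) (ko g)) = ko g"
      using hom_ex hg by simp
    have "hom_of C (ko h) (ko g) = ginv C (hom_of C (ko g) (ko h))"
      using thin_hom[of "hom_of C (ko h) (ko g)" "ginv C (hom_of C (ko g) (ko h))"] h1 h2 G by simp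
    then show "snd kk (Tmor (Stil H) p) = Tmor X (snd kk p)"
      unfolding kk_def using hg Tmor_eq h1 by simp
  qed
  have base: "fst kk ` Base (Stil H) \<subseteq> Base X"
    unfolding kk_def using ko_idm bsel HC by auto
  have ff: "is_functor (Cat (Stil H)) C kk" using kk_fun by simp
  show ?thesis unfolding smd_morph_def
    by (intro conjI ff blk tob tm base)
qed

lemma phi_kk: "phi H X kk = P"
proof -
  have 1: "restrict (\<lambda>x. block_of S (snd kk (Idm H x, Idm H x))) (Obj H) = fst P"
  proof
    fix x show "restrict (\<lambda>x. block_of S (snd kk (Idm H x, Idm H x))) (Obj H) x = fst P x"
    proof (cases "x \<in> Obj H")
      case True
      have "snd kk (Idm H x, Idm H x) = Idm C (bsel x)"
        unfolding kk_def using True HC ko_idm hom_idm bsel by simp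
      then show ?thesis using True bsel by simp
    next
      case False then show ?thesis using extensional_arb[OF pp(3)] by simp
    qed
  qed
  have 2: "restrict (\<lambda>f. tri X (block_of S (snd kk (Idm H (Cod H f), f)))) (Mor H) = snd P"
  proof
    fix f show "restrict (\<lambda>f. tri X (block_of S (snd kk (Idm H (Cod H f), f)))) (Mor H) f = snd P f"
    proof (cases "f \<in> Mor H")
      case True
      have y: "Cod H f \<in> Obj H" using True HC by simp
      have "snd kk (Idm H (Cod H f), f) = hom_of C (ko f) (bsel (Cod H f))"
        unfolding kk_def using True HC ko_idm[OF y] by simp
      also have "\<dots> = wm f" using hom_of_eq'[OF wm(3)[OF True]] wm(2)[OF True] unfolding ko_def by simp
      finally have "block_of S (snd kk (Idm H (Cod H f), f)) = mid f"
        using blk_eq[OF P_mor(2)[OF True] wm(1)[OF True]] by simp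
      then show ?thesis using True P_mor(1)[OF True] by simp
    next
      case False then show ?thesis using extensional_arb[OF pp(4)] by simp
    qed
  qed
  show ?thesis unfolding phi_def using 1 2 by (simp add: prod_eq_iff)
qed

end

lemma phi_bij:
  assumes GH: "groupoid H" and X: "thin_smd X"
  shows "bij_betw (phi H X) (smd_hom (Stil H) X) (gpd_hom H (Rtil X))"
proof -
  interpret A: adj X H by (intro adj.intro adj_axioms.intro thin.intro X GH)
  have inj: "inj_on (phi H X) (smd_hom (Stil H) X)"
    by (rule inj_onI) (use A.phi_inj in \<open>auto simp: smd_hom_def\<close>)
  have sub: "phi H X ` smd_hom (Stil H) X \<subseteq> gpd_hom H (Rtil X)"
  proof
    fix q assume "q \<in> phi H X ` smd_hom (Stil H) X"
    then obtain k where k: "smd_morph (Stil H) X k" "q = phi H X k" unfolding smd_hom_def by auto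
    interpret K: adjk X H k by (intro adjk.intro adjk_axioms.intro A.adj_axioms A.thin_axioms k(1))
    show "q \<in> gpd_hom H (Rtil X)" using K.phi_functor k(2) unfolding gpd_hom_def by simp
  qed
  have sup: "gpd_hom H (Rtil X) \<subseteq> phi H X ` smd_hom (Stil H) X"
  proof
    fix P assume "P \<in> gpd_hom H (Rtil X)"
    then have P: "is_functor H (Rtil X) P" unfolding gpd_hom_def by simp
    interpret Q: adjP X H P by (intro adjP.intro adjP_axioms.intro A.adj_axioms P)
    show "P \<in> phi H X ` smd_hom (Stil H) X"
      using Q.kk_morph Q.phi_kk unfolding smd_hom_def by (metis (mono_tags, lifting) image_eqI mem_Collect_eq)
  qed
  show ?thesis unfolding bij_betw_def using inj sub sup by blast
qed

lemma phi_nat: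
  assumes GH: "groupoid H" and GH': "groupoid H'" and X: "thin_smd X" and X': "thin_smd X'"
    and F: "is_functor H' H F" and G: "smd_morph X X' G" and k: "smd_morph (Stil H) X k"
  shows "phi H' X' (fcomp (Cat (Stil H')) G (fcomp (Cat (Stil H')) k (Stil_fun H' F)))
           = fcomp H' (Rtil_fun X X' G) (fcomp H' (phi H X k) F)"
proof -
  interpret K: adjk X H k by (intro adjk.intro adjk_axioms.intro adj.intro adj_axioms.intro thin.intro X GH k)
  interpret M: thin_morph X X' G by (intro thin_morph.intro thin.intro thin_morph_axioms.intro X X' G)
  note fp = functor_props[OF F]
  have HC': "category H'" using GH' by blast
  define K2 where "K2 = fcomp (Stil_cat H') G (fcomp (Stil_cat H') k (Stil_fun H' F))"
  have K2s: "snd K2 (h, g) = snd G (snd k (snd F h, snd F g))"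
    if hg: "(h, g) \<in> Mor (Stil_cat H')" for h g
    unfolding K2_def fcomp_def Stil_fun_def using hg by simp
  have 1: "restrict (\<lambda>x. block_of (Blocks X') (snd K2 (Idm H' x, Idm H' x))) (Obj H')
      = restrict (fst (Rtil_fun X X' G) \<circ> fst (fcomp H' (phi H X k) F)) (Obj H')"
  proof
    fix x show "restrict (\<lambda>x. block_of (Blocks X') (snd K2 (Idm H' x, Idm H' x))) (Obj H') x
      = restrict (fst (Rtil_fun X X' G) \<circ> fst (fcomp H' (phi H X k) F)) (Obj H') x"
    proof (cases "x \<in> Obj H'")
      case True
      have fx: "fst F x \<in> Obj H" using fp(5)[OF True] .
      have ix: "snd F (Idm H' x) = Idm H (fst F x)" using fp(9)[OF True] .
      have l: "snd K2 (Idm H' x, Idm H' x) = snd G (snd k (Idm H (fst F x), Idm H (fst F x)))"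
        using K2s[of "Idm H' x" "Idm H' x"] True HC' ix by simp
      have km: "snd k (Idm H (fst F x), Idm H (fst F x)) \<in> Mor (Cat X)"
        using K.k_mor[of "Idm H (fst F x)" "Idm H (fst F x)"] fx K.HC by simp
      have s0: "block_of (Blocks X) (snd k (Idm H (fst F x), Idm H (fst F x))) \<in> S0 X"
        using K.k_idm[of "Idm H (fst F x)"] K.k_obj[of "Idm H (fst F x)"] K.idm_S0 fx K.HC by simp
      have r: "(fst (Rtil_fun X X' G) \<circ> fst (fcomp H' (phi H X k) F)) x
          = blmap X' G (block_of (Blocks X) (snd k (Idm H (fst F x), Idm H (fst F x))))"
        unfolding Rtil_fun_alt fcomp_def phi_def using True fx s0 by simp
      also have "\<dots> = block_of (Blocks X') (snd G (snd k (Idm H (fst F x), Idm H (fst F x))))"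
        using M.bl_eq[OF K.blk_in[OF km] K.blk_mem[OF km]] .
      finally show ?thesis using True l by simp
    next
      case False then show ?thesis by simp
    qed
  qed
  have 2: "restrict (\<lambda>f. tri X' (block_of (Blocks X') (snd K2 (Idm H' (Cod H' f), f)))) (Mor H')
      = restrict (snd (Rtil_fun X X' G) \<circ> snd (fcomp H' (phi H X k) F)) (Mor H')"
  proof
    fix f show "restrict (\<lambda>f. tri X' (block_of (Blocks X') (snd K2 (Idm H' (Cod H' f), f)))) (Mor H') f
      = restrict (snd (Rtil_fun X X' G) \<circ> snd (fcomp H' (phi H X k) F)) (Mor H') f"
    proof (cases "f \<in> Mor H'")
      case True
      have ff: "snd F f \<in> Mor H" using fp(6)[OF True] .
      have ic: "snd F (Idm H' (Cod H' f)) = Idm H (Cod H (snd F f))" using fp(9)[of "Cod H' f"] fp(8)[OF True] True HC' by simp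
      have l: "snd K2 (Idm H' (Cod H' f), f) = snd G (snd k (Idm H (Cod H (snd F f)), snd F f))"
        using K2s[of "Idm H' (Cod H' f)" f] True HC' ic by simp
      have km: "snd k (Idm H (Cod H (snd F f)), snd F f) \<in> Mor (Cat X)"
        using K.k_mor[of "Idm H (Cod H (snd F f))" "snd F f"] ff K.HC by simp
      have r: "(snd (Rtil_fun X X' G) \<circ> snd (fcomp H' (phi H X k) F)) f
          = snd (Rtil_fun X X' G) (tri X (block_of (Blocks X) (snd k (Idm H (Cod H (snd F f)), snd F f))))"
        unfolding fcomp_def phi_def using True ff by simp
      also have "\<dots> = tri X' (blmap X' G (block_of (Blocks X) (snd k (Idm H (Cod H (snd F f)), snd F f))))"
        using M.RF_tri[OF K.blk_in[OF km]] .
      also have "\<dots> = tri X' (block_of (Blocks X') (snd G (snd k (Idm H (Cod H (snd F f)), snd F f))))"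
        using M.bl_eq[OF K.blk_in[OF km] K.blk_mem[OF km]] by simp
      finally show ?thesis using True l by simp
    next
      case False then show ?thesis by simp
    qed
  qed
  have "phi H' X' K2 = fcomp H' (Rtil_fun X X' G) (fcomp H' (phi H X k) F)"
    unfolding phi_def[of H' X' K2] fcomp_def[of H' "Rtil_fun X X' G"] using 1 2 by simp
  then show ?thesis unfolding K2_def by simp
qed

lemma transport_groupoid:
  assumes GR: "groupoid R"
    and bo: "bij_betw bo (Obj H) (Obj R)" and bm: "bij_betw bm (Mor H) (Mor R)"
    and dom: "\<And>x. x \<in> Mor H \<Longrightarrow> Dom H x \<in> Obj H \<and> bo (Dom H x) = Dom R (bm x)"
    and cod: "\<And>x. x \<in> Mor H \<Longrightarrow> Cod H x \<in> Obj H \<and> bo (Cod H x) = Cod R (bm x)"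
    and idm: "\<And>v. v \<in> Obj H \<Longrightarrow> Idm H v \<in> Mor H \<and> bm (Idm H v) = Idm R (bo v)"
    and comp: "\<And>f g. f \<in> Mor H \<Longrightarrow> g \<in> Mor H \<Longrightarrow> Cod H f = Dom H g \<Longrightarrow>
        Comp H g f \<in> Mor H \<and> bm (Comp H g f) = Comp R (bm g) (bm f)"
  shows "groupoid H \<and> (\<forall>f\<in>Mor H. ginv H f \<in> Mor H \<and> bm (ginv H f) = ginv R (bm f))"
proof -
  have CR: "category R" using GR by blast
  have boi: "\<And>x y. x \<in> Obj H \<Longrightarrow> y \<in> Obj H \<Longrightarrow> bo x = bo y \<Longrightarrow> x = y"
    using bo unfolding bij_betw_def inj_on_def by blast
  have bmi: "\<And>x y. x \<in> Mor H \<Longrightarrow> y \<in> Mor H \<Longrightarrow> bm x = bm y \<Longrightarrow> x = y"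
    using bm unfolding bij_betw_def inj_on_def by blast
  have bom: "\<And>x. x \<in> Obj H \<Longrightarrow> bo x \<in> Obj R" using bo unfolding bij_betw_def by blast
  have bmm: "\<And>x. x \<in> Mor H \<Longrightarrow> bm x \<in> Mor R" using bm unfolding bij_betw_def by blast
  have bms: "\<exists>x\<in>Mor H. bm x = t" if t: "t \<in> Mor R" for t
  proof -
    have "t \<in> bm ` Mor H" using bm t unfolding bij_betw_def by simp
    then show ?thesis by (simp add: image_iff eq_commute)
  qed
  have cdc: "Cod R (bm f) = Dom R (bm g)" if "f \<in> Mor H" "g \<in> Mor H" "Cod H f = Dom H g" for f g
    using dom[of g] cod[of f] that by metis
  have idd: "Dom H (Idm H v) = v \<and> Cod H (Idm H v) = v" if v: "v \<in> Obj H" for v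
  proof -
    have i: "Idm H v \<in> Mor H" "bm (Idm H v) = Idm R (bo v)" using idm[OF v] by auto
    have "bo (Dom H (Idm H v)) = bo v" using dom[OF i(1)] i(2) CR bom[OF v] by simp
    moreover have "bo (Cod H (Idm H v)) = bo v" using cod[OF i(1)] i(2) CR bom[OF v] by simp
    ultimately show ?thesis using boi dom[OF i(1)] cod[OF i(1)] v by blast
  qed
  have cdom: "Dom H (Comp H g f) = Dom H f \<and> Cod H (Comp H g f) = Cod H g"
    if f: "f \<in> Mor H" and g: "g \<in> Mor H" and fg: "Cod H f = Dom H g" for f g
  proof -
    have c: "Comp H g f \<in> Mor H" "bm (Comp H g f) = Comp R (bm g) (bm f)" using comp[OF f g fg] by auto
    have e: "Cod R (bm f) = Dom R (bm g)" using cdc[OF f g fg] .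
    have "bo (Dom H (Comp H g f)) = bo (Dom H f)" using dom[OF c(1)] c(2) dom[OF f] CR bmm[OF f] bmm[OF g] e by simp
    moreover have "bo (Cod H (Comp H g f)) = bo (Cod H g)" using cod[OF c(1)] c(2) cod[OF g] CR bmm[OF f] bmm[OF g] e by simp
    ultimately show ?thesis using boi dom cod c(1) f g by blast
  qed
  have cat: "category H"
  proof -
    have 1: "\<forall>f\<in>Mor H. Dom H f \<in> Obj H \<and> Cod H f \<in> Obj H" using dom cod by blast
    have 2: "\<forall>x\<in>Obj H. Idm H x \<in> Mor H \<and> Dom H (Idm H x) = x \<and> Cod H (Idm H x) = x" using idm idd by blast
    have 3: "\<forall>f\<in>Mor H. \<forall>g\<in>Mor H. Cod H f = Dom H g \<longrightarrow>
         Comp H g f \<in> Mor H \<and> Dom H (Comp H g f) = Dom H f \<and> Cod H (Comp H g f) = Cod H g"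
      using comp cdom by blast
    have 4: "\<forall>f\<in>Mor H. Comp H f (Idm H (Dom H f)) = f \<and> Comp H (Idm H (Cod H f)) f = f"
    proof
      fix f assume f: "f \<in> Mor H"
      have d: "Dom H f \<in> Obj H" "Cod H f \<in> Obj H" using dom[OF f] cod[OF f] by auto
      have i1: "Idm H (Dom H f) \<in> Mor H" "Cod H (Idm H (Dom H f)) = Dom H f" using idm[OF d(1)] idd[OF d(1)] by auto
      have i2: "Idm H (Cod H f) \<in> Mor H" "Dom H (Idm H (Cod H f)) = Cod H f" using idm[OF d(2)] idd[OF d(2)] by auto
      have c1: "Comp H f (Idm H (Dom H f)) \<in> Mor H \<and> bm (Comp H f (Idm H (Dom H f))) = Comp R (bm f) (bm (Idm H (Dom H f)))"
        using comp[OF i1(1) f i1(2)] .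
      have c2: "Comp H (Idm H (Cod H f)) f \<in> Mor H \<and> bm (Comp H (Idm H (Cod H f)) f) = Comp R (bm (Idm H (Cod H f))) (bm f)"
        using comp[OF f i2(1) i2(2)[symmetric]] .
      have "bm (Comp H f (Idm H (Dom H f))) = bm f"
        using c1 idm[OF d(1)] dom[OF f] CR bmm[OF f] by simp
      moreover have "bm (Comp H (Idm H (Cod H f)) f) = bm f"
        using c2 idm[OF d(2)] cod[OF f] CR bmm[OF f] by simp
      ultimately show "Comp H f (Idm H (Dom H f)) = f \<and> Comp H (Idm H (Cod H f)) f = f"
        using bmi c1 c2 f by blast
    qed
    have 5: "\<forall>f\<in>Mor H. \<forall>g\<in>Mor H. \<forall>h\<in>Mor H. Cod H f = Dom H g \<longrightarrow> Cod H g = Dom H h \<longrightarrow>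
         Comp H h (Comp H g f) = Comp H (Comp H h g) f"
    proof (intro ballI impI)
      fix f g h assume f: "f \<in> Mor H" and g: "g \<in> Mor H" and h: "h \<in> Mor H"
        and fg: "Cod H f = Dom H g" and gh: "Cod H g = Dom H h"
      have gf: "Comp H g f \<in> Mor H" "bm (Comp H g f) = Comp R (bm g) (bm f)" using comp[OF f g fg] by auto
      have hg: "Comp H h g \<in> Mor H" "bm (Comp H h g) = Comp R (bm h) (bm g)" using comp[OF g h gh] by auto
      have c1: "Cod H (Comp H g f) = Dom H h" using cdom[OF f g fg] gh by simp
      have c2: "Cod H f = Dom H (Comp H h g)" using cdom[OF g h gh] fg by simp
      have l: "Comp H h (Comp H g f) \<in> Mor H" "bm (Comp H h (Comp H g f)) = Comp R (bm h) (Comp R (bm g) (bm f))"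
        using comp[OF gf(1) h c1] gf(2) by auto
      have r: "Comp H (Comp H h g) f \<in> Mor H" "bm (Comp H (Comp H h g) f) = Comp R (Comp R (bm h) (bm g)) (bm f)"
        using comp[OF f hg(1) c2] hg(2) by auto
      have "Comp R (bm h) (Comp R (bm g) (bm f)) = Comp R (Comp R (bm h) (bm g)) (bm f)"
        using cat_assoc[OF CR bmm[OF f] bmm[OF g] bmm[OF h] cdc[OF f g fg] cdc[OF g h gh]] .
      then show "Comp H h (Comp H g f) = Comp H (Comp H h g) f" using bmi l r by metis
    qed
    show ?thesis unfolding category_def using 1 2 3 4 5 by blast
  qed
  have inv: "\<exists>g. is_inverse H f g \<and> g \<in> Mor H \<and> bm g = ginv R (bm f)" if f: "f \<in> Mor H" for f
  proof -
    obtain g where g: "g \<in> Mor H" "bm g = ginv R (bm f)" using bms[of "ginv R (bm f)"] GR bmm[OF f] by auto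
    have dg: "Dom H g = Cod H f"
      using boi dom[OF g(1)] cod[OF f] g(2) GR bmm[OF f] by (metis ginv_dom)
    have cg: "Cod H g = Dom H f"
      using boi cod[OF g(1)] dom[OF f] g(2) GR bmm[OF f] by (metis ginv_cod)
    have d: "Dom H f \<in> Obj H" "Cod H f \<in> Obj H" using dom[OF f] cod[OF f] by auto
    have c1: "Comp H g f \<in> Mor H" "bm (Comp H g f) = Comp R (bm g) (bm f)" using comp[OF f g(1) dg[symmetric]] by auto
    have c2: "Comp H f g \<in> Mor H" "bm (Comp H f g) = Comp R (bm f) (bm g)" using comp[OF g(1) f cg] by auto
    have "bm (Comp H g f) = bm (Idm H (Dom H f))"
      using c1 g(2) GR bmm[OF f] idm[OF d(1)] dom[OF f] by simp
    then have e1: "Comp H g f = Idm H (Dom H f)" using bmi c1(1) idm[OF d(1)] by blast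
    have "bm (Comp H f g) = bm (Idm H (Cod H f))"
      using c2 g(2) GR bmm[OF f] idm[OF d(2)] cod[OF f] by simp
    then have e2: "Comp H f g = Idm H (Cod H f)" using bmi c2(1) idm[OF d(2)] by blast
    have "is_inverse H f g" unfolding is_inverse_def using g(1) dg cg e1 e2 by simp
    then show ?thesis using g by blast
  qed
  have gH: "groupoid H" unfolding groupoid_def using cat inv by blast
  have "ginv H f \<in> Mor H \<and> bm (ginv H f) = ginv R (bm f)" if f: "f \<in> Mor H" for f
  proof -
    obtain g where g: "is_inverse H f g" "g \<in> Mor H" "bm g = ginv R (bm f)" using inv[OF f] by blast
    have "ginv H f = g" using ginv_eq[OF gH f g(1)] .
    then show ?thesis using g by simp
  qed
  then show ?thesis using gH by blast
qed

context thin
begin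

lemma hom_idm: "x \<in> Obj C \<Longrightarrow> hom_of C x x = Idm C x"
  using hom_of_eq'[of "Idm C x" x x] CC by simp

lemma conn_hom:
  assumes c: "(x, y) \<in> conn C" and x: "x \<in> Obj C"
  shows "\<exists>m. m \<in> Mor C \<and> Dom C m = x \<and> Cod C m = y"
  using c unfolding conn_def
proof (induction rule: rtrancl_induct)
  case base then show ?case using x CC by (intro exI[of _ "Idm C x"]) simp
next
  case (step y z)
  obtain m where m: "m \<in> Mor C" "Dom C m = x" "Cod C m = y" using step.IH by blast
  obtain f where f: "f \<in> Mor C" "(y, z) = (Dom C f, Cod C f) \<or> (y, z) = (Cod C f, Dom C f)" using step.hyps(2) by blast
  show ?case
  proof (cases "(y, z) = (Dom C f, Cod C f)")
    case True
    then show ?thesis using m f CC by (intro exI[of _ "Comp C f m"]) (simp add: cat_comp)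
  next
    case False
    then have yz: "y = Cod C f" "z = Dom C f" using f by auto
    show ?thesis using m f yz G CC by (intro exI[of _ "Comp C (ginv C f) m"]) (simp add: cat_comp)
  qed
qed

definition bp where "bp x = (THE v. v \<in> Base X \<and> (x, v) \<in> conn C)"
definition uu where "uu x = hom_of C x (bp x)"
definition beta where "beta x = block_of S (uu x)"
definition bo where "bo v = block_of S (Idm C v)"
definition bm where "bm x = tri X (beta x)"
definition Hc :: "('o, 'o) cat" where
  "Hc = \<lparr> Obj = Base X, Mor = Obj C, Dom = (\<lambda>x. the_inv_into (Base X) bo (bsrc X (beta x))), Cod = bp,
          Idm = (\<lambda>v. v), Comp = (\<lambda>k f. the_inv_into (Obj C) bm (Comp (Rtil X) (bm k) (bm f))) \<rparr>"

lemma Hc_simps[simp]: "Obj Hc = Base X" "Mor Hc = Obj C" "Cod Hc = bp" "Idm Hc = (\<lambda>v. v)"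
  "Dom Hc = (\<lambda>x. the_inv_into (Base X) bo (bsrc X (beta x)))"
  "Comp Hc = (\<lambda>k f. the_inv_into (Obj C) bm (Comp (Rtil X) (bm k) (bm f)))"
  unfolding Hc_def by simp_all

lemma bp: assumes x: "x \<in> Obj C" shows "bp x \<in> Base X" "(x, bp x) \<in> conn C"
proof -
  have "bp x \<in> Base X \<and> (x, bp x) \<in> conn C" unfolding bp_def using theI'[OF base_uniq[OF x]] .
  then show "bp x \<in> Base X" "(x, bp x) \<in> conn C" by auto
qed

lemma bp_unique: "x \<in> Obj C \<Longrightarrow> v \<in> Base X \<Longrightarrow> (x, v) \<in> conn C \<Longrightarrow> bp x = v"
  using base_uniq bp by blast

lemma bp_obj: "x \<in> Obj C \<Longrightarrow> bp x \<in> Obj C" using bp base_obj by blast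

lemma bp_base: "v \<in> Base X \<Longrightarrow> bp v = v"
  using bp_unique[of v v] base_obj unfolding conn_def by blast

lemma bp_mor: assumes m: "m \<in> Mor C" shows "bp (Dom C m) = bp (Cod C m)"
proof -
  have y: "Cod C m \<in> Obj C" "Dom C m \<in> Obj C" using m CC by auto
  have e: "(Dom C m, Cod C m) \<in> conn C" unfolding conn_def using m by blast
  have "(Dom C m, bp (Cod C m)) \<in> conn C" using e bp(2)[OF y(1)] unfolding conn_def by simp
  then show ?thesis using bp_unique[OF y(2) bp(1)[OF y(1)]] by simp
qed

lemma uu: assumes x: "x \<in> Obj C" shows "uu x \<in> Mor C" "Dom C (uu x) = x" "Cod C (uu x) = bp x"
proof -
  obtain m where m: "m \<in> Mor C" "Dom C m = x" "Cod C m = bp x" using conn_hom[OF bp(2)[OF x] x] by blast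
  have "uu x = m" unfolding uu_def using hom_of_eq'[OF m] .
  then show "uu x \<in> Mor C" "Dom C (uu x) = x" "Cod C (uu x) = bp x" using m by simp_all
qed

lemma uu_base: "v \<in> Base X \<Longrightarrow> uu v = Idm C v"
  unfolding uu_def using bp_base hom_idm base_obj by auto

lemma beta_S: "x \<in> Obj C \<Longrightarrow> beta x \<in> S" unfolding beta_def using uu blk_in by blast
lemma uu_beta: "x \<in> Obj C \<Longrightarrow> uu x \<in> beta x" unfolding beta_def using uu blk_mem by blast

lemma beta_tgt: "x \<in> Obj C \<Longrightarrow> btgt X (beta x) = bo (bp x)"
  unfolding bo_def using tgt_eq[OF beta_S uu_beta] uu by simp

lemma beta_src: "x \<in> Obj C \<Longrightarrow> bsrc X (beta x) = bo x"
  unfolding bo_def using src_eq[OF beta_S uu_beta] uu by simp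

lemma bo_bij': "bij_betw bo (Base X) (S0 X)" using bo_bij unfolding bo_def[abs_def] .

lemma bo_inj': "v \<in> Base X \<Longrightarrow> w \<in> Base X \<Longrightarrow> bo v = bo w \<Longrightarrow> v = w"
  using bo_bij' unfolding bij_betw_def inj_on_def by blast

lemma S0_bo: "\<alpha> \<in> S0 X \<Longrightarrow> \<exists>v\<in>Base X. bo v = \<alpha>"
  using bo_bij' unfolding bij_betw_def by (metis imageE)

lemma bo_S0: "v \<in> Base X \<Longrightarrow> bo v \<in> S0 X" using bo_bij' unfolding bij_betw_def by blast

lemma hom_conn: assumes x: "x \<in> Obj C" and y: "y \<in> Obj C" and e: "bp x = bp y"
  shows "hom_of C x y \<in> Mor C \<and> Dom C (hom_of C x y) = x \<and> Cod C (hom_of C x y) = y"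
proof -
  define m where "m = Comp C (ginv C (uu y)) (uu x)"
  have mm: "m \<in> Mor C" "Dom C m = x" "Cod C m = y"
    unfolding m_def using uu[OF x] uu[OF y] e G CC by (simp_all add: cat_comp)
  show ?thesis using hom_of_eq'[OF mm] mm by simp
qed

lemma bm_bij: "bij_betw bm (Obj C) (Mor (Rtil X))"
proof -
  have inj: "inj_on bm (Obj C)"
  proof (rule inj_onI)
    fix x y assume x: "x \<in> Obj C" and y: "y \<in> Obj C" and e: "bm x = bm y"
    have b: "beta x = beta y" using e unfolding bm_def by (rule tri_inj)
    have "bo (bp x) = bo (bp y)" using beta_tgt[OF x] beta_tgt[OF y] b by simp
    then have pp: "bp x = bp y" by (rule bo_inj'[OF bp(1)[OF x] bp(1)[OF y]])
    have ux: "uu x \<in> beta y" using uu_beta[OF x] b by simp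
    have cc: "Cod C (uu x) = Cod C (uu y)" using uu(3)[OF x] uu(3)[OF y] pp by simp
    have "uu x = uu y" by (rule st_cod[OF beta_S[OF y] ux uu_beta[OF y] cc])
    then have "Dom C (uu x) = Dom C (uu y)" by simp
    then show "x = y" using uu(2)[OF x] uu(2)[OF y] by simp
  qed
  have img: "bm ` Obj C = Mor (Rtil X)"
  proof
    show "bm ` Obj C \<subseteq> Mor (Rtil X)"
    proof
      fix t assume "t \<in> bm ` Obj C"
      then obtain x where x: "x \<in> Obj C" "t = bm x" by blast
      show "t \<in> Mor (Rtil X)" unfolding x(2) bm_def by (rule tri_mor[OF beta_S[OF x(1)]])
    qed
    show "Mor (Rtil X) \<subseteq> bm ` Obj C"
    proof
      fix t assume "t \<in> Mor (Rtil X)"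
      then obtain \<sigma> where s: "\<sigma> \<in> S" "t = tri X \<sigma>" using Rtil_mor_iff by blast
      obtain v where v: "v \<in> Base X" "bo v = btgt X \<sigma>" using S0_bo[OF tgt_S0[OF s(1)]] by blast
      have vo: "v \<in> Obj C" using v base_obj by blast
      have "Idm C v \<in> btgt X \<sigma>" using v(2)[symmetric] idm_blk[OF vo] unfolding bo_def by simp
      then obtain m where m: "m \<in> \<sigma>" "Cod C m = v" using exist_cod[OF s(1) vo] by blast
      have mm: "m \<in> Mor C" using S_mor[OF s(1) m(1)] .
      define x where "x = Dom C m"
      have xo: "x \<in> Obj C" using mm CC x_def by simp
      have "bp x = v" using bp_mor[OF mm] bp_base[OF v(1)] m(2) x_def by simp
      then have "uu x = m" unfolding uu_def using hom_of_eq'[OF mm] x_def m(2) by simp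
      then have "beta x = \<sigma>" unfolding beta_def using blk_eq[OF s(1) m(1)] by simp
      then show "t \<in> bm ` Obj C" unfolding bm_def using s xo by blast
    qed
  qed
  show ?thesis unfolding bij_betw_def using inj img by blast
qed

lemma bm_inj: "x \<in> Obj C \<Longrightarrow> y \<in> Obj C \<Longrightarrow> bm x = bm y \<Longrightarrow> x = y"
  using bm_bij unfolding bij_betw_def inj_on_def by blast

lemma Hc_transport: "groupoid Hc \<and> (\<forall>f\<in>Mor Hc. ginv Hc f \<in> Mor Hc \<and> bm (ginv Hc f) = ginv (Rtil X) (bm f))"
proof (rule transport_groupoid[OF R_groupoid])
  show "bij_betw bo (Obj Hc) (Obj (Rtil X))" using bo_bij' by simp
  show "bij_betw bm (Mor Hc) (Mor (Rtil X))" using bm_bij by simp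
  have inj: "inj_on bo (Base X)" using bo_bij' unfolding bij_betw_def by blast
  show "Dom Hc x \<in> Obj Hc \<and> bo (Dom Hc x) = Dom (Rtil X) (bm x)" if x: "x \<in> Mor Hc" for x
  proof -
    have xo: "x \<in> Obj C" using x by simp
    have i: "bsrc X (beta x) \<in> bo ` Base X" using src_S0[OF beta_S[OF xo]] bo_bij' unfolding bij_betw_def by blast
    show ?thesis using the_inv_into_into[OF inj i] f_the_inv_into_f[OF inj i] unfolding bm_def
      by (simp add: tri_def)
  qed
  show "Cod Hc x \<in> Obj Hc \<and> bo (Cod Hc x) = Cod (Rtil X) (bm x)" if x: "x \<in> Mor Hc" for x
    using x bp beta_tgt unfolding bm_def by (simp add: tri_def)
  show "Idm Hc v \<in> Mor Hc \<and> bm (Idm Hc v) = Idm (Rtil X) (bo v)" if v: "v \<in> Obj Hc" for v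
  proof -
    have vb: "v \<in> Base X" using v by simp
    have "beta v = bo v" unfolding beta_def bo_def using uu_base[OF vb] by simp
    then have "bm v = tri X (bo v)" unfolding bm_def by simp
    also have "\<dots> = (bo v, bo v, bo v)" using tri_S0[OF bo_S0[OF vb]] .
    finally show ?thesis using vb base_obj by auto
  qed
  show "Comp Hc g f \<in> Mor Hc \<and> bm (Comp Hc g f) = Comp (Rtil X) (bm g) (bm f)"
    if f: "f \<in> Mor Hc" and g: "g \<in> Mor Hc" and fg: "Cod Hc f = Dom Hc g" for f g
  proof -
    have fo: "f \<in> Obj C" "g \<in> Obj C" using f g by auto
    have bmo: "bm f \<in> Mor (Rtil X)" "bm g \<in> Mor (Rtil X)" using bm_bij fo unfolding bij_betw_def by auto
    have dg: "bo (Dom Hc g) = Dom (Rtil X) (bm g)"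
    proof -
      have i: "bsrc X (beta g) \<in> bo ` Base X" using src_S0[OF beta_S[OF fo(2)]] bo_bij' unfolding bij_betw_def by blast
      show ?thesis using f_the_inv_into_f[OF inj i] unfolding bm_def by (simp add: tri_def)
    qed
    have "Cod (Rtil X) (bm f) = Dom (Rtil X) (bm g)"
      using fg dg beta_tgt[OF fo(1)] unfolding bm_def by (simp add: tri_def)
    then have cm: "Comp (Rtil X) (bm g) (bm f) \<in> Mor (Rtil X)" using cat_comp[OF R_category bmo] by simp
    then have i: "Comp (Rtil X) (bm g) (bm f) \<in> bm ` Obj C" using bm_bij unfolding bij_betw_def by simp
    have inj2: "inj_on bm (Obj C)" using bm_bij unfolding bij_betw_def by blast
    show ?thesis using the_inv_into_into[OF inj2 i] f_the_inv_into_f[OF inj2 i] by simp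
  qed
qed

lemma Hc_gpd: "groupoid Hc" using Hc_transport by blast
lemma Hc_ginv: "x \<in> Obj C \<Longrightarrow> ginv Hc x \<in> Obj C \<and> bm (ginv Hc x) = ginv (Rtil X) (bm x)"
  using Hc_transport by simp

lemma key:
  assumes k: "k \<in> Obj C" and l: "l \<in> Obj C" and e: "bp k = bp l"
  shows "Comp Hc (ginv Hc k) l \<in> Obj C \<and> bm (Comp Hc (ginv Hc k) l) = tri X (block_of S (hom_of C l k))"
proof -
  have gk: "ginv Hc k \<in> Obj C" "bm (ginv Hc k) = tri X (ginv C ` beta k)"
    using Hc_ginv[OF k] R_ginv[OF beta_S[OF k]] unfolding bm_def by auto
  have dk: "Dom Hc (ginv Hc k) = Cod Hc k" using ginv_dom[OF Hc_gpd] k by simp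
  have c: "Cod Hc l = Dom Hc (ginv Hc k)" using dk e by simp
  have tr: "groupoid Hc \<and> (\<forall>f\<in>Mor Hc. ginv Hc f \<in> Mor Hc \<and> bm (ginv Hc f) = ginv (Rtil X) (bm f))" using Hc_transport .
  have cm: "Comp Hc (ginv Hc k) l \<in> Obj C \<and> bm (Comp Hc (ginv Hc k) l) = Comp (Rtil X) (bm (ginv Hc k)) (bm l)"
  proof -
    have i: "Comp (Rtil X) (bm (ginv Hc k)) (bm l) \<in> bm ` Obj C"
    proof -
      have bmo: "bm l \<in> Mor (Rtil X)" "bm (ginv Hc k) \<in> Mor (Rtil X)"
        using tri_mor[OF beta_S[OF l]] tri_mor[OF beta_S[OF gk(1)]] unfolding bm_def by auto
      have inv: "Dom (Rtil X) (tri X (ginv C ` beta k)) = Cod (Rtil X) (tri X (beta k))"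
        using R_inverse[OF beta_S[OF k]] unfolding is_inverse_def by blast
      have c1: "Cod (Rtil X) (tri X (beta k)) = bo (bp k)" using beta_tgt[OF k] by (simp add: tri_def)
      have c2: "Cod (Rtil X) (bm l) = bo (bp l)" using beta_tgt[OF l] unfolding bm_def by (simp add: tri_def)
      have "Cod (Rtil X) (bm l) = Dom (Rtil X) (bm (ginv Hc k))"
        using inv c1 c2 gk(2) e by simp
      then have "Comp (Rtil X) (bm (ginv Hc k)) (bm l) \<in> Mor (Rtil X)" using cat_comp[OF R_category bmo] by simp
      then show ?thesis using bm_bij unfolding bij_betw_def by simp
    qed
    have inj2: "inj_on bm (Obj C)" using bm_bij unfolding bij_betw_def by blast
    show ?thesis using the_inv_into_into[OF inj2 i] f_the_inv_into_f[OF inj2 i] by simp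
  qed
  have a: "ginv C (uu k) \<in> ginv C ` beta k" using uu_beta[OF k] by simp
  have ab: "Dom C (ginv C (uu k)) = Cod C (uu l)" using uu[OF k] uu[OF l] e G by simp
  have e1: "Comp (Rtil X) (bm (ginv Hc k)) (bm l) = tri X (block_of S (Comp C (ginv C (uu k)) (uu l)))"
    unfolding gk(2) bm_def[of l] by (rule R_comp[OF beta_S[OF l] T_blk[OF beta_S[OF k]] a uu_beta[OF l] ab])
  have mm: "Comp C (ginv C (uu k)) (uu l) \<in> Mor C" "Dom C (Comp C (ginv C (uu k)) (uu l)) = l"
     "Cod C (Comp C (ginv C (uu k)) (uu l)) = k"
    using uu[OF k] uu[OF l] e G CC by (simp_all add: cat_comp)
  have e2: "hom_of C l k = Comp C (ginv C (uu k)) (uu l)" using hom_of_eq'[OF mm] .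
  show ?thesis using cm e1 e2 by simp
qed

end

context thin
begin

definition Fm where "Fm = (restrict id (Obj C), restrict (\<lambda>(h, g). hom_of C g h) (Mor (Stil_cat Hc)))"
definition Gm where "Gm = (restrict id (Obj C), restrict (\<lambda>m. (Cod C m, Dom C m)) (Mor C))"

lemma SCm: "(h, g) \<in> Mor (Stil_cat Hc) \<longleftrightarrow> h \<in> Obj C \<and> g \<in> Obj C \<and> bp h = bp g"
  by simp

lemma Fm_morph: "smd_morph (Stil Hc) X Fm"
proof -
  have ext: "fst Fm \<in> extensional (Obj (Stil_cat Hc))" "snd Fm \<in> extensional (Mor (Stil_cat Hc))"
    unfolding Fm_def by simp_all
  have o: "\<forall>x\<in>Obj (Stil_cat Hc). fst Fm x \<in> Obj C" unfolding Fm_def by simp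
  have m: "\<forall>p\<in>Mor (Stil_cat Hc). snd Fm p \<in> Mor C \<and> Dom C (snd Fm p) = fst Fm (Dom (Stil_cat Hc) p) \<and>
      Cod C (snd Fm p) = fst Fm (Cod (Stil_cat Hc) p)"
  proof
    fix p assume p: "p \<in> Mor (Stil_cat Hc)"
    then obtain h g where hg: "p = (h, g)" "h \<in> Obj C" "g \<in> Obj C" "bp h = bp g" by auto
    show "snd Fm p \<in> Mor C \<and> Dom C (snd Fm p) = fst Fm (Dom (Stil_cat Hc) p) \<and> Cod C (snd Fm p) = fst Fm (Cod (Stil_cat Hc) p)"
      unfolding Fm_def using p hg hom_conn[of g h] by simp
  qed
  have i: "\<forall>x\<in>Obj (Stil_cat Hc). snd Fm (Idm (Stil_cat Hc) x) = Idm C (fst Fm x)"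
    unfolding Fm_def using hom_idm by simp
  have c: "snd Fm (Comp (Stil_cat Hc) q p) = Comp C (snd Fm q) (snd Fm p)"
    if p: "p \<in> Mor (Stil_cat Hc)" and q: "q \<in> Mor (Stil_cat Hc)" and pq: "Cod (Stil_cat Hc) p = Dom (Stil_cat Hc) q" for p q
  proof -
    obtain a b where ab: "q = (a, b)" "a \<in> Obj C" "b \<in> Obj C" "bp a = bp b" using q by auto
    obtain b' c where bc: "p = (b', c)" "b' \<in> Obj C" "c \<in> Obj C" "bp b' = bp c" using p by auto
    have bb: "b' = b" using pq ab bc by simp
    have h1: "hom_of C c b \<in> Mor C \<and> Dom C (hom_of C c b) = c \<and> Cod C (hom_of C c b) = b"
      using hom_conn[of c b] bc bb by simp
    have h2: "hom_of C b a \<in> Mor C \<and> Dom C (hom_of C b a) = b \<and> Cod C (hom_of C b a) = a"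
      using hom_conn[of b a] ab by simp
    have h3: "hom_of C c a \<in> Mor C \<and> Dom C (hom_of C c a) = c \<and> Cod C (hom_of C c a) = a"
      using hom_conn[of c a] ab bc bb by simp
    have cm: "Comp C (hom_of C b a) (hom_of C c b) \<in> Mor C"
      "Dom C (Comp C (hom_of C b a) (hom_of C c b)) = c"
      "Cod C (Comp C (hom_of C b a) (hom_of C c b)) = a"
      using h1 h2 CC by (simp_all add: cat_comp)
    have "hom_of C c a = Comp C (hom_of C b a) (hom_of C c b)"
      using thin_hom[OF _ cm(1), of "hom_of C c a"] h3 cm by simp
    moreover have "(a, c) \<in> Mor (Stil_cat Hc)" using ab bc bb by simp
    ultimately show ?thesis unfolding Fm_def using ab bc bb p q by simp
  qed
  have isf: "is_functor (Cat (Stil Hc)) C Fm" unfolding is_functor_def Stil_simps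
    apply (intro conjI Stil_category CC ext o m i)
    using c by blast
  have blk: "\<forall>\<sigma>\<in>Blocks (Stil Hc). \<exists>\<tau>\<in>S. snd Fm ` \<sigma> \<subseteq> \<tau>"
  proof
    fix \<sigma> assume "\<sigma> \<in> Blocks (Stil Hc)"
    then obtain f where f: "f \<in> Obj C" "\<sigma> = Bk Hc f" by auto
    have "snd Fm ` \<sigma> \<subseteq> beta f"
    proof
      fix q assume "q \<in> snd Fm ` \<sigma>"
      then obtain k l where kl: "(k, l) \<in> Bk Hc f" "q = snd Fm (k, l)" using f by auto
      have kk: "k \<in> Obj C" "l \<in> Obj C" "bp k = bp l" "Comp Hc (ginv Hc k) l = f" using kl(1) unfolding Bk_def by auto
      have "bm f = tri X (block_of S (hom_of C l k))" using key[OF kk(1,2,3)] kk(4) by simp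
      then have "beta f = block_of S (hom_of C l k)" unfolding bm_def by (rule tri_inj)
      moreover have "hom_of C l k \<in> Mor C" using hom_conn[of l k] kk by simp
      ultimately have "hom_of C l k \<in> beta f" using blk_mem by simp
      moreover have "q = hom_of C l k" using kl(2) kk unfolding Fm_def by simp
      ultimately show "q \<in> beta f" by simp
    qed
    then show "\<exists>\<tau>\<in>S. snd Fm ` \<sigma> \<subseteq> \<tau>" using beta_S[OF f(1)] by blast
  qed
  have tob: "\<forall>x\<in>Obj (Cat (Stil Hc)). fst Fm (Tob (Stil Hc) x) = Tob X (fst Fm x)"
    unfolding Fm_def using Tob_id by simp
  have tm: "\<forall>p\<in>Mor (Cat (Stil Hc)). snd Fm (Tmor (Stil Hc) p) = Tmor X (snd Fm p)"
  proof
    fix p assume p: "p \<in> Mor (Cat (Stil Hc))"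
    then obtain h g where hg: "p = (h, g)" "h \<in> Obj C" "g \<in> Obj C" "bp h = bp g" by auto
    have h1: "hom_of C g h \<in> Mor C \<and> Dom C (hom_of C g h) = g \<and> Cod C (hom_of C g h) = h" using hom_conn hg by simp
    have h2: "hom_of C h g \<in> Mor C \<and> Dom C (hom_of C h g) = h \<and> Cod C (hom_of C h g) = g" using hom_conn hg by simp
    have "hom_of C h g = ginv C (hom_of C g h)"
      using thin_hom[of "hom_of C h g" "ginv C (hom_of C g h)"] h1 h2 G by simp
    then show "snd Fm (Tmor (Stil Hc) p) = Tmor X (snd Fm p)" unfolding Fm_def using hg Tmor_eq h1 by simp
  qed
  have base: "fst Fm ` Base (Stil Hc) \<subseteq> Base X" unfolding Fm_def using base_obj by auto
  show ?thesis unfolding smd_morph_def by (intro conjI isf blk tob tm base)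
qed

lemma Gm_morph: "smd_morph X (Stil Hc) Gm"
proof -
  have ext: "fst Gm \<in> extensional (Obj C)" "snd Gm \<in> extensional (Mor C)" unfolding Gm_def by simp_all
  have o: "\<forall>x\<in>Obj C. fst Gm x \<in> Obj (Stil_cat Hc)" unfolding Gm_def by simp
  have m: "\<forall>f\<in>Mor C. snd Gm f \<in> Mor (Stil_cat Hc) \<and> Dom (Stil_cat Hc) (snd Gm f) = fst Gm (Dom C f) \<and>
      Cod (Stil_cat Hc) (snd Gm f) = fst Gm (Cod C f)"
    unfolding Gm_def using bp_mor CC by simp
  have i: "\<forall>x\<in>Obj C. snd Gm (Idm C x) = Idm (Stil_cat Hc) (fst Gm x)" unfolding Gm_def using CC by simp
  have c: "\<forall>f\<in>Mor C. \<forall>g\<in>Mor C. Cod C f = Dom C g \<longrightarrow> snd Gm (Comp C g f) = Comp (Stil_cat Hc) (snd Gm g) (snd Gm f)"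
    unfolding Gm_def using CC by (simp add: cat_comp)
  have isf: "is_functor (Cat X) (Cat (Stil Hc)) Gm" unfolding is_functor_def Stil_simps
    by (intro conjI Stil_category CC ext o m i c)
  have blk: "\<forall>\<sigma>\<in>S. \<exists>\<tau>\<in>Blocks (Stil Hc). snd Gm ` \<sigma> \<subseteq> \<tau>"
  proof
    fix \<sigma> assume s: "\<sigma> \<in> S"
    have "tri X \<sigma> \<in> bm ` Obj C" using tri_mor[OF s] bm_bij unfolding bij_betw_def by simp
    then obtain f where f: "f \<in> Obj C" "bm f = tri X \<sigma>" by (metis imageE)
    have bf: "beta f = \<sigma>" using f(2) unfolding bm_def by (rule tri_inj)
    have "snd Gm ` \<sigma> \<subseteq> Bk Hc f"
    proof
      fix q assume "q \<in> snd Gm ` \<sigma>"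
      then obtain m where mq: "m \<in> \<sigma>" "q = snd Gm m" by blast
      have mm: "m \<in> Mor C" using S_mor[OF s mq(1)] .
      have d: "Cod C m \<in> Obj C" "Dom C m \<in> Obj C" "bp (Cod C m) = bp (Dom C m)" using mm CC bp_mor[OF mm] by auto
      have "bm (Comp Hc (ginv Hc (Cod C m)) (Dom C m)) = tri X (block_of S (hom_of C (Dom C m) (Cod C m)))"
        using key[OF d] by simp
      also have "\<dots> = tri X \<sigma>" using hom_of_eq[OF mm] blk_eq[OF s mq(1)] by simp
      finally have "bm (Comp Hc (ginv Hc (Cod C m)) (Dom C m)) = bm f" using f(2) by simp
      then have e: "Comp Hc (ginv Hc (Cod C m)) (Dom C m) = f" using bm_inj key[OF d] f(1) by blast
      show "q \<in> Bk Hc f" unfolding Bk_def using mq mm d e unfolding Gm_def by simp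
    qed
    then show "\<exists>\<tau>\<in>Blocks (Stil Hc). snd Gm ` \<sigma> \<subseteq> \<tau>" using f(1) by auto
  qed
  have tob: "\<forall>x\<in>Obj C. fst Gm (Tob X x) = Tob (Stil Hc) (fst Gm x)" unfolding Gm_def using Tob_id by simp
  have tm: "\<forall>f\<in>Mor C. snd Gm (Tmor X f) = Tmor (Stil Hc) (snd Gm f)" unfolding Gm_def using Tmor_eq G by simp
  have base: "fst Gm ` Base X \<subseteq> Base (Stil Hc)" unfolding Gm_def using base_obj by auto
  show ?thesis unfolding smd_morph_def by (intro conjI isf blk tob tm base)
qed

lemma ess_surj: "\<exists>H :: ('o, 'o) cat. groupoid H \<and> smd_iso (Stil H) X"
proof -
  have 1: "fcomp (Cat (Stil Hc)) Gm Fm = fid (Cat (Stil Hc))"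
  proof -
    have a: "restrict (fst Gm \<circ> fst Fm) (Obj C) = restrict id (Obj C)"
      unfolding Gm_def Fm_def by (rule ext) simp
    have b: "restrict (snd Gm \<circ> snd Fm) (Mor (Stil_cat Hc)) = restrict id (Mor (Stil_cat Hc))"
    proof
      fix p show "restrict (snd Gm \<circ> snd Fm) (Mor (Stil_cat Hc)) p = restrict id (Mor (Stil_cat Hc)) p"
      proof (cases "p \<in> Mor (Stil_cat Hc)")
        case True
        then obtain h g where hg: "p = (h, g)" "h \<in> Obj C" "g \<in> Obj C" "bp h = bp g" by auto
        have h1: "hom_of C g h \<in> Mor C \<and> Dom C (hom_of C g h) = g \<and> Cod C (hom_of C g h) = h" using hom_conn hg by simp
        show ?thesis unfolding Gm_def Fm_def using True hg h1 by simp
      next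
        case False then show ?thesis by simp
      qed
    qed
    show ?thesis unfolding fcomp_def fid_def using a b by simp
  qed
  have 2: "fcomp (Cat X) Fm Gm = fid (Cat X)"
  proof -
    have a: "restrict (fst Fm \<circ> fst Gm) (Obj C) = restrict id (Obj C)"
      unfolding Gm_def Fm_def by (rule ext) simp
    have b: "restrict (snd Fm \<circ> snd Gm) (Mor C) = restrict id (Mor C)"
    proof
      fix m show "restrict (snd Fm \<circ> snd Gm) (Mor C) m = restrict id (Mor C) m"
      proof (cases "m \<in> Mor C")
        case True
        have "(Cod C m, Dom C m) \<in> Mor (Stil_cat Hc)" using True CC bp_mor[OF True] by simp
        then show ?thesis unfolding Gm_def Fm_def using True hom_of_eq[OF True] by simp
      next
        case False then show ?thesis by simp
      qed
    qed
    show ?thesis unfolding fcomp_def fid_def using a b by simp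
  qed
  have "smd_iso (Stil Hc) X" unfolding smd_iso_def smd_hom_def
    using Fm_morph Gm_morph 1 2 by blast
  then show ?thesis using Hc_gpd by blast
qed

end

theorem theorem4p11:
  shows
  "\<comment> \<open>S~ is a functor Gpd -> (tASmd)_0\<close>
   (\<forall>H :: ('o,'m) cat. groupoid H \<longrightarrow> thin_smd (Stil H)) \<and>
   (\<forall>(H :: ('o,'m) cat) (K :: ('o2,'m2) cat) F.
      groupoid H \<longrightarrow> groupoid K \<longrightarrow> F \<in> gpd_hom H K \<longrightarrow>
      Stil_fun H F \<in> smd_hom (Stil H) (Stil K)) \<and>
   (\<forall>H :: ('o,'m) cat. groupoid H \<longrightarrow> Stil_fun H (fid H) = fid (Cat (Stil H))) \<and>
   (\<forall>(H :: ('o,'m) cat) (K :: ('o2,'m2) cat) (L :: ('o3,'m3) cat) F G.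
      groupoid H \<longrightarrow> groupoid K \<longrightarrow> groupoid L \<longrightarrow> F \<in> gpd_hom H K \<longrightarrow> G \<in> gpd_hom K L \<longrightarrow>
      Stil_fun H (fcomp H G F) = fcomp (Cat (Stil H)) (Stil_fun K G) (Stil_fun H F)) \<and>
   \<comment> \<open>S~ is an equivalence: fully faithful and essentially surjective\<close>
   (\<forall>(H :: ('o,'m) cat) (K :: ('o2,'m2) cat).
      groupoid H \<longrightarrow> groupoid K \<longrightarrow>
      bij_betw (Stil_fun H) (gpd_hom H K) (smd_hom (Stil H) (Stil K))) \<and>
   (\<forall>X :: ('p,'n) schemoid. thin_smd X \<longrightarrow>
      (\<exists>H :: ('p,'p) cat. groupoid H \<and> smd_iso (Stil H) X)) \<and>
   \<comment> \<open>R~ is a functor (tASmd)_0 -> Gpd\<close>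
   (\<forall>X :: ('p,'n) schemoid. thin_smd X \<longrightarrow> groupoid (Rtil X)) \<and>
   (\<forall>(X :: ('p,'n) schemoid) (Y :: ('p2,'n2) schemoid) F.
      thin_smd X \<longrightarrow> thin_smd Y \<longrightarrow> F \<in> smd_hom X Y \<longrightarrow>
      Rtil_fun X Y F \<in> gpd_hom (Rtil X) (Rtil Y)) \<and>
   (\<forall>X :: ('p,'n) schemoid. thin_smd X \<longrightarrow> Rtil_fun X X (fid (Cat X)) = fid (Rtil X)) \<and>
   (\<forall>(X :: ('p,'n) schemoid) (Y :: ('p2,'n2) schemoid) (Z :: ('p3,'n3) schemoid) F G.
      thin_smd X \<longrightarrow> thin_smd Y \<longrightarrow> thin_smd Z \<longrightarrow> F \<in> smd_hom X Y \<longrightarrow> G \<in> smd_hom Y Z \<longrightarrow>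
      Rtil_fun X Z (fcomp (Cat X) G F) = fcomp (Rtil X) (Rtil_fun Y Z G) (Rtil_fun X Y F)) \<and>
   \<comment> \<open>R~ is right adjoint to S~: natural bijection Hom(S~ H, X) = Hom(H, R~ X)\<close>
   (\<exists>\<phi> :: ('o,'m) cat \<Rightarrow> ('p,'n) schemoid \<Rightarrow> ('m \<Rightarrow> 'p) \<times> ('m \<times> 'm \<Rightarrow> 'n)
            \<Rightarrow> ('o \<Rightarrow> 'n set) \<times> ('m \<Rightarrow> 'n set \<times> 'n set \<times> 'n set).
      (\<forall>H X. groupoid H \<longrightarrow> thin_smd X \<longrightarrow>
         bij_betw (\<phi> H X) (smd_hom (Stil H) X) (gpd_hom H (Rtil X))) \<and>
      (\<forall>H H' X X' F G k. groupoid H \<longrightarrow> groupoid H' \<longrightarrow> thin_smd X \<longrightarrow> thin_smd X' \<longrightarrow>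
         F \<in> gpd_hom H' H \<longrightarrow> G \<in> smd_hom X X' \<longrightarrow> k \<in> smd_hom (Stil H) X \<longrightarrow>
         \<phi> H' X' (fcomp (Cat (Stil H')) G (fcomp (Cat (Stil H')) k (Stil_fun H' F)))
           = fcomp H' (Rtil_fun X X' G) (fcomp H' (\<phi> H X k) F)))"
proof -
  have p1: "\<forall>H :: ('o,'m) cat. groupoid H \<longrightarrow> thin_smd (Stil H)" using Stil_thin by blast
  have p2: "\<forall>(H :: ('o,'m) cat) (K :: ('o2,'m2) cat) F.
      groupoid H \<longrightarrow> groupoid K \<longrightarrow> F \<in> gpd_hom H K \<longrightarrow>
      Stil_fun H F \<in> smd_hom (Stil H) (Stil K)"
    unfolding gpd_hom_def smd_hom_def using Stil_fun_morph by blast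
  have p3: "\<forall>H :: ('o,'m) cat. groupoid H \<longrightarrow> Stil_fun H (fid H) = fid (Cat (Stil H))"
    using Stil_fun_id by blast
  have p4: "\<forall>(H :: ('o,'m) cat) (K :: ('o2,'m2) cat) (L :: ('o3,'m3) cat) F G.
      groupoid H \<longrightarrow> groupoid K \<longrightarrow> groupoid L \<longrightarrow> F \<in> gpd_hom H K \<longrightarrow> G \<in> gpd_hom K L \<longrightarrow>
      Stil_fun H (fcomp H G F) = fcomp (Cat (Stil H)) (Stil_fun K G) (Stil_fun H F)"
    unfolding gpd_hom_def using Stil_fun_comp by blast
  have p5: "\<forall>(H :: ('o,'m) cat) (K :: ('o2,'m2) cat).
      groupoid H \<longrightarrow> groupoid K \<longrightarrow>
      bij_betw (Stil_fun H) (gpd_hom H K) (smd_hom (Stil H) (Stil K))"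
    using Stil_fun_bij by blast
  have p6: "\<forall>X :: ('p,'n) schemoid. thin_smd X \<longrightarrow>
      (\<exists>H :: ('p,'p) cat. groupoid H \<and> smd_iso (Stil H) X)"
  proof (intro allI impI)
    fix X :: "('p,'n) schemoid" assume X: "thin_smd X"
    interpret T: thin X by (rule thin.intro) (rule X)
    show "\<exists>H :: ('p,'p) cat. groupoid H \<and> smd_iso (Stil H) X" by (rule T.ess_surj)
  qed
  have p7: "\<forall>X :: ('p,'n) schemoid. thin_smd X \<longrightarrow> groupoid (Rtil X)"
  proof (intro allI impI)
    fix X :: "('p,'n) schemoid" assume X: "thin_smd X"
    interpret T: thin X by (rule thin.intro) (rule X)
    show "groupoid (Rtil X)" by (rule T.R_groupoid)
  qed
  have p8: "\<forall>(X :: ('p,'n) schemoid) (Y :: ('p2,'n2) schemoid) F.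
      thin_smd X \<longrightarrow> thin_smd Y \<longrightarrow> F \<in> smd_hom X Y \<longrightarrow>
      Rtil_fun X Y F \<in> gpd_hom (Rtil X) (Rtil Y)"
  proof (intro allI impI)
    fix X :: "('p,'n) schemoid" and Y :: "('p2,'n2) schemoid" and F
    assume X: "thin_smd X" and Y: "thin_smd Y" and F: "F \<in> smd_hom X Y"
    interpret M: thin_morph X Y F
      by (intro thin_morph.intro thin.intro thin_morph_axioms.intro X Y) (use F in \<open>simp add: smd_hom_def\<close>)
    show "Rtil_fun X Y F \<in> gpd_hom (Rtil X) (Rtil Y)" unfolding gpd_hom_def using M.RF_functor by simp
  qed
  have p9: "\<forall>X :: ('p,'n) schemoid. thin_smd X \<longrightarrow> Rtil_fun X X (fid (Cat X)) = fid (Rtil X)"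
    using RF_id by blast
  have p10: "\<forall>(X :: ('p,'n) schemoid) (Y :: ('p2,'n2) schemoid) (Z :: ('p3,'n3) schemoid) F G.
      thin_smd X \<longrightarrow> thin_smd Y \<longrightarrow> thin_smd Z \<longrightarrow> F \<in> smd_hom X Y \<longrightarrow> G \<in> smd_hom Y Z \<longrightarrow>
      Rtil_fun X Z (fcomp (Cat X) G F) = fcomp (Rtil X) (Rtil_fun Y Z G) (Rtil_fun X Y F)"
    unfolding smd_hom_def using RF_comp by blast
  have p11: "\<exists>\<phi> :: ('o,'m) cat \<Rightarrow> ('p,'n) schemoid \<Rightarrow> ('m \<Rightarrow> 'p) \<times> ('m \<times> 'm \<Rightarrow> 'n)
            \<Rightarrow> ('o \<Rightarrow> 'n set) \<times> ('m \<Rightarrow> 'n set \<times> 'n set \<times> 'n set).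
      (\<forall>H X. groupoid H \<longrightarrow> thin_smd X \<longrightarrow>
         bij_betw (\<phi> H X) (smd_hom (Stil H) X) (gpd_hom H (Rtil X))) \<and>
      (\<forall>H H' X X' F G k. groupoid H \<longrightarrow> groupoid H' \<longrightarrow> thin_smd X \<longrightarrow> thin_smd X' \<longrightarrow>
         F \<in> gpd_hom H' H \<longrightarrow> G \<in> smd_hom X X' \<longrightarrow> k \<in> smd_hom (Stil H) X \<longrightarrow>
         \<phi> H' X' (fcomp (Cat (Stil H')) G (fcomp (Cat (Stil H')) k (Stil_fun H' F)))
           = fcomp H' (Rtil_fun X X' G) (fcomp H' (\<phi> H X k) F))"
  proof (rule exI[of _ phi], intro conjI)
    show "\<forall>(H :: ('o,'m) cat) (X :: ('p,'n) schemoid). groupoid H \<longrightarrow> thin_smd X \<longrightarrow>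
         bij_betw (phi H X) (smd_hom (Stil H) X) (gpd_hom H (Rtil X))"
      using phi_bij by blast
    show "\<forall>(H :: ('o,'m) cat) H' (X :: ('p,'n) schemoid) X' F G k. groupoid H \<longrightarrow> groupoid H' \<longrightarrow> thin_smd X \<longrightarrow> thin_smd X' \<longrightarrow>
         F \<in> gpd_hom H' H \<longrightarrow> G \<in> smd_hom X X' \<longrightarrow> k \<in> smd_hom (Stil H) X \<longrightarrow>
         phi H' X' (fcomp (Cat (Stil H')) G (fcomp (Cat (Stil H')) k (Stil_fun H' F)))
           = fcomp H' (Rtil_fun X X' G) (fcomp H' (phi H X k) F)"
      unfolding gpd_hom_def smd_hom_def using phi_nat by blast
  qed
  show ?thesis using p1 p2 p3 p4 p5 p6 p7 p8 p9 p10 p11 by blast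
qed

end
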